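(* Let $\Phi$ be a formal diffeomorphism. Suppose that $\Phi$ formally conjugates an analytic vector field $S+N_k+R_k$, where $N_k$ is resonant of quasi-order $1$ and $R_k$ has quasi-order $k+1$, to a formal resonant vector field $NF_1=S+R$, where $R$ has quasi-order $1$; that is, for all $j\in\mathbb{N}$, $$T^j(DT^j\Phi\cdot NF_1)=T^j\big[(S+N_k+R_k)\circ T^j\Phi\big].$$ Then $T^k\Phi$ is a resonant diffeomorphism.
   Context: Fix $\omega\in\mathbb{R}^d$, $\lambda_1,\dots,\lambda_n\in\mathbb{C}$, $S=\sum_{j=1}^d\omega_j\partial_{X_j}+\sum_{j'=1}^n\lambda_{j'}Y_{j'}\partial_{Y_{j'}}$. $X$ periodic, $Y\in\mathbb{C}^n$, $|Q|=\sum Q_j$, $\langle Q,\Lambda\rangle=\sum Q_j\lambda_j$. Formal Fourier–Taylor series: $f=\sum f_{P,Q}e^{i\langle P,X\rangle}Y^Q$ with $\sum_P|f_{P,Q}|^2<\infty$ for each $Q$; order $k$ if $f_{P,Q}=0$ for $|Q|\le k-1$; resonant if $f_{P,Q}\neq0\Rightarrow i\langle P,\omega\rangle+\langle Q,\Lambda\rangle=0$. A (formal) vector field $F=(F_1,\dots,F_{d+n})$ has quasi-order $k$ if $F_1,\dots,F_d$ have order $k$ and $F_{d+1},\dots,F_{d+n}$ have order $k+1$; it is resonant if $F_1,\dots,F_d$ are resonant and $F_{d+j',P,Q}\ne0\Rightarrow i\langle P,\omega\rangle+\langle Q,\Lambda\rangle-\lambda_{j'}=0$. Truncation: $T^kf=\sum_{|Q|\le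 k}f_{P,Q}e^{i\langle P,X\rangle}Y^Q$; for vector fields/maps $T^kF=(T^kF_1,\dots,T^kF_d,T^{k+1}F_{d+1},\dots,T^{k+1}F_{d+n})$; degree $k$ means $T^kF=F$. A formal diffeomorphism $\Phi$ is a sequence $(\Phi_k)$ of analytic diffeomorphisms on non-increasing domains, $\Phi_k$ of degree $k$, $T^j\Phi_k=\Phi_j$ (restricted) for $j\le k$; $T^k\Phi:=\Phi_k$. For a map of the form $\Phi_j=X_j+\tilde\Phi_j$ ($j\le d$), $\Phi_{d+j'}=Y_{j'}\tilde\Phi_{d+j'}$, it is resonant if all $\tilde\Phi_j$ are resonant series; $T^k\Phi$ resonant means all $T^k\tilde\Phi_j$ are resonant. *)

theory Defs
  imports "HOL-Analysis.Analysis"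
begin

text \<open>
Variables: X :: 'd \<Rightarrow> complex (angles, 2\<pi>-periodic, complexified to a strip),
Y :: 'n \<Rightarrow> complex.
A (formal) Fourier--Taylor series is represented by its coefficient array
f P Q (coefficient of e^{i<P,X>} Y^Q).  A vector field has components indexed
by 'd + 'n: Inl l is the d/dX_l component, Inr j the d/dY_j component.
\<close>

type_synonym ('d, 'n) fts = "('d \<Rightarrow> int) \<Rightarrow> ('n \<Rightarrow> nat) \<Rightarrow> complex"
type_synonym ('d, 'n) fvf = "'d + 'n \<Rightarrow> ('d, 'n) fts"

definition degQ :: "('n::finite \<Rightarrow> nat) \<Rightarrow> nat" where
  "degQ Q = (\<Sum>j\<in>UNIV. Q j)"

definition unitQ :: "'n \<Rightarrow> ('n \<Rightarrow> nat)" where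
  "unitQ j = (\<lambda>i. if i = j then 1 else 0)"

definition formal_series :: "('d::finite, 'n::finite) fts \<Rightarrow> bool" where
  "formal_series f \<longleftrightarrow> (\<forall>Q. (\<lambda>P. (cmod (f P Q))\<^sup>2) summable_on UNIV)"

definition formal_vf :: "('d::finite, 'n::finite) fvf \<Rightarrow> bool" where
  "formal_vf F \<longleftrightarrow> (\<forall>a. formal_series (F a))"

definition has_order :: "nat \<Rightarrow> ('d::finite, 'n::finite) fts \<Rightarrow> bool" where
  "has_order k f \<longleftrightarrow> (\<forall>P Q. degQ Q < k \<longrightarrow> f P Q = 0)"

definition small_div :: "('d::finite \<Rightarrow> real) \<Rightarrow> ('n::finite \<Rightarrow> complex)
    \<Rightarrow> ('d \<Rightarrow> int) \<Rightarrow> ('n \<Rightarrow> nat) \<Rightarrow> complex" where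
  "small_div \<omega> \<Lambda> P Q = \<i> * complex_of_real (\<Sum>l\<in>UNIV. of_int (P l) * \<omega> l)
                        + (\<Sum>j\<in>UNIV. of_nat (Q j) * \<Lambda> j)"

definition resonant :: "('d::finite \<Rightarrow> real) \<Rightarrow> ('n::finite \<Rightarrow> complex)
    \<Rightarrow> ('d, 'n) fts \<Rightarrow> bool" where
  "resonant \<omega> \<Lambda> f \<longleftrightarrow> (\<forall>P Q. f P Q \<noteq> 0 \<longrightarrow> small_div \<omega> \<Lambda> P Q = 0)"

definition quasi_order :: "nat \<Rightarrow> ('d::finite, 'n::finite) fvf \<Rightarrow> bool" where
  "quasi_order k F \<longleftrightarrow> (\<forall>l. has_order k (F (Inl l))) \<and> (\<forall>j. has_order (k + 1) (F (Inr j)))"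

definition resonant_vf :: "('d::finite \<Rightarrow> real) \<Rightarrow> ('n::finite \<Rightarrow> complex)
    \<Rightarrow> ('d, 'n) fvf \<Rightarrow> bool" where
  "resonant_vf \<omega> \<Lambda> F \<longleftrightarrow> (\<forall>l. resonant \<omega> \<Lambda> (F (Inl l))) \<and>
     (\<forall>j P Q. F (Inr j) P Q \<noteq> 0 \<longrightarrow> small_div \<omega> \<Lambda> P Q - \<Lambda> j = 0)"

definition trunc :: "nat \<Rightarrow> ('d::finite, 'n::finite) fts \<Rightarrow> ('d, 'n) fts" where
  "trunc k f = (\<lambda>P Q. if degQ Q \<le> k then f P Q else 0)"

definition trunc_vf :: "nat \<Rightarrow> ('d::finite, 'n::finite) fvf \<Rightarrow> ('d, 'n) fvf" where
  "trunc_vf k F = (\<lambda>a. case a of Inl l \<Rightarrow> trunc k (F (Inl l)) | Inr j \<Rightarrow> trunc (k + 1) (F (Inr j)))"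

definition S_vf :: "('d::finite \<Rightarrow> real) \<Rightarrow> ('n::finite \<Rightarrow> complex) \<Rightarrow> ('d, 'n) fvf" where
  "S_vf \<omega> \<Lambda> = (\<lambda>a. case a of
      Inl l \<Rightarrow> (\<lambda>P Q. if P = (\<lambda>_. 0) \<and> Q = (\<lambda>_. 0) then complex_of_real (\<omega> l) else 0)
    | Inr j \<Rightarrow> (\<lambda>P Q. if P = (\<lambda>_. 0) \<and> Q = unitQ j then \<Lambda> j else 0))"

definition add_vf :: "('d, 'n) fvf \<Rightarrow> ('d, 'n) fvf \<Rightarrow> ('d, 'n) fvf" where
  "add_vf F G = (\<lambda>a P Q. F a P Q + G a P Q)"

text \<open>Analytic periodic functions near the torus {Y = 0}: the coefficients satisfy
  \<Sum> |f_{P,Q}| e^{r|P|} \<rho>^{|Q|} < \<infinity>; the series then converges on the domain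
  |Im X_l| < r, |Y_j| < \<rho>.\<close>
definition analytic_fts :: "real \<Rightarrow> real \<Rightarrow> ('d::finite, 'n::finite) fts \<Rightarrow> bool" where
  "analytic_fts r \<rho> f \<longleftrightarrow> 0 < r \<and> 0 < \<rho> \<and>
     (\<lambda>(P, Q). cmod (f P Q) * exp (r * (\<Sum>l\<in>UNIV. \<bar>real_of_int (P l)\<bar>)) * \<rho> ^ degQ Q)
       summable_on UNIV"

definition dom_strip :: "real \<Rightarrow> real \<Rightarrow> (('d::finite \<Rightarrow> complex) \<times> ('n::finite \<Rightarrow> complex)) set" where
  "dom_strip r \<rho> = {(X, Y). (\<forall>l. \<bar>Im (X l)\<bar> < r) \<and> (\<forall>j. cmod (Y j) < \<rho>)}"

definition mono_term :: "('d::finite \<Rightarrow> int) \<Rightarrow> ('n::finite \<Rightarrow> nat)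
    \<Rightarrow> ('d \<Rightarrow> complex) \<Rightarrow> ('n \<Rightarrow> complex) \<Rightarrow> complex" where
  "mono_term P Q X Y = exp (\<i> * (\<Sum>l\<in>UNIV. of_int (P l) * X l)) * (\<Prod>j\<in>UNIV. Y j ^ Q j)"

definition eval_fts :: "('d::finite, 'n::finite) fts \<Rightarrow> ('d \<Rightarrow> complex) \<Rightarrow> ('n \<Rightarrow> complex) \<Rightarrow> complex" where
  "eval_fts f X Y = (\<Sum>\<^sub>\<infinity>(P, Q)\<in>UNIV. f P Q * mono_term P Q X Y)"

definition represents :: "('d::finite, 'n::finite) fts
    \<Rightarrow> (('d \<Rightarrow> complex) \<Rightarrow> ('n \<Rightarrow> complex) \<Rightarrow> complex)
    \<Rightarrow> (('d \<Rightarrow> complex) \<times> ('n \<Rightarrow> complex)) set \<Rightarrow> bool" where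
  "represents c g D \<longleftrightarrow>
     (\<forall>(X, Y)\<in>D. ((\<lambda>(P, Q). c P Q * mono_term P Q X Y) has_sum g X Y) UNIV)"

definition one_fts :: "('d, 'n) fts" where
  "one_fts = (\<lambda>P Q. if P = (\<lambda>_. 0) \<and> Q = (\<lambda>_. 0) then 1 else 0)"

definition dX :: "'d \<Rightarrow> ('d, 'n) fts \<Rightarrow> ('d, 'n) fts" where
  "dX m f = (\<lambda>P Q. \<i> * of_int (P m) * f P Q)"

definition dY :: "'n \<Rightarrow> ('d, 'n) fts \<Rightarrow> ('d, 'n) fts" where
  "dY j f = (\<lambda>P Q. of_nat (Q j + 1) * f P (\<lambda>i. Q i + unitQ j i))"

definition mulY :: "'n \<Rightarrow> ('d, 'n) fts \<Rightarrow> ('d, 'n) fts" where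
  "mulY i f = (\<lambda>P Q. if 1 \<le> Q i then f P (\<lambda>j. Q j - unitQ i j) else 0)"

definition mul_fts :: "('d::finite, 'n::finite) fts \<Rightarrow> ('d, 'n) fts \<Rightarrow> ('d, 'n) fts" where
  "mul_fts g f = (\<lambda>P Q. \<Sum>\<^sub>\<infinity>P'\<in>UNIV.
      \<Sum>Q'\<in>{Q'. \<forall>j. Q' j \<le> Q j}. g P' Q' * f (\<lambda>l. P l - P' l) (\<lambda>j. Q j - Q' j))"

text \<open>A map \<Phi> in the form \<Phi>_l = X_l + \<Phi>t(Inl l), \<Phi>_{d+j} = Y_j * \<Phi>t(Inr j),
  given by the array \<Phi>t of its tilde components.\<close>
definition jac :: "('d::finite, 'n::finite) fvf \<Rightarrow> 'd + 'n \<Rightarrow> 'd + 'n \<Rightarrow> ('d, 'n) fts" where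
  "jac \<Phi>t a b = (case a of
      Inl l \<Rightarrow> (case b of
          Inl m \<Rightarrow> (\<lambda>P Q. (if l = m then one_fts P Q else 0) + dX m (\<Phi>t (Inl l)) P Q)
        | Inr j \<Rightarrow> dY j (\<Phi>t (Inl l)))
    | Inr i \<Rightarrow> (case b of
          Inl m \<Rightarrow> mulY i (dX m (\<Phi>t (Inr i)))
        | Inr j \<Rightarrow> (\<lambda>P Q. (if i = j then \<Phi>t (Inr i) P Q else 0) + mulY i (dY j (\<Phi>t (Inr i))) P Q)))"

definition jac_apply :: "('d::finite, 'n::finite) fvf \<Rightarrow> ('d, 'n) fvf \<Rightarrow> ('d, 'n) fvf" where
  "jac_apply \<Phi>t F = (\<lambda>a P Q. \<Sum>b\<in>UNIV. mul_fts (jac \<Phi>t a b) (F b) P Q)"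

definition map_X :: "('d::finite, 'n::finite) fvf \<Rightarrow> ('d \<Rightarrow> complex) \<Rightarrow> ('n \<Rightarrow> complex) \<Rightarrow> ('d \<Rightarrow> complex)" where
  "map_X \<Phi>t X Y = (\<lambda>l. X l + eval_fts (\<Phi>t (Inl l)) X Y)"

definition map_Y :: "('d::finite, 'n::finite) fvf \<Rightarrow> ('d \<Rightarrow> complex) \<Rightarrow> ('n \<Rightarrow> complex) \<Rightarrow> ('n \<Rightarrow> complex)" where
  "map_Y \<Phi>t X Y = (\<lambda>j. Y j * eval_fts (\<Phi>t (Inr j)) X Y)"

definition analytic_diffeo :: "real \<Rightarrow> real \<Rightarrow> ('d::finite, 'n::finite) fvf \<Rightarrow> bool" where
  "analytic_diffeo r \<rho> \<Phi>t \<longleftrightarrow>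
     (\<forall>a. analytic_fts r \<rho> (\<Phi>t a)) \<and>
     inj_on (\<lambda>(X, Y). (map_X \<Phi>t X Y, map_Y \<Phi>t X Y)) (dom_strip r \<rho>) \<and>
     (\<forall>(X, Y)\<in>dom_strip r \<rho>.
        det (\<chi> a b. eval_fts (jac \<Phi>t a b) X Y :: complex^('d + 'n)^('d + 'n)) \<noteq> 0)"

text \<open>A formal diffeomorphism: a sequence of analytic diffeomorphisms \<Phi>_k (given by their
  tilde components \<Phi>t k) on non-increasing domains, \<Phi>_k of degree k, compatible under
  truncation.  (Degree k of the map is degree k of all tilde components.)\<close>
definition formal_diffeo :: "(nat \<Rightarrow> ('d::finite, 'n::finite) fvf) \<Rightarrow> bool" where
  "formal_diffeo \<Phi>t \<longleftrightarrow> (\<exists>r \<rho> :: nat \<Rightarrow> real.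
      antimono r \<and> antimono \<rho> \<and>
      (\<forall>k. analytic_diffeo (r k) (\<rho> k) (\<Phi>t k)) \<and>
      (\<forall>k a. trunc k (\<Phi>t k a) = \<Phi>t k a) \<and>
      (\<forall>j k a. j \<le> k \<longrightarrow> trunc j (\<Phi>t k a) = \<Phi>t j a))"

definition conj_eq :: "real \<Rightarrow> real \<Rightarrow> ('d::finite, 'n::finite) fvf \<Rightarrow> ('d, 'n) fvf
    \<Rightarrow> ('d, 'n) fvf \<Rightarrow> nat \<Rightarrow> bool" where
  "conj_eq rV \<rho>V V NF \<Phi>j j \<longleftrightarrow> (\<exists>r \<rho> c. 0 < r \<and> 0 < \<rho> \<and>
      (\<forall>(X, Y)\<in>dom_strip r \<rho>. (map_X \<Phi>j X Y, map_Y \<Phi>j X Y) \<in> dom_strip rV \<rho>V) \<and>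
      (\<forall>a. represents (c a) (\<lambda>X Y. eval_fts (V a) (map_X \<Phi>j X Y) (map_Y \<Phi>j X Y))
                       (dom_strip r \<rho>)) \<and>
      trunc_vf j (jac_apply \<Phi>j NF) = trunc_vf j c)"

end

theory Submission
  imports Defs
begin


definition absP :: "('d::finite \<Rightarrow> int) \<Rightarrow> real" where
  "absP P = (\<Sum>l\<in>UNIV. \<bar>real_of_int (P l)\<bar>)"

definition wt :: "real \<Rightarrow> real \<Rightarrow> ('d::finite, 'n::finite) fts \<Rightarrow> ('d \<Rightarrow> int) \<times> ('n \<Rightarrow> nat) \<Rightarrow> real" where
  "wt r \<rho> a = (\<lambda>(P, Q). cmod (a P Q) * exp (r * absP P) * \<rho> ^ degQ Q)"

definition Kw :: "real \<Rightarrow> real \<Rightarrow> ('d::finite, 'n::finite) fts \<Rightarrow> real" where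
  "Kw r \<rho> a = infsum (wt r \<rho> a) UNIV"

lemma analytic_wt: "analytic_fts r \<rho> a \<longleftrightarrow> 0 < r \<and> 0 < \<rho> \<and> wt r \<rho> a summable_on UNIV"
  by (simp add: analytic_fts_def wt_def absP_def)

lemma absP_nonneg: "0 \<le> absP P" by (simp add: absP_def sum_nonneg)

lemma norm_mono_term:
  "cmod (mono_term P Q X Y) = exp (- (\<Sum>l\<in>UNIV. of_int (P l) * Im (X l))) * (\<Prod>j\<in>UNIV. cmod (Y j) ^ Q j)"
proof -
  have "Re (\<i> * (\<Sum>l\<in>UNIV. of_int (P l) * X l)) = - (\<Sum>l\<in>UNIV. of_int (P l) * Im (X l))"
    by (simp add: Im_sum)
  then show ?thesis
    by (simp add: mono_term_def norm_mult prod_norm[symmetric] norm_power)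
qed

lemma mono_term_bound:
  assumes "\<forall>l. \<bar>Im (X l)\<bar> \<le> r" "\<forall>j. cmod (Y j) \<le> s"
  shows "cmod (mono_term P Q X Y) \<le> exp (r * absP P) * s ^ degQ Q"
proof -
  have "- (\<Sum>l\<in>UNIV. of_int (P l) * Im (X l)) \<le> (\<Sum>l\<in>UNIV. r * \<bar>real_of_int (P l)\<bar>)"
  proof -
    have "- (\<Sum>l\<in>UNIV. of_int (P l) * Im (X l)) = (\<Sum>l\<in>UNIV. - (of_int (P l) * Im (X l)))"
      by (simp add: sum_negf)
    also have "\<dots> \<le> (\<Sum>l\<in>UNIV. r * \<bar>real_of_int (P l)\<bar>)"
    proof (rule sum_mono)
      fix l
      have "- (of_int (P l) * Im (X l)) \<le> \<bar>of_int (P l) * Im (X l)\<bar>" by linarith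
      also have "\<dots> = \<bar>real_of_int (P l)\<bar> * \<bar>Im (X l)\<bar>" by (simp add: abs_mult)
      also have "\<dots> \<le> \<bar>real_of_int (P l)\<bar> * r" using assms(1) by (intro mult_left_mono) auto
      finally show "- (of_int (P l) * Im (X l)) \<le> r * \<bar>real_of_int (P l)\<bar>" by (simp add: mult.commute)
    qed
    finally show ?thesis .
  qed
  then have e: "exp (- (\<Sum>l\<in>UNIV. of_int (P l) * Im (X l))) \<le> exp (r * absP P)"
    by (simp add: absP_def sum_distrib_left)
  have p: "(\<Prod>j\<in>UNIV. cmod (Y j) ^ Q j) \<le> (\<Prod>j\<in>UNIV. s ^ Q j)"
    using assms(2) by (intro prod_mono) (auto intro: power_mono)
  also have "\<dots> = s ^ degQ Q" by (simp add: degQ_def power_sum)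
  finally have p': "(\<Prod>j\<in>UNIV. cmod (Y j) ^ Q j) \<le> s ^ degQ Q" .
  show ?thesis unfolding norm_mono_term
    by (rule mult_mono[OF e p']) (auto simp: prod_nonneg)
qed

lemma analytic_abs_summable:
  assumes "analytic_fts r \<rho> a" "\<forall>l. \<bar>Im (X l)\<bar> \<le> r" "\<forall>j. cmod (Y j) \<le> \<rho>"
  shows "(\<lambda>x. norm ((\<lambda>(P, Q). a P Q * mono_term P Q X Y) x)) summable_on UNIV"
proof -
  have s: "wt r \<rho> a summable_on UNIV" using assms(1) by (simp add: analytic_wt)
  show ?thesis
  proof (rule summable_on_comparison_test[OF s])
    fix x :: "('a \<Rightarrow> int) \<times> ('b \<Rightarrow> nat)"
    obtain P Q where x: "x = (P, Q)" by (cases x)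
    have "cmod (a P Q * mono_term P Q X Y) \<le> cmod (a P Q) * (exp (r * absP P) * \<rho> ^ degQ Q)"
      unfolding norm_mult by (intro mult_left_mono mono_term_bound assms) auto
    then show "norm ((\<lambda>(P, Q). a P Q * mono_term P Q X Y) x) \<le> wt r \<rho> a x"
      by (simp add: x wt_def mult.assoc)
  qed auto
qed

lemma analytic_has_sum:
  assumes "analytic_fts r \<rho> a" "\<forall>l. \<bar>Im (X l)\<bar> \<le> r" "\<forall>j. cmod (Y j) \<le> \<rho>"
  shows "((\<lambda>(P, Q). a P Q * mono_term P Q X Y) has_sum eval_fts a X Y) UNIV"
  using abs_summable_summable[OF analytic_abs_summable[OF assms]]
  by (simp add: eval_fts_def)

lemma analytic_order_bound:
  assumes an: "analytic_fts r \<rho> a" and ord: "has_order ko a"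
    and X: "\<forall>l. \<bar>Im (X l)\<bar> \<le> r" and Y: "\<forall>j. cmod (Y j) \<le> s" and s: "0 \<le> s" "s \<le> \<rho>"
  shows "cmod (eval_fts a X Y) \<le> Kw r \<rho> a * (s / \<rho>) ^ ko"
proof -
  have rho: "0 < \<rho>" using an by (simp add: analytic_fts_def)
  have Y': "\<forall>j. cmod (Y j) \<le> \<rho>" using Y s by (meson order_trans)
  have hs: "((\<lambda>(P, Q). a P Q * mono_term P Q X Y) has_sum eval_fts a X Y) UNIV"
    by (rule analytic_has_sum[OF an X Y'])
  have ws: "(wt r \<rho> a has_sum Kw r \<rho> a) UNIV" using an by (simp add: analytic_wt Kw_def)
  then have ws': "((\<lambda>x. wt r \<rho> a x * (s / \<rho>) ^ ko) has_sum Kw r \<rho> a * (s / \<rho>) ^ ko) UNIV"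
    by (rule has_sum_cmult_left)
  show ?thesis
  proof (rule norm_infsum_le[OF hs ws'])
    fix x :: "('a \<Rightarrow> int) \<times> ('b \<Rightarrow> nat)"
    obtain P Q where x: "x = (P, Q)" by (cases x)
    show "norm ((\<lambda>(P, Q). a P Q * mono_term P Q X Y) x) \<le> wt r \<rho> a x * (s / \<rho>) ^ ko"
    proof (cases "degQ Q < ko")
      case True then show ?thesis using ord
        by (simp add: x has_order_def wt_def)
    next
      case False
      have "s ^ degQ Q = \<rho> ^ degQ Q * (s / \<rho>) ^ degQ Q" using rho
        by (simp add: power_divide)
      also have "\<dots> \<le> \<rho> ^ degQ Q * (s / \<rho>) ^ ko"
        using False rho s by (intro mult_left_mono power_decreasing) auto
      finally have sq: "s ^ degQ Q \<le> \<rho> ^ degQ Q * (s / \<rho>) ^ ko" .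
      have "cmod (a P Q * mono_term P Q X Y) \<le> cmod (a P Q) * (exp (r * absP P) * s ^ degQ Q)"
        unfolding norm_mult by (intro mult_left_mono mono_term_bound X Y) auto
      also have "\<dots> \<le> cmod (a P Q) * (exp (r * absP P) * (\<rho> ^ degQ Q * (s / \<rho>) ^ ko))"
        by (intro mult_left_mono sq) auto
      finally show ?thesis by (simp add: x wt_def mult_ac)
    qed
  qed
qed


lemma exp_i_diff_bound:
  fixes w1 w2 :: complex
  assumes "\<bar>Im w1\<bar> \<le> B" "\<bar>Im w2\<bar> \<le> B"
  shows "cmod (exp (\<i> * w1) - exp (\<i> * w2)) \<le> exp B * cmod (w1 - w2)"
proof (rule field_differentiable_bound[where S = "closed_segment w2 w1" and f = "\<lambda>w. exp (\<i> * w)"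
      and f' = "\<lambda>w. \<i> * exp (\<i> * w)"])
  show "convex (closed_segment w2 w1)" by simp
  show "w1 \<in> closed_segment w2 w1" "w2 \<in> closed_segment w2 w1" by auto
  fix z assume z: "z \<in> closed_segment w2 w1"
  show "((\<lambda>w. exp (\<i> * w)) has_field_derivative \<i> * exp (\<i> * z)) (at z within closed_segment w2 w1)"
    by (auto intro!: derivative_eq_intros)
  obtain u where u: "0 \<le> u" "u \<le> 1" "z = (1 - u) *\<^sub>R w2 + u *\<^sub>R w1"
    using z by (auto simp: closed_segment_def)
  have "Im z = (1 - u) * Im w2 + u * Im w1" using u by simp
  then have "\<bar>Im z\<bar> \<le> (1 - u) * \<bar>Im w2\<bar> + u * \<bar>Im w1\<bar>"
    using u abs_triangle_ineq[of "(1 - u) * Im w2" "u * Im w1"] by (simp add: abs_mult)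
  also have "\<dots> \<le> (1 - u) * B + u * B"
    using u assms by (intro add_mono mult_left_mono) auto
  finally have "\<bar>Im z\<bar> \<le> B" by (simp add: algebra_simps)
  then show "cmod (\<i> * exp (\<i> * z)) \<le> exp B"
    by (simp add: norm_mult)
qed

lemma prod_pow_diff_bound:
  fixes Y1 Y2 :: "'n::finite \<Rightarrow> complex"
  assumes s: "0 < s" and Y1: "\<forall>j. cmod (Y1 j) \<le> s" and Y2: "\<forall>j. cmod (Y2 j) \<le> s"
    and e: "\<forall>j. cmod (Y1 j - Y2 j) \<le> eY"
  shows "cmod ((\<Prod>j\<in>UNIV. Y1 j ^ Q j) - (\<Prod>j\<in>UNIV. Y2 j ^ Q j)) \<le> real (degQ Q) * s ^ (degQ Q - 1) * eY"
proof (cases "degQ Q = 0")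
  case True
  then have "\<forall>j. Q j = 0" by (simp add: degQ_def)
  then show ?thesis using True by simp
next
  case False
  define z where "z j = Y1 j / of_real s" for j
  define w where "w j = Y2 j / of_real s" for j
  have zb: "cmod (z j) \<le> 1" for j using Y1 s by (simp add: z_def norm_divide)
  have wb: "cmod (w j) \<le> 1" for j using Y2 s by (simp add: w_def norm_divide)
  have "cmod ((\<Prod>j\<in>UNIV. z j ^ Q j) - (\<Prod>j\<in>UNIV. w j ^ Q j)) \<le> (\<Sum>j\<in>UNIV. cmod (z j ^ Q j - w j ^ Q j))"
    by (rule norm_prod_diff) (auto intro: power_le_one zb wb simp: norm_power)
  also have "\<dots> \<le> (\<Sum>j\<in>UNIV. real (Q j) * (eY / s))"
  proof (rule sum_mono)
    fix j
    have "cmod (z j ^ Q j - w j ^ Q j) \<le> Q j * cmod (z j - w j)"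
      by (rule norm_power_diff[OF zb wb])
    also have "cmod (z j - w j) = cmod (Y1 j - Y2 j) / s"
      using s by (simp add: z_def w_def diff_divide_distrib[symmetric] norm_divide)
    also have "\<dots> \<le> eY / s" using e s by (simp add: divide_right_mono)
    finally show "cmod (z j ^ Q j - w j ^ Q j) \<le> real (Q j) * (eY / s)"
      by (simp add: mult_left_mono order_trans)
  qed
  also have "\<dots> = real (degQ Q) * (eY / s)" by (simp add: degQ_def sum_distrib_right sum_divide_distrib)
  finally have *: "cmod ((\<Prod>j\<in>UNIV. z j ^ Q j) - (\<Prod>j\<in>UNIV. w j ^ Q j)) \<le> real (degQ Q) * (eY / s)" .
  have Y1e: "(\<Prod>j\<in>UNIV. Y1 j ^ Q j) = of_real (s ^ degQ Q) * (\<Prod>j\<in>UNIV. z j ^ Q j)"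
    using s by (simp add: z_def power_divide prod_dividef degQ_def power_sum prod.distrib[symmetric]
        flip: of_real_power of_real_prod)
  have Y2e: "(\<Prod>j\<in>UNIV. Y2 j ^ Q j) = of_real (s ^ degQ Q) * (\<Prod>j\<in>UNIV. w j ^ Q j)"
    using s by (simp add: w_def power_divide prod_dividef degQ_def power_sum prod.distrib[symmetric]
        flip: of_real_power of_real_prod)
  have "cmod ((\<Prod>j\<in>UNIV. Y1 j ^ Q j) - (\<Prod>j\<in>UNIV. Y2 j ^ Q j))
      = s ^ degQ Q * cmod ((\<Prod>j\<in>UNIV. z j ^ Q j) - (\<Prod>j\<in>UNIV. w j ^ Q j))"
    using s by (simp add: Y1e Y2e right_diff_distrib[symmetric] norm_mult norm_power)
  also have "\<dots> \<le> s ^ degQ Q * (real (degQ Q) * (eY / s))"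
    using * s by (intro mult_left_mono) auto
  also have "\<dots> = real (degQ Q) * s ^ (degQ Q - 1) * eY"
    using s False by (simp add: field_simps power_eq_if)
  finally show ?thesis .
qed


lemma n_q_pow_le: assumes "0 \<le> q" "q < 1" shows "real n * q ^ n \<le> 1 / (1 - q)"
proof -
  have "real n * q ^ n = (\<Sum>i<n. q ^ n)" by simp
  also have "\<dots> \<le> (\<Sum>i<n. q ^ i)" using assms by (intro sum_mono power_decreasing) auto
  also have "\<dots> = (1 - q ^ n) / (1 - q)" using assms by (simp add: sum_gp_strict)
  also have "\<dots> \<le> 1 / (1 - q)" using assms by (intro divide_right_mono) auto
  finally show ?thesis .
qed

lemma x_exp_le: fixes x d r' :: real assumes "0 < d" "0 \<le> x" shows "x * exp (r' * x) \<le> exp ((r' + d) * x) / d"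
proof -
  have "d * x \<le> exp (d * x)" using exp_ge_add_one_self[of "d*x"] by linarith
  then have "x \<le> exp (d * x) / d" using assms by (simp add: field_simps)
  then have "x * exp (r' * x) \<le> exp (d * x) / d * exp (r' * x)" by (intro mult_right_mono) auto
  also have "\<dots> = exp ((r' + d) * x) / d" by (simp add: algebra_simps exp_add[symmetric])
  finally show ?thesis .
qed

lemma mono_term_diff_bound:
  assumes X1: "\<forall>l. \<bar>Im (X1 l)\<bar> \<le> r'" and X2: "\<forall>l. \<bar>Im (X2 l)\<bar> \<le> r'"
    and s: "0 < s" and Y1: "\<forall>j. cmod (Y1 j) \<le> s" and Y2: "\<forall>j. cmod (Y2 j) \<le> s"
    and eX: "\<forall>l. cmod (X1 l - X2 l) \<le> eX" and eY: "\<forall>j. cmod (Y1 j - Y2 j) \<le> eY"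
  shows "cmod (mono_term P Q X1 Y1 - mono_term P Q X2 Y2)
     \<le> exp (r' * absP P) * (absP P * eX * s ^ degQ Q + real (degQ Q) * s ^ (degQ Q - 1) * eY)"
proof -
  have eX0: "0 \<le> eX" using eX[rule_format, of undefined] norm_ge_zero order_trans by blast
  define w1 where "w1 = (\<Sum>l\<in>UNIV. of_int (P l) * X1 l)"
  define w2 where "w2 = (\<Sum>l\<in>UNIV. of_int (P l) * X2 l)"
  define p1 where "p1 = (\<Prod>j\<in>UNIV. Y1 j ^ Q j)"
  define p2 where "p2 = (\<Prod>j\<in>UNIV. Y2 j ^ Q j)"
  have imb: "\<bar>Im (\<Sum>l\<in>UNIV. of_int (P l) * X l)\<bar> \<le> r' * absP P" if "\<forall>l. \<bar>Im (X l)\<bar> \<le> r'" for X :: "'a \<Rightarrow> complex"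
  proof -
    have "\<bar>Im (\<Sum>l\<in>UNIV. of_int (P l) * X l)\<bar> = \<bar>\<Sum>l\<in>UNIV. of_int (P l) * Im (X l)\<bar>"
      by (simp add: Im_sum)
    also have "\<dots> \<le> (\<Sum>l\<in>UNIV. \<bar>of_int (P l) * Im (X l)\<bar>)" by (rule sum_abs)
    also have "\<dots> \<le> (\<Sum>l\<in>UNIV. r' * \<bar>real_of_int (P l)\<bar>)"
      using that by (intro sum_mono) (simp add: abs_mult mult.commute[of r'] mult_left_mono)
    finally show ?thesis by (simp add: absP_def sum_distrib_left)
  qed
  have e1: "cmod (exp (\<i> * w1) - exp (\<i> * w2)) \<le> exp (r' * absP P) * cmod (w1 - w2)"
    unfolding w1_def w2_def by (intro exp_i_diff_bound imb X1 X2)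
  have "cmod (w1 - w2) = cmod (\<Sum>l\<in>UNIV. of_int (P l) * (X1 l - X2 l))"
    by (simp add: w1_def w2_def sum_subtractf right_diff_distrib)
  also have "\<dots> \<le> (\<Sum>l\<in>UNIV. cmod (of_int (P l) * (X1 l - X2 l)))" by (rule norm_sum)
  also have "\<dots> \<le> (\<Sum>l\<in>UNIV. \<bar>real_of_int (P l)\<bar> * eX)"
    using eX by (intro sum_mono) (simp add: norm_mult mult_left_mono)
  finally have wd: "cmod (w1 - w2) \<le> absP P * eX" by (simp add: absP_def sum_distrib_right)
  have ne2: "cmod (exp (\<i> * w2)) \<le> exp (r' * absP P)"
  proof -
    have "cmod (exp (\<i> * w2)) = exp (- Im w2)" by simp
    also have "\<dots> \<le> exp (r' * absP P)" using imb[OF X2] unfolding w2_def by simp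
    finally show ?thesis .
  qed
  have np1: "cmod p1 \<le> s ^ degQ Q"
  proof -
    have "cmod p1 = (\<Prod>j\<in>UNIV. cmod (Y1 j) ^ Q j)" by (simp add: p1_def prod_norm[symmetric] norm_power)
    also have "\<dots> \<le> (\<Prod>j\<in>UNIV. s ^ Q j)" using Y1 by (intro prod_mono) (auto intro: power_mono)
    also have "\<dots> = s ^ degQ Q" by (simp add: degQ_def power_sum)
    finally show ?thesis .
  qed
  have pd: "cmod (p1 - p2) \<le> real (degQ Q) * s ^ (degQ Q - 1) * eY"
    unfolding p1_def p2_def by (rule prod_pow_diff_bound[OF s Y1 Y2 eY])
  have "mono_term P Q X1 Y1 - mono_term P Q X2 Y2 = (exp (\<i> * w1) - exp (\<i> * w2)) * p1 + exp (\<i> * w2) * (p1 - p2)"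
    by (simp add: mono_term_def w1_def w2_def p1_def p2_def algebra_simps)
  then have "cmod (mono_term P Q X1 Y1 - mono_term P Q X2 Y2)
      \<le> cmod (exp (\<i> * w1) - exp (\<i> * w2)) * cmod p1 + cmod (exp (\<i> * w2)) * cmod (p1 - p2)"
    by (metis norm_mult norm_triangle_ineq)
  also have "\<dots> \<le> (exp (r' * absP P) * (absP P * eX)) * s ^ degQ Q + exp (r' * absP P) * (real (degQ Q) * s ^ (degQ Q - 1) * eY)"
  proof (intro add_mono mult_mono)
    show "cmod (exp (\<i> * w1) - exp (\<i> * w2)) \<le> exp (r' * absP P) * (absP P * eX)"
      using e1 wd by (meson exp_ge_zero mult_left_mono order_trans)
  qed (use np1 ne2 pd eX0 absP_nonneg[of P] in auto)
  also have "\<dots> = exp (r' * absP P) * (absP P * eX * s ^ degQ Q + real (degQ Q) * s ^ (degQ Q - 1) * eY)"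
    by (simp add: algebra_simps)
  finally show ?thesis .
qed


lemma has_sum_sum_fin:
  fixes f :: "'i \<Rightarrow> 'a \<Rightarrow> 'b::topological_comm_monoid_add"
  assumes "finite I" "\<And>i. i \<in> I \<Longrightarrow> (f i has_sum s i) A"
  shows "((\<lambda>x. \<Sum>i\<in>I. f i x) has_sum (\<Sum>i\<in>I. s i)) A"
  using assms
proof (induction I rule: finite_induct)
  case empty then show ?case by simp
next
  case (insert i I)
  then show ?case by (simp add: has_sum_add)
qed

definition Eroot :: "nat \<Rightarrow> int \<Rightarrow> nat \<Rightarrow> complex" where
  "Eroot N K x = exp (2 * of_real pi * \<i> * of_int K * of_nat x / of_nat N)"

lemma geom_root:
  assumes N: "0 < N"
  shows "(\<Sum>x<N. Eroot N K x) = (if int N dvd K then of_nat N else 0)"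
proof -
  define z where "z = exp (2 * of_real pi * \<i> * of_int K / of_nat N)"
  have Ez: "Eroot N K x = z ^ x" for x
    unfolding Eroot_def z_def by (simp add: exp_of_nat_mult[symmetric] field_simps)
  have zN: "z ^ N = 1"
  proof -
    have eq: "of_nat N * (2 * of_real pi * \<i> * of_int K / of_nat N) = \<i> * (of_int K * (of_real pi * 2))"
      using N by (simp add: field_simps)
    have "z ^ N = exp (of_nat N * (2 * of_real pi * \<i> * of_int K / of_nat N))"
      unfolding z_def by (rule exp_of_nat_mult[symmetric])
    also have "\<dots> = exp (\<i> * (of_int K * (of_real pi * 2)))" by (simp only: eq)
    also have "\<dots> = 1" by (rule exp_2pi_1_int)
    finally show ?thesis .
  qed
  show ?thesis
  proof (cases "int N dvd K")
    case True
    then obtain m where m: "K = int N * m" by (auto elim: dvdE)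
    have "z = exp (\<i> * (of_int m * (of_real pi * 2)))" using N by (simp add: z_def m field_simps)
    also have "\<dots> = 1" by (rule exp_2pi_1_int)
    finally have "z = 1" .
    then show ?thesis using True by (simp add: Ez)
  next
    case False
    have z1: "z \<noteq> 1"
    proof
      assume "z = 1"
      then obtain n where n: "Im (2 * of_real pi * \<i> * of_int K / of_nat N) = real_of_int (2 * n) * pi"
        unfolding z_def exp_eq_1 by blast
      have "2 * pi * real_of_int K / real N = real_of_int (2 * n) * pi" using n by simp
      then have "real_of_int K = real_of_int (n * int N)" using N by (simp add: field_simps)
      then have "K = n * int N" by linarith
      then show False using False by simp
    qed
    have "(\<Sum>x<N. z ^ x) = (1 - z ^ N) / (1 - z)" using z1 by (simp add: sum_gp_strict)
    then show ?thesis using False zN by (simp add: Ez)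
  qed
qed

lemma grid_sum:
  fixes K :: "'a::finite \<Rightarrow> int"
  assumes N: "0 < N"
  shows "(\<Sum>u\<in>PiE UNIV (\<lambda>_. {..<N}). \<Prod>l\<in>UNIV. Eroot N (K l) (u l))
    = (if \<forall>l. int N dvd K l then of_nat N ^ CARD('a) else 0)"
proof -
  have "(\<Sum>u\<in>PiE UNIV (\<lambda>_. {..<N}). \<Prod>l\<in>UNIV. Eroot N (K l) (u l)) = (\<Prod>l\<in>UNIV. \<Sum>x<N. Eroot N (K l) x)"
    by (rule prod_sum_PiE[symmetric]) auto
  also have "\<dots> = (\<Prod>l\<in>(UNIV::'a set). if int N dvd K l then of_nat N else 0)"
    using N by (simp add: geom_root)
  also have "\<dots> = (if \<forall>l. int N dvd K l then of_nat N ^ CARD('a) else 0)"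
    by (auto simp: prod_zero_iff)
  finally show ?thesis .
qed


definition Xg :: "nat \<Rightarrow> ('d \<Rightarrow> nat) \<Rightarrow> 'd \<Rightarrow> complex" where
  "Xg N u = (\<lambda>l. of_real (2 * pi * real (u l) / real N))"
definition Yg :: "nat \<Rightarrow> real \<Rightarrow> ('n \<Rightarrow> nat) \<Rightarrow> 'n \<Rightarrow> complex" where
  "Yg N \<epsilon> v = (\<lambda>j. of_real \<epsilon> * Eroot N 1 (v j))"
definition cf :: "nat \<Rightarrow> ('d::finite \<Rightarrow> int) \<Rightarrow> ('n::finite \<Rightarrow> nat) \<Rightarrow> ('d \<Rightarrow> nat) \<Rightarrow> ('n \<Rightarrow> nat) \<Rightarrow> complex" where
  "cf N P0 Q0 u v = (\<Prod>l\<in>UNIV. Eroot N (- P0 l) (u l)) * (\<Prod>j\<in>UNIV. Eroot N (- int (Q0 j)) (v j))"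

lemma Eroot_mult: "Eroot N a x * Eroot N b x = Eroot N (a + b) x"
  by (simp add: Eroot_def exp_add[symmetric] field_simps add_divide_distrib)

lemma Eroot_pow: "Eroot N 1 x ^ q = Eroot N (int q) x"
  by (simp add: Eroot_def exp_of_nat_mult[symmetric] field_simps)

lemma norm_Eroot: "cmod (Eroot N K x) = 1"
proof -
  have "Re (2 * of_real pi * \<i> * of_int K * of_nat x / of_nat N) = 0" by simp
  then show ?thesis by (simp add: Eroot_def)
qed

lemma mono_grid:
  "mono_term P Q (Xg N u) (Yg N \<epsilon> v) * cf N P0 Q0 u v
   = of_real (\<epsilon> ^ degQ Q) * ((\<Prod>l\<in>UNIV. Eroot N (P l - P0 l) (u l)) * (\<Prod>j\<in>UNIV. Eroot N (int (Q j) - int (Q0 j)) (v j)))"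
proof -
  have ex: "exp (\<i> * (\<Sum>l\<in>UNIV. of_int (P l) * Xg N u l)) = (\<Prod>l\<in>UNIV. Eroot N (P l) (u l))"
  proof -
    have "exp (\<i> * (\<Sum>l\<in>UNIV. of_int (P l) * Xg N u l)) = exp (\<Sum>l\<in>UNIV. \<i> * (of_int (P l) * Xg N u l))"
      by (simp add: sum_distrib_left)
    also have "\<dots> = (\<Prod>l\<in>UNIV. exp (\<i> * (of_int (P l) * Xg N u l)))" by (simp add: exp_sum)
    also have "\<dots> = (\<Prod>l\<in>UNIV. Eroot N (P l) (u l))"
      by (rule prod.cong) (auto simp: Eroot_def Xg_def field_simps)
    finally show ?thesis .
  qed
  have ey: "(\<Prod>j\<in>UNIV. Yg N \<epsilon> v j ^ Q j) = of_real (\<epsilon> ^ degQ Q) * (\<Prod>j\<in>UNIV. Eroot N (int (Q j)) (v j))"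
    by (simp add: Yg_def power_mult_distrib prod.distrib Eroot_pow degQ_def power_sum
        flip: of_real_power of_real_prod)
  have "mono_term P Q (Xg N u) (Yg N \<epsilon> v) * cf N P0 Q0 u v
     = of_real (\<epsilon> ^ degQ Q) * (((\<Prod>l\<in>UNIV. Eroot N (P l) (u l)) * (\<Prod>l\<in>UNIV. Eroot N (- P0 l) (u l)))
        * ((\<Prod>j\<in>UNIV. Eroot N (int (Q j)) (v j)) * (\<Prod>j\<in>UNIV. Eroot N (- int (Q0 j)) (v j))))"
    by (simp add: mono_term_def ex ey cf_def mult_ac)
  also have "\<dots> = of_real (\<epsilon> ^ degQ Q) * ((\<Prod>l\<in>UNIV. Eroot N (P l - P0 l) (u l)) * (\<Prod>j\<in>UNIV. Eroot N (int (Q j) - int (Q0 j)) (v j)))"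
    by (simp add: prod.distrib[symmetric] Eroot_mult)
  finally show ?thesis .
qed


lemma has_sum_diff':
  fixes f g :: "'a \<Rightarrow> 'b::topological_ab_group_add"
  assumes "(f has_sum a) A" "(g has_sum b) A"
  shows "((\<lambda>x. f x - g x) has_sum (a - b)) A"
proof -
  have "((\<lambda>x. - g x) has_sum (- b)) A" using has_sum_uminus[where f=g and a="-b" and A=A] assms(2) by simp
  from has_sum_add[OF assms(1) this] show ?thesis by simp
qed

lemma has_sum_single_pt: "((\<lambda>x. if x = a then c else 0) has_sum c) UNIV"
proof -
  have "((\<lambda>x. if x = a then c else 0) has_sum c) {a}" by (intro has_sum_finiteI) auto
  then show ?thesis
    by (rule has_sum_cong_neutral[THEN iffD1, rotated -1]) auto
qed

lemma norm_mono_real_eps: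
  assumes "\<forall>l. Im (X l) = 0" "\<forall>j. cmod (Y j) = \<epsilon>"
  shows "cmod (mono_term P Q X Y) = \<epsilon> ^ degQ Q"
  using assms by (simp add: norm_mono_term degQ_def power_sum)

lemma dvd_small_zero: fixes k :: int assumes "int N dvd k" "\<bar>k\<bar> < int N" shows "k = 0"
  using assms dvd_imp_le_int[of k "int N"] by (cases "k = 0") auto

lemma coeff_extract:
  fixes d :: "('d::finite, 'n::finite) fts" and h :: "('d \<Rightarrow> complex) \<Rightarrow> ('n \<Rightarrow> complex) \<Rightarrow> complex"
  assumes \<delta>: "0 < \<delta>"
    and rep: "\<And>\<epsilon> X Y. 0 < \<epsilon> \<Longrightarrow> \<epsilon> \<le> \<delta> \<Longrightarrow> (\<forall>l. Im (X l) = 0) \<Longrightarrow> (\<forall>j. cmod (Y j) = \<epsilon>) \<Longrightarrow>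
           ((\<lambda>(P, Q). d P Q * mono_term P Q X Y) has_sum h X Y) UNIV"
    and bd: "\<And>\<epsilon> X Y. 0 < \<epsilon> \<Longrightarrow> \<epsilon> \<le> \<delta> \<Longrightarrow> (\<forall>l. Im (X l) = 0) \<Longrightarrow> (\<forall>j. cmod (Y j) = \<epsilon>) \<Longrightarrow>
           cmod (h X Y) \<le> C * \<epsilon> ^ M"
    and deg: "degQ Q0 < M"
  shows "d P0 Q0 = 0"
proof (rule ccontr)
  assume nz: "d P0 Q0 \<noteq> 0"
  define a where "a = cmod (d P0 Q0)"
  have a0: "0 < a" using nz by (simp add: a_def)
  define k0 where "k0 = degQ Q0"
  define \<epsilon> where "\<epsilon> = min \<delta> (min 1 (a / (2 * (\<bar>C\<bar> + 1)))) / 2"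
  have e0: "0 < \<epsilon>" using \<delta> a0 by (simp add: \<epsilon>_def)
  have e\<delta>: "\<epsilon> \<le> \<delta>" using \<delta> by (simp add: \<epsilon>_def)
  have e1: "\<epsilon> \<le> 1" by (simp add: \<epsilon>_def)
  have eC: "\<bar>C\<bar> * \<epsilon> < a / 2"
  proof -
    have q0: "0 < a / (2 * (\<bar>C\<bar> + 1))" using a0 by (simp add: add_pos_nonneg)
    have "min \<delta> (min 1 (a / (2 * (\<bar>C\<bar> + 1)))) \<le> a / (2 * (\<bar>C\<bar> + 1))" by simp
    then have "\<epsilon> < a / (2 * (\<bar>C\<bar> + 1))" using q0 unfolding \<epsilon>_def by argo
    then have "(\<bar>C\<bar> + 1) * \<epsilon> < (\<bar>C\<bar> + 1) * (a / (2 * (\<bar>C\<bar> + 1)))"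
      by (intro mult_strict_left_mono) auto
    also have "\<dots> = a / 2" by (simp add: field_simps)
    finally show ?thesis using e0 by (simp add: algebra_simps)
  qed
  define X0 :: "'d \<Rightarrow> complex" where "X0 = (\<lambda>_. 0)"
  define Y0 :: "'n \<Rightarrow> complex" where "Y0 = (\<lambda>_. of_real \<epsilon>)"
  have X0r: "\<forall>l. Im (X0 l) = 0" by (simp add: X0_def)
  have Y0r: "\<forall>j. cmod (Y0 j) = \<epsilon>" using e0 by (simp add: Y0_def)
  define w where "w = (\<lambda>(P, Q). cmod (d P Q) * \<epsilon> ^ degQ Q)"
  have w0: "0 \<le> w x" for x using e0 by (auto simp: w_def split: prod.splits)
  have ws: "w summable_on UNIV"
  proof -
    have "(\<lambda>(P, Q). d P Q * mono_term P Q X0 Y0) summable_on UNIV"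
      using rep[OF e0 e\<delta> X0r Y0r] by (rule has_sum_imp_summable)
    then have "(\<lambda>x. norm ((\<lambda>(P, Q). d P Q * mono_term P Q X0 Y0) x)) summable_on UNIV"
      using summable_on_iff_abs_summable_on_complex by blast
    moreover have "(\<lambda>x. norm ((\<lambda>(P, Q). d P Q * mono_term P Q X0 Y0) x)) = w"
      using norm_mono_real_eps[OF X0r Y0r] by (auto simp: w_def norm_mult)
    ultimately show ?thesis by simp
  qed
  define e where "e = a * \<epsilon> ^ k0 / 4"
  have epos: "0 < e" using a0 e0 by (simp add: e_def)
  obtain F where F: "finite F" "dist (sum w F) (infsum w UNIV) \<le> e"
    using infsum_finite_approximation[OF ws epos] by auto
  have wsF: "w summable_on (UNIV - F)" by (rule summable_on_subset_banach[OF ws]) auto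
  have "infsum w UNIV = infsum w (F \<union> (UNIV - F))" by simp
  also have "\<dots> = infsum w F + infsum w (UNIV - F)"
    by (rule infsum_Un_disjoint) (use F wsF in auto)
  finally have "infsum w (UNIV - F) = infsum w UNIV - sum w F" using F by simp
  then have tail: "infsum w (UNIV - F) \<le> e" using F(2) by (simp add: dist_real_def)
  define N :: nat where "N = Suc (\<Sum>x\<in>F. (\<Sum>l\<in>UNIV. nat \<bar>fst x l - P0 l\<bar>) + (\<Sum>j\<in>UNIV. nat \<bar>int (snd x j) - int (Q0 j)\<bar>))"
  have N0: "0 < N" by (simp add: N_def)
  have Nbig: "\<bar>P l - P0 l\<bar> < int N \<and> \<bar>int (Q j) - int (Q0 j)\<bar> < int N" if "(P, Q) \<in> F" for P Q l j
  proof -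
    have "nat \<bar>P l - P0 l\<bar> \<le> (\<Sum>l\<in>UNIV. nat \<bar>P l - P0 l\<bar>)"
      by (rule member_le_sum) auto
    moreover have "nat \<bar>int (Q j) - int (Q0 j)\<bar> \<le> (\<Sum>j\<in>UNIV. nat \<bar>int (Q j) - int (Q0 j)\<bar>)"
      by (rule member_le_sum) auto
    moreover have "(\<Sum>l\<in>UNIV. nat \<bar>P l - P0 l\<bar>) + (\<Sum>j\<in>UNIV. nat \<bar>int (Q j) - int (Q0 j)\<bar>)
        \<le> (\<Sum>x\<in>F. (\<Sum>l\<in>UNIV. nat \<bar>fst x l - P0 l\<bar>) + (\<Sum>j\<in>UNIV. nat \<bar>int (snd x j) - int (Q0 j)\<bar>))"
      using member_le_sum[OF that, of "\<lambda>x. (\<Sum>l\<in>UNIV. nat \<bar>fst x l - P0 l\<bar>) + (\<Sum>j\<in>UNIV. nat \<bar>int (snd x j) - int (Q0 j)\<bar>)"] F(1)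
      by auto
    ultimately show ?thesis unfolding N_def by linarith
  qed
  define Al where "Al = {(P, Q). (\<forall>l. int N dvd P l - P0 l) \<and> (\<forall>j. int N dvd int (Q j) - int (Q0 j))}"
  have AlF: "x = (P0, Q0)" if "x \<in> Al" "x \<in> F" for x
  proof -
    obtain P Q where x: "x = (P, Q)" by (cases x)
    have "P l = P0 l" for l using that Nbig[of P Q l undefined] dvd_small_zero[of N "P l - P0 l"] by (auto simp: x Al_def)
    moreover have "Q j = Q0 j" for j using that Nbig[of P Q undefined j] dvd_small_zero[of N "int (Q j) - int (Q0 j)"] by (auto simp: x Al_def)
    ultimately show ?thesis by (auto simp: x)
  qed
  define Gd :: "('d \<Rightarrow> nat) set" where "Gd = PiE UNIV (\<lambda>_. {..<N})"
  define Gn :: "('n \<Rightarrow> nat) set" where "Gn = PiE UNIV (\<lambda>_. {..<N})"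
  have fin: "finite Gd" "finite Gn" by (simp_all add: Gd_def Gn_def finite_PiE)
  have cardG: "card Gd = N ^ CARD('d)" "card Gn = N ^ CARD('n)" by (simp_all add: Gd_def Gn_def card_PiE)
  have Xgr: "\<forall>l. Im (Xg N u l) = 0" for u by (simp add: Xg_def)
  have Ygr: "\<forall>j. cmod (Yg N \<epsilon> v j) = \<epsilon>" for v using e0 by (simp add: Yg_def norm_mult norm_Eroot)
  define S where "S = (\<Sum>u\<in>Gd. \<Sum>v\<in>Gn. h (Xg N u) (Yg N \<epsilon> v) * cf N P0 Q0 u v)"
  have hsS: "((\<lambda>x. \<Sum>u\<in>Gd. \<Sum>v\<in>Gn. (\<lambda>(P, Q). d P Q * mono_term P Q (Xg N u) (Yg N \<epsilon> v)) x * cf N P0 Q0 u v) has_sum S) UNIV"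
    unfolding S_def
    by (intro has_sum_sum_fin fin has_sum_cmult_left rep[OF e0 e\<delta> Xgr Ygr])
  define NN :: complex where "NN = of_nat N ^ (CARD('d) + CARD('n))"
  have NN0: "NN \<noteq> 0" using N0 by (simp add: NN_def)
  have pt: "(\<Sum>u\<in>Gd. \<Sum>v\<in>Gn. (\<lambda>(P, Q). d P Q * mono_term P Q (Xg N u) (Yg N \<epsilon> v)) x * cf N P0 Q0 u v)
      = NN * (\<lambda>(P, Q). if (P, Q) \<in> Al then d P Q * of_real (\<epsilon> ^ degQ Q) else 0) x" for x
  proof -
    obtain P Q where x: "x = (P, Q)" by (cases x)
    have "(\<Sum>u\<in>Gd. \<Sum>v\<in>Gn. d P Q * mono_term P Q (Xg N u) (Yg N \<epsilon> v) * cf N P0 Q0 u v)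
       = d P Q * of_real (\<epsilon> ^ degQ Q) * ((\<Sum>u\<in>Gd. \<Prod>l\<in>UNIV. Eroot N (P l - P0 l) (u l)) * (\<Sum>v\<in>Gn. \<Prod>j\<in>UNIV. Eroot N (int (Q j) - int (Q0 j)) (v j)))"
    proof -
      have "(\<Sum>u\<in>Gd. \<Sum>v\<in>Gn. d P Q * mono_term P Q (Xg N u) (Yg N \<epsilon> v) * cf N P0 Q0 u v)
         = (\<Sum>u\<in>Gd. \<Sum>v\<in>Gn. (d P Q * of_real (\<epsilon> ^ degQ Q)) * ((\<Prod>l\<in>UNIV. Eroot N (P l - P0 l) (u l)) * (\<Prod>j\<in>UNIV. Eroot N (int (Q j) - int (Q0 j)) (v j))))"
        by (simp only: mult.assoc mono_grid)
      also have "\<dots> = d P Q * of_real (\<epsilon> ^ degQ Q) * ((\<Sum>u\<in>Gd. \<Prod>l\<in>UNIV. Eroot N (P l - P0 l) (u l)) * (\<Sum>v\<in>Gn. \<Prod>j\<in>UNIV. Eroot N (int (Q j) - int (Q0 j)) (v j)))"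
        unfolding sum_product by (simp only: sum_distrib_left)
      finally show ?thesis .
    qed
    also have "\<dots> = NN * (if (P, Q) \<in> Al then d P Q * of_real (\<epsilon> ^ degQ Q) else 0)"
      unfolding Gd_def Gn_def using N0
      by (simp add: grid_sum[OF N0] Al_def NN_def power_add)
    finally show ?thesis by (simp add: x)
  qed
  define f where "f = (\<lambda>(P, Q). if (P, Q) \<in> Al then d P Q * of_real (\<epsilon> ^ degQ Q) else 0)"
  have hsf: "(f has_sum S / NN) UNIV"
  proof -
    have "((\<lambda>x. NN * f x) has_sum S) UNIV" using hsS pt by (simp add: f_def)
    then have "((\<lambda>x. NN * f x / NN) has_sum S / NN) UNIV" by (rule has_sum_divide_const)
    then show ?thesis using NN0 by simp
  qed
  have Sb: "cmod S \<le> real (N ^ CARD('d) * N ^ CARD('n)) * (C * \<epsilon> ^ M)"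
  proof -
    have "cmod S \<le> (\<Sum>u\<in>Gd. \<Sum>v\<in>Gn. cmod (h (Xg N u) (Yg N \<epsilon> v) * cf N P0 Q0 u v))"
      unfolding S_def by (rule order_trans[OF norm_sum sum_mono[OF norm_sum]])
    also have "\<dots> \<le> (\<Sum>u\<in>Gd. \<Sum>v\<in>Gn. C * \<epsilon> ^ M)"
      by (intro sum_mono) (simp add: norm_mult cf_def prod_norm[symmetric] norm_Eroot bd[OF e0 e\<delta> Xgr Ygr])
    also have "\<dots> = real (N ^ CARD('d) * N ^ CARD('n)) * (C * \<epsilon> ^ M)" by (simp add: cardG)
    finally show ?thesis .
  qed
  have Avb: "cmod (S / NN) \<le> C * \<epsilon> ^ M"
    using Sb N0 by (simp add: NN_def norm_divide norm_power power_add norm_mult field_simps)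
  have P0Al: "(P0, Q0) \<in> Al" by (simp add: Al_def)
  define g where "g = (\<lambda>x. f x - (if x = (P0, Q0) then d P0 Q0 * of_real (\<epsilon> ^ k0) else 0))"
  have hsg: "(g has_sum (S / NN - d P0 Q0 * of_real (\<epsilon> ^ k0))) UNIV"
    unfolding g_def by (rule has_sum_diff'[OF hsf has_sum_single_pt])
  define wF where "wF = (\<lambda>x. if x \<in> F then 0 else w x)"
  have hswF: "(wF has_sum infsum w (UNIV - F)) UNIV"
  proof -
    have "(w has_sum infsum w (UNIV - F)) (UNIV - F)" using wsF by simp
    then show ?thesis by (rule has_sum_cong_neutral[THEN iffD1, rotated -1]) (auto simp: wF_def)
  qed
  have "cmod (S / NN - d P0 Q0 * of_real (\<epsilon> ^ k0)) \<le> infsum w (UNIV - F)"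
  proof (rule norm_infsum_le[OF hsg hswF])
    fix x :: "('d \<Rightarrow> int) \<times> ('n \<Rightarrow> nat)"
    obtain P Q where x: "x = (P, Q)" by (cases x)
    show "norm (g x) \<le> wF x"
    proof (cases "x = (P0, Q0)")
      case True then show ?thesis using P0Al w0 by (simp add: g_def f_def k0_def wF_def)
    next
      case False
      show ?thesis
      proof (cases "x \<in> Al")
        case True
        then have "x \<notin> F" using AlF False by blast
        then show ?thesis using True False e0 by (auto simp: g_def f_def wF_def w_def x norm_mult norm_power)
      next
        case nAl: False
        then show ?thesis using False w0 by (auto simp: g_def f_def wF_def x)
      qed
    qed
  qed
  then have close: "cmod (S / NN - d P0 Q0 * of_real (\<epsilon> ^ k0)) \<le> e" using tail by linarith
  have "a * \<epsilon> ^ k0 = cmod (d P0 Q0 * of_real (\<epsilon> ^ k0))" using e0 by (simp add: a_def norm_mult norm_power)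
  also have "\<dots> \<le> cmod (S / NN) + cmod (S / NN - d P0 Q0 * of_real (\<epsilon> ^ k0))"
    by (metis norm_triangle_sub add.commute norm_minus_commute)
  also have "\<dots> \<le> C * \<epsilon> ^ M + e" using Avb close by linarith
  finally have ineq: "a * \<epsilon> ^ k0 \<le> C * \<epsilon> ^ M + e" .
  have "\<epsilon> ^ M = \<epsilon> ^ k0 * \<epsilon> ^ (M - k0)" using deg by (simp add: k0_def power_add[symmetric])
  also have "\<dots> \<le> \<epsilon> ^ k0 * \<epsilon>" using deg e0 e1 by (intro mult_left_mono power_le_one_iff[THEN iffD2] ) (auto simp: k0_def intro: power_decreasing[of 1 "M - k0" \<epsilon>, simplified])
  finally have eM: "\<epsilon> ^ M \<le> \<epsilon> ^ k0 * \<epsilon>" .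
  have "C * \<epsilon> ^ M \<le> \<bar>C\<bar> * (\<epsilon> ^ k0 * \<epsilon>)"
    using eM e0 by (meson abs_ge_self mult_mono order_trans abs_ge_zero zero_le_power less_imp_le mult_right_mono)
  also have "\<dots> = \<epsilon> ^ k0 * (\<bar>C\<bar> * \<epsilon>)" by (simp add: mult_ac)
  also have "\<dots> \<le> \<epsilon> ^ k0 * (a / 2)" using eC e0 by (intro mult_left_mono) auto
  finally have "C * \<epsilon> ^ M \<le> \<epsilon> ^ k0 * (a / 2)" .
  moreover have "\<epsilon> ^ k0 * (a / 2) = (a * \<epsilon> ^ k0) / 2" by simp
  moreover have "0 < a * \<epsilon> ^ k0" using a0 e0 by simp
  ultimately show False using ineq unfolding e_def by linarith
qed


lemma finite_leQ: "finite {Q' :: 'n::finite \<Rightarrow> nat. \<forall>j. Q' j \<le> Q j}"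
proof -
  have "{Q' :: 'n \<Rightarrow> nat. \<forall>j. Q' j \<le> Q j} \<subseteq> PiE UNIV (\<lambda>j. {..Q j})" by (auto simp: PiE_def Pi_def)
  moreover have "finite (PiE (UNIV :: 'n set) (\<lambda>j. {..Q j}))" by (simp add: finite_PiE)
  ultimately show ?thesis by (rule finite_subset)
qed

lemma has_sum_single_pt_aux: "((\<lambda>x. if x = a then c else 0) has_sum c) UNIV"
proof -
  have "((\<lambda>x. if x = a then c else 0) has_sum c) {a}" by (intro has_sum_finiteI) auto
  then show ?thesis
    by (rule has_sum_cong_neutral[THEN iffD1, rotated -1]) auto
qed

lemma mul_fts_zero:
  assumes "\<And>P' Q'. (\<forall>j. Q' j \<le> Q j) \<Longrightarrow> g P' Q' * f (\<lambda>l. P l - P' l) (\<lambda>j. Q j - Q' j) = 0"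
  shows "mul_fts g f P Q = 0"
proof -
  have "(\<Sum>Q'\<in>{Q'. \<forall>j. Q' j \<le> Q j}. g P' Q' * f (\<lambda>l. P l - P' l) (\<lambda>j. Q j - Q' j)) = 0" for P'
    using assms by (intro sum.neutral) auto
  then show ?thesis unfolding mul_fts_def by simp
qed

lemma mul_fts_single:
  assumes Q1: "\<forall>j. Q1 j \<le> Q j"
    and oth: "\<And>P' Q'. (\<forall>j. Q' j \<le> Q j) \<Longrightarrow> (P', Q') \<noteq> (P1, Q1) \<Longrightarrow> g P' Q' * f (\<lambda>l. P l - P' l) (\<lambda>j. Q j - Q' j) = 0"
  shows "mul_fts g f P Q = g P1 Q1 * f (\<lambda>l. P l - P1 l) (\<lambda>j. Q j - Q1 j)"
proof -
  define c where "c = g P1 Q1 * f (\<lambda>l. P l - P1 l) (\<lambda>j. Q j - Q1 j)"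
  have inner: "(\<Sum>Q'\<in>{Q'. \<forall>j. Q' j \<le> Q j}. g P' Q' * f (\<lambda>l. P l - P' l) (\<lambda>j. Q j - Q' j)) = (if P' = P1 then c else 0)" for P'
  proof (cases "P' = P1")
    case True
    have "(\<Sum>Q'\<in>{Q'. \<forall>j. Q' j \<le> Q j}. g P' Q' * f (\<lambda>l. P l - P' l) (\<lambda>j. Q j - Q' j))
        = g P' Q1 * f (\<lambda>l. P l - P' l) (\<lambda>j. Q j - Q1 j) + (\<Sum>Q'\<in>{Q'. \<forall>j. Q' j \<le> Q j} - {Q1}. g P' Q' * f (\<lambda>l. P l - P' l) (\<lambda>j. Q j - Q' j))"
      using Q1 finite_leQ by (subst sum.remove[of _ Q1]) auto
    also have "(\<Sum>Q'\<in>{Q'. \<forall>j. Q' j \<le> Q j} - {Q1}. g P' Q' * f (\<lambda>l. P l - P' l) (\<lambda>j. Q j - Q' j)) = 0"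
      using oth True by (intro sum.neutral) auto
    finally show ?thesis using True by (simp add: c_def)
  next
    case False
    then show ?thesis using oth by (intro trans[OF sum.neutral]) auto
  qed
  have "mul_fts g f P Q = infsum (\<lambda>P'. if P' = P1 then c else 0) UNIV"
    unfolding mul_fts_def by (simp add: inner)
  also have "\<dots> = c" by (rule infsumI[OF has_sum_single_pt_aux])
  finally show ?thesis by (simp add: c_def)
qed


abbreviation "sdv \<equiv> small_div"

lemma sum_unitQ: "(\<Sum>j\<in>UNIV. of_nat (unitQ i j) * (f j :: complex)) = f (i::'n::finite)"
  by (subst sum.remove[of _ i]) (auto simp: unitQ_def)

lemma sd_split:
  assumes "\<forall>j. Q' j \<le> Q j"
  shows "small_div \<omega> \<Lambda> P Q = small_div \<omega> \<Lambda> P' Q' + small_div \<omega> \<Lambda> (\<lambda>l. P l - P' l) (\<lambda>j. Q j - Q' j)"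
proof -
  have a: "(\<Sum>l\<in>UNIV. real_of_int (P l) * \<omega> l) = (\<Sum>l\<in>UNIV. real_of_int (P' l) * \<omega> l) + (\<Sum>l\<in>UNIV. real_of_int (P l - P' l) * \<omega> l)"
    by (simp add: sum.distrib[symmetric] algebra_simps)
  have b: "(\<Sum>j\<in>UNIV. of_nat (Q j) * \<Lambda> j) = (\<Sum>j\<in>UNIV. of_nat (Q' j) * \<Lambda> j) + (\<Sum>j\<in>UNIV. of_nat (Q j - Q' j) * \<Lambda> j)"
    using assms by (simp add: sum.distrib[symmetric] of_nat_diff algebra_simps)
  show ?thesis unfolding small_div_def a b by (simp add: algebra_simps)
qed

lemma sd_plus_unit: "small_div \<omega> \<Lambda> P (\<lambda>j. Q j + unitQ i j) = small_div \<omega> \<Lambda> P Q + \<Lambda> i"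
proof -
  have "(\<Sum>j\<in>UNIV. of_nat (Q j + unitQ i j) * \<Lambda> j) = (\<Sum>j\<in>UNIV. of_nat (Q j) * \<Lambda> j) + (\<Sum>j\<in>UNIV. of_nat (unitQ i j) * \<Lambda> j)"
    by (simp add: sum.distrib[symmetric] algebra_simps)
  also have "(\<Sum>j\<in>UNIV. of_nat (unitQ i j) * \<Lambda> j) = \<Lambda> i" by (rule sum_unitQ)
  finally show ?thesis unfolding small_div_def by (simp add: algebra_simps)
qed

lemma sd_zero: "small_div \<omega> \<Lambda> (\<lambda>_. 0) (\<lambda>_. 0) = 0" by (simp add: small_div_def)

lemma sd_unit: "small_div \<omega> \<Lambda> (\<lambda>_. 0) (unitQ j) = \<Lambda> j" by (simp add: small_div_def sum_unitQ)

lemma degQ_diff: "\<forall>j. Q' j \<le> Q j \<Longrightarrow> degQ (\<lambda>j. Q j - Q' j) = degQ Q - degQ Q'"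
  by (simp add: degQ_def sum_subtractf_nat)

lemma degQ_le: "\<forall>j. Q' j \<le> Q j \<Longrightarrow> degQ Q' \<le> degQ Q"
  by (simp add: degQ_def sum_mono)

lemma degQ_plus_unit: "degQ (\<lambda>j. Q j + unitQ i j) = degQ Q + 1"
  by (simp add: degQ_def sum.distrib unitQ_def)

lemma degQ_unit: "degQ (unitQ i :: 'n::finite \<Rightarrow> nat) = 1"
  by (simp add: degQ_def unitQ_def)

lemma degQ_zero_iff: "degQ Q = 0 \<longleftrightarrow> Q = (\<lambda>_. 0)"
  by (auto simp: degQ_def fun_eq_iff)

lemma NF_X_nz:
  "add_vf (S_vf \<omega> \<Lambda>) Rn (Inl m) P Q \<noteq> 0 \<Longrightarrow> (P = (\<lambda>_. 0) \<and> Q = (\<lambda>_. 0)) \<or> Rn (Inl m) P Q \<noteq> 0"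
  by (auto simp: add_vf_def S_vf_def split: if_splits)

lemma NF_Y_nz:
  "add_vf (S_vf \<omega> \<Lambda>) Rn (Inr j) P Q \<noteq> 0 \<Longrightarrow> (P = (\<lambda>_. 0) \<and> Q = unitQ j) \<or> Rn (Inr j) P Q \<noteq> 0"
  by (auto simp: add_vf_def S_vf_def split: if_splits)

lemma diff_zero_iff_P: "((\<lambda>l. P l - P' l) = (\<lambda>_. (0::int))) \<longleftrightarrow> P' = P"
  by (auto simp: fun_eq_iff)

lemma diff_zero_iff_Q: "\<forall>j. Q' j \<le> Q j \<Longrightarrow> ((\<lambda>j. Q j - Q' j) = (\<lambda>_. (0::nat))) \<longleftrightarrow> Q' = Q"
  by (auto simp: fun_eq_iff intro: antisym)

lemma diff_unit_iff_Q: "\<forall>j. Q' j \<le> Q j \<Longrightarrow> ((\<lambda>j'. Q j' - Q' j') = unitQ j) \<longleftrightarrow> (1 \<le> Q j \<and> Q' = (\<lambda>j'. Q j' - unitQ j j'))" (is "?a \<Longrightarrow> ?b \<longleftrightarrow> ?c")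
proof
  assume a: "\<forall>j. Q' j \<le> Q j" and e: "(\<lambda>j'. Q j' - Q' j') = unitQ j"
  have "Q j - Q' j = 1" using fun_cong[OF e, of j] by (simp add: unitQ_def)
  moreover have "Q' j' = Q j' - unitQ j j'" for j'
    using fun_cong[OF e, of j'] a[rule_format, of j'] by (auto simp: unitQ_def split: if_splits)
  ultimately show "1 \<le> Q j \<and> Q' = (\<lambda>j'. Q j' - unitQ j j')" by auto
next
  assume a: "\<forall>j. Q' j \<le> Q j" and b: "1 \<le> Q j \<and> Q' = (\<lambda>j'. Q j' - unitQ j j')"
  then show "(\<lambda>j'. Q j' - Q' j') = unitQ j" by (auto simp: fun_eq_iff unitQ_def)
qed

lemma unit_add_sub: "1 \<le> Q j \<Longrightarrow> (\<lambda>j'. (Q j' - unitQ j j') + unitQ j j') = Q"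
  by (auto simp: fun_eq_iff unitQ_def)


lemma pow_split_le:
  fixes s \<rho>' \<rho> :: real
  assumes "0 < s" "s \<le> \<rho>'" "\<rho>' \<le> \<rho>" "k \<le> n"
  shows "s ^ n \<le> s ^ k * (\<rho> ^ n / \<rho>' ^ k)"
proof -
  have r0: "0 < \<rho>'" using assms by linarith
  have "s ^ n = s ^ k * s ^ (n - k)" using assms by (simp add: power_add[symmetric])
  also have "\<dots> \<le> s ^ k * \<rho>' ^ (n - k)" using assms by (intro mult_left_mono power_mono) auto
  also have "\<rho>' ^ (n - k) = \<rho>' ^ n / \<rho>' ^ k" using assms r0 by (simp add: power_diff)
  also have "\<dots> \<le> \<rho> ^ n / \<rho>' ^ k" using assms r0 by (intro divide_right_mono power_mono) auto
  finally show ?thesis using assms by (simp add: mult_left_mono)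
qed

lemma deg_pow_le:
  fixes s \<rho>' \<rho> :: real
  assumes "0 < s" "s \<le> \<rho>'" "\<rho>' < \<rho>" "1 \<le> k" "k \<le> n"
  shows "real n * s ^ (n - 1) \<le> s ^ (k - 1) * (\<rho> ^ n / ((1 - \<rho>' / \<rho>) * \<rho>' ^ k))"
proof -
  have r0: "0 < \<rho>'" "0 < \<rho>" using assms by linarith+
  have "s ^ (n - 1) = s ^ (k - 1) * s ^ (n - k)" using assms by (simp add: power_add[symmetric])
  also have "\<dots> \<le> s ^ (k - 1) * \<rho>' ^ (n - k)" using assms by (intro mult_left_mono power_mono) auto
  finally have a: "real n * s ^ (n - 1) \<le> s ^ (k - 1) * (real n * \<rho>' ^ (n - k))"
    by (simp add: mult_left_mono mult.left_commute)
  have "real n * \<rho>' ^ (n - k) = (real n * (\<rho>' / \<rho>) ^ n) * \<rho> ^ n / \<rho>' ^ k"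
    using assms r0 by (simp add: power_diff power_divide)
  also have "\<dots> \<le> (1 / (1 - \<rho>' / \<rho>)) * \<rho> ^ n / \<rho>' ^ k"
    using r0 assms by (intro divide_right_mono mult_right_mono n_q_pow_le) auto
  finally have b: "real n * \<rho>' ^ (n - k) \<le> \<rho> ^ n / ((1 - \<rho>' / \<rho>) * \<rho>' ^ k)" by simp
  show ?thesis using a b by (meson mult_left_mono order_trans zero_le_power assms(1) less_imp_le)
qed

lemma analytic_lipschitz:
  assumes an: "analytic_fts r \<rho> a" and ord: "has_order ko a" and ko: "1 \<le> ko"
    and rr: "r' < r" and rho': "\<rho>' < \<rho>" and s: "0 < s" "s \<le> \<rho>'"
    and X1: "\<forall>l. \<bar>Im (X1 l)\<bar> \<le> r'" and X2: "\<forall>l. \<bar>Im (X2 l)\<bar> \<le> r'"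
    and Y1: "\<forall>j. cmod (Y1 j) \<le> s" and Y2: "\<forall>j. cmod (Y2 j) \<le> s"
    and eX: "\<forall>l. cmod (X1 l - X2 l) \<le> eX" and eY: "\<forall>j. cmod (Y1 j - Y2 j) \<le> eY"
  shows "cmod (eval_fts a X1 Y1 - eval_fts a X2 Y2)
    \<le> Kw r \<rho> a * (s ^ ko * eX / ((r - r') * \<rho>' ^ ko) + s ^ (ko - 1) * eY / ((1 - \<rho>' / \<rho>) * \<rho>' ^ ko))"
proof -
  define C where "C = s ^ ko * eX / ((r - r') * \<rho>' ^ ko) + s ^ (ko - 1) * eY / ((1 - \<rho>' / \<rho>) * \<rho>' ^ ko)"
  have rho0: "0 < \<rho>" using an by (simp add: analytic_fts_def)
  have eX0: "0 \<le> eX" using eX[rule_format, of undefined] norm_ge_zero order_trans by blast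
  have eY0: "0 \<le> eY" using eY[rule_format, of undefined] norm_ge_zero order_trans by blast
  have X1r: "\<forall>l. \<bar>Im (X1 l)\<bar> \<le> r" and X2r: "\<forall>l. \<bar>Im (X2 l)\<bar> \<le> r" using X1 X2 rr by (meson less_imp_le order_trans)+
  have Y1r: "\<forall>j. cmod (Y1 j) \<le> \<rho>" and Y2r: "\<forall>j. cmod (Y2 j) \<le> \<rho>" using Y1 Y2 s rho' by (meson less_imp_le order_trans)+
  have r'0: "0 \<le> r'" using X1[rule_format, of undefined] by linarith
  note h1 = analytic_has_sum[OF an X1r Y1r]
  note h2 = analytic_has_sum[OF an X2r Y2r]
  have hd: "((\<lambda>x. (\<lambda>(P, Q). a P Q * mono_term P Q X1 Y1) x - (\<lambda>(P, Q). a P Q * mono_term P Q X2 Y2) x)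
      has_sum (eval_fts a X1 Y1 - eval_fts a X2 Y2)) UNIV"
    by (rule has_sum_diff'[OF h1 h2])
  have ws: "(wt r \<rho> a has_sum Kw r \<rho> a) UNIV" using an by (simp add: analytic_wt Kw_def)
  have ws': "((\<lambda>x. wt r \<rho> a x * C) has_sum Kw r \<rho> a * C) UNIV" by (rule has_sum_cmult_left[OF ws])
  have "cmod (eval_fts a X1 Y1 - eval_fts a X2 Y2) \<le> Kw r \<rho> a * C"
  proof (rule norm_infsum_le[OF hd ws'])
    fix x :: "('a \<Rightarrow> int) \<times> ('b \<Rightarrow> nat)"
    obtain P Q where x: "x = (P, Q)" by (cases x)
    show "norm ((\<lambda>(P, Q). a P Q * mono_term P Q X1 Y1) x - (\<lambda>(P, Q). a P Q * mono_term P Q X2 Y2) x) \<le> wt r \<rho> a x * C"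
    proof (cases "degQ Q < ko")
      case True then show ?thesis using ord by (simp add: x has_order_def wt_def)
    next
      case False
      note md = mono_term_diff_bound[OF X1 X2 s(1) Y1 Y2 eX eY, of P Q]
      have A: "exp (r' * absP P) * absP P * s ^ degQ Q \<le> exp (r * absP P) * \<rho> ^ degQ Q * (s ^ ko / ((r - r') * \<rho>' ^ ko))"
      proof -
        have "absP P * exp (r' * absP P) \<le> exp ((r' + (r - r')) * absP P) / (r - r')"
          using rr by (intro x_exp_le absP_nonneg) auto
        then have e: "exp (r' * absP P) * absP P \<le> exp (r * absP P) / (r - r')" by (simp add: mult.commute)
        have p: "s ^ degQ Q \<le> s ^ ko * (\<rho> ^ degQ Q / \<rho>' ^ ko)"
          using False s rho' by (intro pow_split_le) auto
        have "exp (r' * absP P) * absP P * s ^ degQ Q \<le> exp (r * absP P) / (r - r') * (s ^ ko * (\<rho> ^ degQ Q / \<rho>' ^ ko))"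
          using e p s absP_nonneg[of P] rr by (intro mult_mono) auto
        then show ?thesis by (simp add: field_simps)
      qed
      have B: "exp (r' * absP P) * (real (degQ Q) * s ^ (degQ Q - 1)) \<le> exp (r * absP P) * \<rho> ^ degQ Q * (s ^ (ko - 1) / ((1 - \<rho>' / \<rho>) * \<rho>' ^ ko))"
      proof -
        have e: "exp (r' * absP P) \<le> exp (r * absP P)" using rr absP_nonneg[of P] by (simp add: mult_right_mono)
        have p: "real (degQ Q) * s ^ (degQ Q - 1) \<le> s ^ (ko - 1) * (\<rho> ^ degQ Q / ((1 - \<rho>' / \<rho>) * \<rho>' ^ ko))"
          using False s rho' ko by (intro deg_pow_le) auto
        have "exp (r' * absP P) * (real (degQ Q) * s ^ (degQ Q - 1)) \<le> exp (r * absP P) * (s ^ (ko - 1) * (\<rho> ^ degQ Q / ((1 - \<rho>' / \<rho>) * \<rho>' ^ ko)))"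
          by (rule mult_mono[OF e p]) (use s in auto)
        then show ?thesis by (simp add: field_simps)
      qed
      have "cmod (a P Q * mono_term P Q X1 Y1 - a P Q * mono_term P Q X2 Y2) = cmod (a P Q) * cmod (mono_term P Q X1 Y1 - mono_term P Q X2 Y2)"
        by (simp add: right_diff_distrib[symmetric] norm_mult)
      also have "\<dots> \<le> cmod (a P Q) * (exp (r' * absP P) * (absP P * eX * s ^ degQ Q + real (degQ Q) * s ^ (degQ Q - 1) * eY))"
        by (intro mult_left_mono md) auto
      also have "\<dots> = cmod (a P Q) * ((exp (r' * absP P) * absP P * s ^ degQ Q) * eX + (exp (r' * absP P) * (real (degQ Q) * s ^ (degQ Q - 1))) * eY)"
        by (simp add: algebra_simps)
      also have "\<dots> \<le> cmod (a P Q) * ((exp (r * absP P) * \<rho> ^ degQ Q * (s ^ ko / ((r - r') * \<rho>' ^ ko))) * eX + (exp (r * absP P) * \<rho> ^ degQ Q * (s ^ (ko - 1) / ((1 - \<rho>' / \<rho>) * \<rho>' ^ ko))) * eY)"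
        using A B eX0 eY0 by (intro mult_left_mono add_mono mult_right_mono) auto
      also have "\<dots> = wt r \<rho> a (P, Q) * C"
        by (simp add: wt_def C_def algebra_simps)
      finally show ?thesis by (simp add: x)
    qed
  qed
  then show ?thesis by (simp add: C_def)
qed


lemma sum_Plus_UNIV: "(\<Sum>b\<in>(UNIV :: ('a::finite + 'b::finite) set). f b) = (\<Sum>l\<in>UNIV. f (Inl l)) + (\<Sum>j\<in>UNIV. f (Inr j))"
proof -
  have "sum f ((UNIV :: 'a set) <+> (UNIV :: 'b set)) = sum (f \<circ> Inl) UNIV + sum (f \<circ> Inr) UNIV"
    by (rule sum.Plus) simp_all
  then show ?thesis by (simp only: UNIV_Plus_UNIV comp_def)
qed

lemma degQ_minus_unit: "1 \<le> Q i \<Longrightarrow> degQ (\<lambda>j. Q j - unitQ i j) = degQ Q - 1"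
  using degQ_plus_unit[of "\<lambda>j. Q j - unitQ i j" i] unit_add_sub[of Q i] by simp

context
  fixes \<omega> :: "'d::finite \<Rightarrow> real" and \<Lambda> :: "'n::finite \<Rightarrow> complex"
    and \<Phi> Rn :: "('d, 'n) fvf" and m :: nat
  assumes RnX: "\<And>m' P Q. Rn (Inl m') P Q \<noteq> 0 \<Longrightarrow> small_div \<omega> \<Lambda> P Q = 0 \<and> 1 \<le> degQ Q"
    and RnY: "\<And>j P Q. Rn (Inr j) P Q \<noteq> 0 \<Longrightarrow> small_div \<omega> \<Lambda> P Q = \<Lambda> j \<and> 2 \<le> degQ Q"
    and IH: "\<And>a P Q. degQ Q < m \<Longrightarrow> \<Phi> a P Q \<noteq> 0 \<Longrightarrow> small_div \<omega> \<Lambda> P Q = 0"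
begin

lemma LX_XX:
  assumes dQ: "degQ Q = m" and sdn: "small_div \<omega> \<Lambda> P Q \<noteq> 0"
  shows "mul_fts (jac \<Phi> (Inl l) (Inl m')) (add_vf (S_vf \<omega> \<Lambda>) Rn (Inl m')) P Q
     = \<i> * of_int (P m') * \<Phi> (Inl l) P Q * of_real (\<omega> m')"
proof -
  have one0: "one_fts P Q = 0"
    using sdn by (auto simp: one_fts_def sd_zero)
  have f00: "add_vf (S_vf \<omega> \<Lambda>) Rn (Inl m') (\<lambda>_. 0) (\<lambda>_. 0) = of_real (\<omega> m')"
    using RnX[of m' "\<lambda>_. 0" "\<lambda>_. 0"] by (auto simp: add_vf_def S_vf_def degQ_def)
  have "mul_fts (jac \<Phi> (Inl l) (Inl m')) (add_vf (S_vf \<omega> \<Lambda>) Rn (Inl m')) P Q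
      = jac \<Phi> (Inl l) (Inl m') P Q * add_vf (S_vf \<omega> \<Lambda>) Rn (Inl m') (\<lambda>l. P l - P l) (\<lambda>j. Q j - Q j)"
  proof (rule mul_fts_single)
    fix P' Q' assume le: "\<forall>j. Q' j \<le> Q j" and ne: "(P', Q') \<noteq> (P, Q)"
    show "jac \<Phi> (Inl l) (Inl m') P' Q' * add_vf (S_vf \<omega> \<Lambda>) Rn (Inl m') (\<lambda>l. P l - P' l) (\<lambda>j. Q j - Q' j) = 0"
    proof (rule ccontr)
      assume "\<not> ?thesis"
      then have g: "jac \<Phi> (Inl l) (Inl m') P' Q' \<noteq> 0" and f: "add_vf (S_vf \<omega> \<Lambda>) Rn (Inl m') (\<lambda>l. P l - P' l) (\<lambda>j. Q j - Q' j) \<noteq> 0"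
        by auto
      have rn: "Rn (Inl m') (\<lambda>l. P l - P' l) (\<lambda>j. Q j - Q' j) \<noteq> 0"
        using NF_X_nz[OF f] ne le by (auto simp: diff_zero_iff_P diff_zero_iff_Q)
      from RnX[OF rn] have s2: "small_div \<omega> \<Lambda> (\<lambda>l. P l - P' l) (\<lambda>j. Q j - Q' j) = 0"
        and d2: "1 \<le> degQ (\<lambda>j. Q j - Q' j)" by auto
      have dlt: "degQ Q' < m" using d2 dQ le degQ_diff[OF le] degQ_le[OF le] by linarith
      have s1: "small_div \<omega> \<Lambda> P' Q' = 0"
      proof (cases "one_fts P' Q' \<noteq> 0 \<and> l = m'")
        case True then show ?thesis by (auto simp: one_fts_def sd_zero split: if_splits)
      next
        case False
        then have "dX m' (\<Phi> (Inl l)) P' Q' \<noteq> 0" using g by (auto simp: jac_def split: if_splits)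
        then have "\<Phi> (Inl l) P' Q' \<noteq> 0" by (simp add: dX_def)
        then show ?thesis using IH dlt by blast
      qed
      show False using sd_split[OF le, of \<omega> \<Lambda> P P'] s1 s2 sdn by simp
    qed
  qed simp
  also have "\<dots> = \<i> * of_int (P m') * \<Phi> (Inl l) P Q * of_real (\<omega> m')"
    using f00 one0 by (simp add: jac_def dX_def)
  finally show ?thesis .
qed

lemma LX_XY:
  assumes dQ: "degQ Q = m" and sdn: "small_div \<omega> \<Lambda> P Q \<noteq> 0"
  shows "mul_fts (jac \<Phi> (Inl l) (Inr j)) (add_vf (S_vf \<omega> \<Lambda>) Rn (Inr j)) P Q
     = of_nat (Q j) * \<Phi> (Inl l) P Q * \<Lambda> j"
proof -
  have oth: "jac \<Phi> (Inl l) (Inr j) P' Q' * add_vf (S_vf \<omega> \<Lambda>) Rn (Inr j) (\<lambda>l. P l - P' l) (\<lambda>j. Q j - Q' j) = 0"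
    if le: "\<forall>j. Q' j \<le> Q j" and ne: "\<not> (1 \<le> Q j \<and> (P', Q') = (P, \<lambda>j'. Q j' - unitQ j j'))" for P' Q'
  proof (rule ccontr)
    assume "\<not> ?thesis"
    then have g: "jac \<Phi> (Inl l) (Inr j) P' Q' \<noteq> 0" and f: "add_vf (S_vf \<omega> \<Lambda>) Rn (Inr j) (\<lambda>l. P l - P' l) (\<lambda>j. Q j - Q' j) \<noteq> 0"
      by auto
    have rn: "Rn (Inr j) (\<lambda>l. P l - P' l) (\<lambda>j. Q j - Q' j) \<noteq> 0"
      using NF_Y_nz[OF f] ne le by (auto simp: diff_zero_iff_P diff_unit_iff_Q[OF le])
    from RnY[OF rn] have s2: "small_div \<omega> \<Lambda> (\<lambda>l. P l - P' l) (\<lambda>j. Q j - Q' j) = \<Lambda> j"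
      and d2: "2 \<le> degQ (\<lambda>j. Q j - Q' j)" by auto
    have dlt: "degQ (\<lambda>j'. Q' j' + unitQ j j') < m"
      using d2 dQ le degQ_diff[OF le] degQ_le[OF le] degQ_plus_unit[of Q' j] by linarith
    have "\<Phi> (Inl l) P' (\<lambda>j'. Q' j' + unitQ j j') \<noteq> 0" using g by (simp add: jac_def dY_def)
    then have "small_div \<omega> \<Lambda> P' (\<lambda>j'. Q' j' + unitQ j j') = 0" using IH dlt by blast
    then have s1: "small_div \<omega> \<Lambda> P' Q' = - \<Lambda> j" using sd_plus_unit[of \<omega> \<Lambda> P' Q' j] by (simp add: eq_neg_iff_add_eq_0)
    show False using sd_split[OF le, of \<omega> \<Lambda> P P'] s1 s2 sdn by simp
  qed
  show ?thesis
  proof (cases "1 \<le> Q j")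
    case True
    define Q1 where "Q1 = (\<lambda>j'. Q j' - unitQ j j')"
    have le1: "\<forall>j'. Q1 j' \<le> Q j'" by (simp add: Q1_def)
    have "mul_fts (jac \<Phi> (Inl l) (Inr j)) (add_vf (S_vf \<omega> \<Lambda>) Rn (Inr j)) P Q
        = jac \<Phi> (Inl l) (Inr j) P Q1 * add_vf (S_vf \<omega> \<Lambda>) Rn (Inr j) (\<lambda>l. P l - P l) (\<lambda>j'. Q j' - Q1 j')"
      by (rule mul_fts_single[OF le1]) (use oth True in \<open>auto simp: Q1_def\<close>)
    also have "(\<lambda>j'. Q j' - Q1 j') = unitQ j" using True by (auto simp: Q1_def fun_eq_iff unitQ_def)
    also have "add_vf (S_vf \<omega> \<Lambda>) Rn (Inr j) (\<lambda>l. P l - P l) (unitQ j) = \<Lambda> j"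
      using RnY[of j "\<lambda>_. 0" "unitQ j"] by (auto simp: add_vf_def S_vf_def degQ_unit)
    also have "jac \<Phi> (Inl l) (Inr j) P Q1 = of_nat (Q j) * \<Phi> (Inl l) P Q"
      using True unit_add_sub[of Q j, OF True] by (simp add: jac_def dY_def Q1_def unitQ_def)
    finally show ?thesis .
  next
    case False
    have "mul_fts (jac \<Phi> (Inl l) (Inr j)) (add_vf (S_vf \<omega> \<Lambda>) Rn (Inr j)) P Q = 0"
      by (rule mul_fts_zero) (use oth False in auto)
    then show ?thesis using False by simp
  qed
qed

lemma LX:
  assumes dQ: "degQ Q = m" and sdn: "small_div \<omega> \<Lambda> P Q \<noteq> 0"
  shows "jac_apply \<Phi> (add_vf (S_vf \<omega> \<Lambda>) Rn) (Inl l) P Q = small_div \<omega> \<Lambda> P Q * \<Phi> (Inl l) P Q"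
proof -
  have "jac_apply \<Phi> (add_vf (S_vf \<omega> \<Lambda>) Rn) (Inl l) P Q
      = (\<Sum>m'\<in>UNIV. \<i> * of_int (P m') * \<Phi> (Inl l) P Q * of_real (\<omega> m')) + (\<Sum>j\<in>UNIV. of_nat (Q j) * \<Phi> (Inl l) P Q * \<Lambda> j)"
    unfolding jac_apply_def sum_Plus_UNIV using LX_XX[OF dQ sdn] LX_XY[OF dQ sdn] by simp
  also have "\<dots> = small_div \<omega> \<Lambda> P Q * \<Phi> (Inl l) P Q"
    unfolding small_div_def by (simp add: sum_distrib_left sum_distrib_right algebra_simps)
  finally show ?thesis .
qed

lemma LY_YX:
  assumes dQ: "degQ Q0 = m" and sdn: "small_div \<omega> \<Lambda> P Q0 \<noteq> 0"
  shows "mul_fts (jac \<Phi> (Inr i) (Inl m')) (add_vf (S_vf \<omega> \<Lambda>) Rn (Inl m')) P (\<lambda>j. Q0 j + unitQ i j)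
     = \<i> * of_int (P m') * \<Phi> (Inr i) P Q0 * of_real (\<omega> m')"
proof -
  define Q where "Q = (\<lambda>j. Q0 j + unitQ i j)"
  have Qi: "1 \<le> Q i" by (simp add: Q_def unitQ_def)
  have QQ0: "(\<lambda>j. Q j - unitQ i j) = Q0" by (simp add: Q_def)
  have dQQ: "degQ Q = m + 1" by (simp add: Q_def degQ_plus_unit dQ)
  have sdQ: "small_div \<omega> \<Lambda> P Q = small_div \<omega> \<Lambda> P Q0 + \<Lambda> i" by (simp add: Q_def sd_plus_unit)
  have f00: "add_vf (S_vf \<omega> \<Lambda>) Rn (Inl m') (\<lambda>_. 0) (\<lambda>_. 0) = of_real (\<omega> m')"
    using RnX[of m' "\<lambda>_. 0" "\<lambda>_. 0"] by (auto simp: add_vf_def S_vf_def degQ_def)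
  have "mul_fts (jac \<Phi> (Inr i) (Inl m')) (add_vf (S_vf \<omega> \<Lambda>) Rn (Inl m')) P Q
      = jac \<Phi> (Inr i) (Inl m') P Q * add_vf (S_vf \<omega> \<Lambda>) Rn (Inl m') (\<lambda>l. P l - P l) (\<lambda>j. Q j - Q j)"
  proof (rule mul_fts_single)
    fix P' Q' assume le: "\<forall>j. Q' j \<le> Q j" and ne: "(P', Q') \<noteq> (P, Q)"
    show "jac \<Phi> (Inr i) (Inl m') P' Q' * add_vf (S_vf \<omega> \<Lambda>) Rn (Inl m') (\<lambda>l. P l - P' l) (\<lambda>j. Q j - Q' j) = 0"
    proof (rule ccontr)
      assume "\<not> ?thesis"
      then have g: "jac \<Phi> (Inr i) (Inl m') P' Q' \<noteq> 0" and f: "add_vf (S_vf \<omega> \<Lambda>) Rn (Inl m') (\<lambda>l. P l - P' l) (\<lambda>j. Q j - Q' j) \<noteq> 0"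
        by auto
      have rn: "Rn (Inl m') (\<lambda>l. P l - P' l) (\<lambda>j. Q j - Q' j) \<noteq> 0"
        using NF_X_nz[OF f] ne le by (auto simp: diff_zero_iff_P diff_zero_iff_Q)
      from RnX[OF rn] have s2: "small_div \<omega> \<Lambda> (\<lambda>l. P l - P' l) (\<lambda>j. Q j - Q' j) = 0"
        and d2: "1 \<le> degQ (\<lambda>j. Q j - Q' j)" by auto
      have Q'i: "1 \<le> Q' i" and phi: "\<Phi> (Inr i) P' (\<lambda>j. Q' j - unitQ i j) \<noteq> 0"
        using g by (auto simp: jac_def mulY_def dX_def split: if_splits)
      have dd: "degQ (\<lambda>j. Q' j - unitQ i j) = degQ Q' - 1"
        using degQ_minus_unit[of Q' i] Q'i by simp
      have dlt: "degQ (\<lambda>j. Q' j - unitQ i j) < m"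
      proof -
        have "Q' i \<le> degQ Q'" unfolding degQ_def by (rule member_le_sum) auto
        then show ?thesis using d2 dQQ le degQ_diff[OF le] degQ_le[OF le] dd Q'i by linarith
      qed
      have "small_div \<omega> \<Lambda> P' (\<lambda>j. Q' j - unitQ i j) = 0" using IH dlt phi by blast
      then have s1: "small_div \<omega> \<Lambda> P' Q' = \<Lambda> i"
        using sd_plus_unit[of \<omega> \<Lambda> P' "\<lambda>j. Q' j - unitQ i j" i] unit_add_sub[of Q' i, OF Q'i] by simp
      show False using sd_split[OF le, of \<omega> \<Lambda> P P'] s1 s2 sdn sdQ by simp
    qed
  qed simp
  also have "\<dots> = \<i> * of_int (P m') * \<Phi> (Inr i) P Q0 * of_real (\<omega> m')"
    using f00 Qi QQ0 by (simp add: jac_def dX_def mulY_def)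
  finally show ?thesis by (simp add: Q_def)
qed

lemma LY_YY:
  assumes dQ: "degQ Q0 = m" and sdn: "small_div \<omega> \<Lambda> P Q0 \<noteq> 0"
  shows "mul_fts (jac \<Phi> (Inr i) (Inr j)) (add_vf (S_vf \<omega> \<Lambda>) Rn (Inr j)) P (\<lambda>k. Q0 k + unitQ i k)
     = \<Lambda> j * ((if i = j then \<Phi> (Inr i) P Q0 else 0) + of_nat (Q0 j) * \<Phi> (Inr i) P Q0)"
proof -
  define Q where "Q = (\<lambda>k. Q0 k + unitQ i k)"
  have Qi: "1 \<le> Q i" by (simp add: Q_def unitQ_def)
  have dQQ: "degQ Q = m + 1" by (simp add: Q_def degQ_plus_unit dQ)
  have sdQ: "small_div \<omega> \<Lambda> P Q = small_div \<omega> \<Lambda> P Q0 + \<Lambda> i" by (simp add: Q_def sd_plus_unit)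
  have oth: "jac \<Phi> (Inr i) (Inr j) P' Q' * add_vf (S_vf \<omega> \<Lambda>) Rn (Inr j) (\<lambda>l. P l - P' l) (\<lambda>k. Q k - Q' k) = 0"
    if le: "\<forall>k. Q' k \<le> Q k" and ne: "\<not> (1 \<le> Q j \<and> (P', Q') = (P, \<lambda>k. Q k - unitQ j k))" for P' Q'
  proof (rule ccontr)
    assume "\<not> ?thesis"
    then have g: "jac \<Phi> (Inr i) (Inr j) P' Q' \<noteq> 0" and f: "add_vf (S_vf \<omega> \<Lambda>) Rn (Inr j) (\<lambda>l. P l - P' l) (\<lambda>k. Q k - Q' k) \<noteq> 0"
      by auto
    have rn: "Rn (Inr j) (\<lambda>l. P l - P' l) (\<lambda>k. Q k - Q' k) \<noteq> 0"
      using NF_Y_nz[OF f] ne le by (auto simp: diff_zero_iff_P diff_unit_iff_Q[OF le])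
    from RnY[OF rn] have s2: "small_div \<omega> \<Lambda> (\<lambda>l. P l - P' l) (\<lambda>k. Q k - Q' k) = \<Lambda> j"
      and d2: "2 \<le> degQ (\<lambda>k. Q k - Q' k)" by auto
    have dlt: "degQ Q' < m" using d2 dQQ le degQ_diff[OF le] degQ_le[OF le] by linarith
    have split: "small_div \<omega> \<Lambda> P Q = small_div \<omega> \<Lambda> P' Q' + \<Lambda> j" using sd_split[OF le, of \<omega> \<Lambda> P P'] s2 by simp
    show False
    proof (cases "i = j \<and> \<Phi> (Inr i) P' Q' \<noteq> 0")
      case True
      then have "small_div \<omega> \<Lambda> P' Q' = 0" using IH dlt by blast
      then show False using split sdQ sdn True by simp
    next
      case False
      then have Q'i: "1 \<le> Q' i" and phi: "\<Phi> (Inr i) P' (\<lambda>k. (Q' k - unitQ i k) + unitQ j k) \<noteq> 0"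
        using g by (auto simp: jac_def mulY_def dY_def split: if_splits)
      have dd: "degQ (\<lambda>k. (Q' k - unitQ i k) + unitQ j k) = degQ Q'"
        using degQ_plus_unit[of "\<lambda>k. Q' k - unitQ i k" j] degQ_minus_unit[of Q' i] Q'i
      proof -
        have "Q' i \<le> degQ Q'" unfolding degQ_def by (rule member_le_sum) auto
        then show ?thesis using degQ_plus_unit[of "\<lambda>k. Q' k - unitQ i k" j] degQ_minus_unit[of Q' i] Q'i by simp
      qed
      have "small_div \<omega> \<Lambda> P' (\<lambda>k. (Q' k - unitQ i k) + unitQ j k) = 0" using IH dlt dd phi by simp
      then have "small_div \<omega> \<Lambda> P' (\<lambda>k. Q' k - unitQ i k) = - \<Lambda> j"
        using sd_plus_unit[of \<omega> \<Lambda> P' "\<lambda>k. Q' k - unitQ i k" j] by (simp add: eq_neg_iff_add_eq_0)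
      then have "small_div \<omega> \<Lambda> P' Q' = \<Lambda> i - \<Lambda> j"
        using sd_plus_unit[of \<omega> \<Lambda> P' "\<lambda>k. Q' k - unitQ i k" i] unit_add_sub[of Q' i, OF Q'i] by simp
      then show False using split sdQ sdn by simp
    qed
  qed
  show ?thesis
  proof (cases "1 \<le> Q j")
    case True
    define Q1 where "Q1 = (\<lambda>k. Q k - unitQ j k)"
    have le1: "\<forall>k. Q1 k \<le> Q k" by (simp add: Q1_def)
    have "mul_fts (jac \<Phi> (Inr i) (Inr j)) (add_vf (S_vf \<omega> \<Lambda>) Rn (Inr j)) P Q
        = jac \<Phi> (Inr i) (Inr j) P Q1 * add_vf (S_vf \<omega> \<Lambda>) Rn (Inr j) (\<lambda>l. P l - P l) (\<lambda>k. Q k - Q1 k)"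
      by (rule mul_fts_single[OF le1]) (use oth True in \<open>auto simp: Q1_def\<close>)
    also have "(\<lambda>k. Q k - Q1 k) = unitQ j" using True by (auto simp: Q1_def fun_eq_iff unitQ_def)
    also have "add_vf (S_vf \<omega> \<Lambda>) Rn (Inr j) (\<lambda>l. P l - P l) (unitQ j) = \<Lambda> j"
      using RnY[of j "\<lambda>_. 0" "unitQ j"] by (auto simp: add_vf_def S_vf_def degQ_unit)
    also have "jac \<Phi> (Inr i) (Inr j) P Q1 = (if i = j then \<Phi> (Inr i) P Q0 else 0) + of_nat (Q0 j) * \<Phi> (Inr i) P Q0"
    proof (cases "i = j")
      case True
      have q1: "Q1 = Q0" by (simp add: Q1_def Q_def True)
      show ?thesis
      proof (cases "1 \<le> Q0 i")
        case c: True
        have "(\<lambda>k. (Q0 k - unitQ i k) + unitQ i k) = Q0" by (rule unit_add_sub[of Q0 i, OF c])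
        moreover have "1 + of_nat (Q0 i - unitQ i i) = (of_nat (Q0 i) :: complex)" using c by (simp add: unitQ_def of_nat_diff)
        ultimately show ?thesis using c by (simp add: jac_def q1 True mulY_def dY_def)
      next
        case c: False
        then show ?thesis by (simp add: jac_def q1 True mulY_def)
      qed
    next
      case False
      have Q0j: "1 \<le> Q0 j" using True False by (simp add: Q_def unitQ_def)
      have q1i: "1 \<le> Q1 i" using False by (simp add: Q1_def Q_def unitQ_def)
      have R: "(\<lambda>k. Q1 k - unitQ i k) = (\<lambda>k. Q0 k - unitQ j k)"
        using False by (auto simp: Q1_def Q_def unitQ_def fun_eq_iff)
      have "(\<lambda>k. (Q0 k - unitQ j k) + unitQ j k) = Q0" by (rule unit_add_sub[of Q0 j, OF Q0j])
      moreover have "1 + of_nat (Q0 j - unitQ j j) = (of_nat (Q0 j) :: complex)" using Q0j by (simp add: unitQ_def of_nat_diff)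
      ultimately have R1: "(\<lambda>k. Q1 k - unitQ i k + unitQ j k) = Q0"
        and R2: "1 + of_nat (Q1 j - unitQ i j) = (of_nat (Q0 j) :: complex)"
        using R fun_cong[OF R, of j] by (auto simp: fun_eq_iff dest: fun_cong)
      show ?thesis using False q1i by (simp add: jac_def mulY_def dY_def R1 R2)
    qed
    finally show ?thesis by (simp add: Q_def mult.commute)
  next
    case False
    have ji: "j \<noteq> i" using False Qi by auto
    have Q0j: "Q0 j = 0" using False ji by (simp add: Q_def unitQ_def)
    have "mul_fts (jac \<Phi> (Inr i) (Inr j)) (add_vf (S_vf \<omega> \<Lambda>) Rn (Inr j)) P Q = 0"
      by (rule mul_fts_zero) (use oth False in auto)
    then show ?thesis using ji Q0j by (simp add: Q_def)
  qed
qed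

lemma LY:
  assumes dQ: "degQ Q0 = m" and sdn: "small_div \<omega> \<Lambda> P Q0 \<noteq> 0"
  shows "jac_apply \<Phi> (add_vf (S_vf \<omega> \<Lambda>) Rn) (Inr i) P (\<lambda>k. Q0 k + unitQ i k)
      = (small_div \<omega> \<Lambda> P Q0 + \<Lambda> i) * \<Phi> (Inr i) P Q0"
proof -
  have "jac_apply \<Phi> (add_vf (S_vf \<omega> \<Lambda>) Rn) (Inr i) P (\<lambda>k. Q0 k + unitQ i k)
      = (\<Sum>m'\<in>UNIV. \<i> * of_int (P m') * \<Phi> (Inr i) P Q0 * of_real (\<omega> m'))
        + (\<Sum>j\<in>UNIV. \<Lambda> j * ((if i = j then \<Phi> (Inr i) P Q0 else 0) + of_nat (Q0 j) * \<Phi> (Inr i) P Q0))"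
    unfolding jac_apply_def sum_Plus_UNIV using LY_YX[OF dQ sdn] LY_YY[OF dQ sdn] by simp
  also have "(\<Sum>j\<in>UNIV. \<Lambda> j * ((if i = j then \<Phi> (Inr i) P Q0 else 0) + of_nat (Q0 j) * \<Phi> (Inr i) P Q0))
      = \<Lambda> i * \<Phi> (Inr i) P Q0 + (\<Sum>j\<in>UNIV. \<Lambda> j * of_nat (Q0 j) * \<Phi> (Inr i) P Q0)"
  proof -
    have d: "(\<Sum>j\<in>UNIV. \<Lambda> j * (if i = j then \<Phi> (Inr i) P Q0 else 0)) = \<Lambda> i * \<Phi> (Inr i) P Q0"
      by (subst sum.remove[of _ i]) auto
    show ?thesis by (simp add: distrib_left sum.distrib d mult.assoc)
  qed
  also have "(\<Sum>m'\<in>UNIV. \<i> * of_int (P m') * \<Phi> (Inr i) P Q0 * of_real (\<omega> m')) + (\<Lambda> i * \<Phi> (Inr i) P Q0 + (\<Sum>j\<in>UNIV. \<Lambda> j * of_nat (Q0 j) * \<Phi> (Inr i) P Q0))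
      = (small_div \<omega> \<Lambda> P Q0 + \<Lambda> i) * \<Phi> (Inr i) P Q0"
    unfolding small_div_def by (simp add: sum_distrib_left sum_distrib_right algebra_simps)
  finally show ?thesis .
qed

end


definition flowX :: "('d \<Rightarrow> real) \<Rightarrow> real \<Rightarrow> ('d \<Rightarrow> complex) \<Rightarrow> 'd \<Rightarrow> complex" where
  "flowX \<omega> t X = (\<lambda>l. X l + of_real (t * \<omega> l))"
definition flowY :: "('n \<Rightarrow> complex) \<Rightarrow> real \<Rightarrow> ('n \<Rightarrow> complex) \<Rightarrow> 'n \<Rightarrow> complex" where
  "flowY \<Lambda> t Y = (\<lambda>j. exp (of_real t * \<Lambda> j) * Y j)"

lemma mono_flow:
  "mono_term P Q (flowX \<omega> t X) (flowY \<Lambda> t Y) = exp (of_real t * small_div \<omega> \<Lambda> P Q) * mono_term P Q X Y"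
proof -
  have e1: "exp (\<i> * (\<Sum>l\<in>UNIV. of_int (P l) * flowX \<omega> t X l))
      = exp (\<i> * (\<Sum>l\<in>UNIV. of_int (P l) * X l)) * exp (of_real t * (\<i> * of_real (\<Sum>l\<in>UNIV. of_int (P l) * \<omega> l)))"
    by (simp add: flowX_def distrib_left sum.distrib exp_add[symmetric] sum_distrib_left algebra_simps)
  have e2: "(\<Prod>j\<in>UNIV. flowY \<Lambda> t Y j ^ Q j) = exp (of_real t * (\<Sum>j\<in>UNIV. of_nat (Q j) * \<Lambda> j)) * (\<Prod>j\<in>UNIV. Y j ^ Q j)"
  proof -
    have "(\<Prod>j\<in>UNIV. flowY \<Lambda> t Y j ^ Q j) = (\<Prod>j\<in>UNIV. exp (of_real t * \<Lambda> j) ^ Q j) * (\<Prod>j\<in>UNIV. Y j ^ Q j)"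
      by (simp add: flowY_def power_mult_distrib prod.distrib)
    also have "(\<Prod>j\<in>UNIV. exp (of_real t * \<Lambda> j) ^ Q j) = (\<Prod>j\<in>UNIV. exp (of_real t * (of_nat (Q j) * \<Lambda> j)))"
      by (rule prod.cong) (auto simp: exp_of_nat_mult[symmetric] mult_ac)
    also have "\<dots> = exp (\<Sum>j\<in>UNIV. of_real t * (of_nat (Q j) * \<Lambda> j))" by (simp add: exp_sum)
    also have "\<dots> = exp (of_real t * (\<Sum>j\<in>UNIV. of_nat (Q j) * \<Lambda> j))" by (simp add: sum_distrib_left)
    finally show ?thesis .
  qed
  show ?thesis
    unfolding mono_term_def e1 e2 small_div_def
    by (simp add: distrib_left exp_add mult_ac)
qed

lemma norm_exp_sd:
  assumes t: "0 \<le> t" "t \<le> 1" and L: "\<forall>j. cmod (\<Lambda> j) \<le> L"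
  shows "cmod (exp (of_real t * small_div \<omega> \<Lambda> P Q)) \<le> exp (L * degQ Q)"
proof -
  have "Re (of_real t * small_div \<omega> \<Lambda> P Q) = t * (\<Sum>j\<in>UNIV. real (Q j) * Re (\<Lambda> j))"
    by (simp add: small_div_def Re_sum)
  also have "\<dots> \<le> t * (\<Sum>j\<in>UNIV. real (Q j) * L)"
    using L t by (intro mult_left_mono sum_mono) (auto intro: order_trans[OF complex_Re_le_cmod])
  also have "\<dots> \<le> 1 * (\<Sum>j\<in>UNIV. real (Q j) * L)"
  proof -
    have "0 \<le> L" using L[rule_format, of undefined] norm_ge_zero order_trans by blast
    then have "0 \<le> (\<Sum>j\<in>UNIV. real (Q j) * L)" by (simp add: sum_nonneg)
    then show ?thesis using t by (intro mult_right_mono) auto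
  qed
  also have "\<dots> = L * degQ Q" by (simp add: degQ_def sum_distrib_left mult.commute)
  finally show ?thesis by simp
qed

lemma has_sum_flow:
  assumes "((\<lambda>(P, Q). a P Q * mono_term P Q (flowX \<omega> t X) (flowY \<Lambda> t Y)) has_sum v) UNIV"
  shows "((\<lambda>(P, Q). (a P Q * exp (of_real t * small_div \<omega> \<Lambda> P Q)) * mono_term P Q X Y) has_sum v) UNIV"
  using assms by (simp add: mono_flow mult.assoc case_prod_unfold)

lemma flow_Im: "Im (flowX \<omega> t X l) = Im (X l)" by (simp add: flowX_def)

lemma flowY_norm:
  assumes t: "0 \<le> t" "t \<le> 1" and L: "\<forall>j. cmod (\<Lambda> j) \<le> L" and Y: "cmod (Y j) \<le> s" and s: "0 \<le> s"
  shows "cmod (flowY \<Lambda> t Y j) \<le> exp L * s"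
proof -
  have "Re (of_real t * \<Lambda> j) \<le> L"
  proof -
    have "Re (of_real t * \<Lambda> j) = t * Re (\<Lambda> j)" by simp
    also have "\<dots> \<le> t * L" using t L by (intro mult_left_mono) (auto intro: order_trans[OF complex_Re_le_cmod])
    also have "\<dots> \<le> L"
    proof -
      have "0 \<le> L" using L[rule_format, of j] norm_ge_zero[of "\<Lambda> j"] by linarith
      then show ?thesis using t mult_right_mono[of t 1 L] by simp
    qed
    finally show ?thesis .
  qed
  then have "cmod (exp (of_real t * \<Lambda> j)) \<le> exp L" by simp
  then show ?thesis unfolding flowY_def norm_mult using Y s by (intro mult_mono) auto
qed

lemma Kw_nonneg: "analytic_fts r \<rho> a \<Longrightarrow> 0 \<le> Kw r \<rho> a"
  unfolding Kw_def by (rule infsum_nonneg) (auto simp: wt_def analytic_fts_def split: prod.splits)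

lemma twist_diff_bound:
  assumes an: "analytic_fts r0 \<rho>0 a"
    and IHa: "\<And>P Q. degQ Q < m \<Longrightarrow> a P Q \<noteq> 0 \<Longrightarrow> small_div \<omega> \<Lambda> P Q = 0"
    and t: "0 \<le> t" "t \<le> 1" and L: "\<forall>j. cmod (\<Lambda> j) \<le> L"
    and X: "\<forall>l. \<bar>Im (X l)\<bar> \<le> r0" and Y: "\<forall>j. cmod (Y j) \<le> s" and s: "0 \<le> s" "s \<le> \<rho>0 / exp L"
  shows "cmod (eval_fts a (flowX \<omega> t X) (flowY \<Lambda> t Y) - eval_fts a X Y) \<le> 2 * Kw r0 \<rho>0 a * (s * exp L / \<rho>0) ^ m"
proof -
  have L0: "0 \<le> L" using L[rule_format, of undefined] norm_ge_zero order_trans by blast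
  have r00: "0 < r0" "0 < \<rho>0" using an by (auto simp: analytic_fts_def)
  define \<rho>1 where "\<rho>1 = \<rho>0 / exp L"
  have \<rho>1: "0 < \<rho>1" "\<rho>1 \<le> \<rho>0" using r00 L0 by (auto simp: \<rho>1_def field_simps)
  define \<delta> where "\<delta> = (\<lambda>P Q. a P Q * (exp (of_real t * small_div \<omega> \<Lambda> P Q) - 1))"
  have wle: "wt r0 \<rho>1 \<delta> x \<le> 2 * wt r0 \<rho>0 a x" for x
  proof -
    obtain P Q where x: "x = (P, Q)" by (cases x)
    have e: "cmod (exp (of_real t * small_div \<omega> \<Lambda> P Q) - 1) \<le> exp (L * degQ Q) + 1"
      using norm_exp_sd[OF t L, of \<omega> P Q] norm_triangle_ineq4[of "exp (of_real t * small_div \<omega> \<Lambda> P Q)" 1]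
      by (simp del: norm_exp_eq_Re)
    have p: "\<rho>1 ^ degQ Q * (exp (L * degQ Q) + 1) \<le> 2 * \<rho>0 ^ degQ Q"
    proof -
      have "\<rho>1 ^ degQ Q * exp (L * degQ Q) = \<rho>0 ^ degQ Q"
        by (simp add: \<rho>1_def power_divide exp_of_nat_mult[symmetric] mult.commute)
      moreover have "\<rho>1 ^ degQ Q \<le> \<rho>0 ^ degQ Q" using \<rho>1 by (intro power_mono) auto
      ultimately show ?thesis by (simp add: distrib_left)
    qed
    have "wt r0 \<rho>1 \<delta> x = cmod (a P Q) * exp (r0 * absP P) * (\<rho>1 ^ degQ Q * cmod (exp (of_real t * small_div \<omega> \<Lambda> P Q) - 1))"
      by (simp add: x wt_def \<delta>_def norm_mult mult_ac)
    also have "\<dots> \<le> cmod (a P Q) * exp (r0 * absP P) * (\<rho>1 ^ degQ Q * (exp (L * degQ Q) + 1))"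
      using e \<rho>1 by (intro mult_left_mono) auto
    also have "\<dots> \<le> cmod (a P Q) * exp (r0 * absP P) * (2 * \<rho>0 ^ degQ Q)"
      using p by (intro mult_left_mono) auto
    also have "\<dots> = 2 * wt r0 \<rho>0 a x" by (simp add: x wt_def mult_ac)
    finally show ?thesis .
  qed
  have wsa: "wt r0 \<rho>0 a summable_on UNIV" using an by (simp add: analytic_wt)
  have ws2: "(\<lambda>x. 2 * wt r0 \<rho>0 a x) summable_on UNIV" using summable_on_cmult_right[OF wsa] by simp
  have wsd: "wt r0 \<rho>1 \<delta> summable_on UNIV"
  proof (rule summable_on_comparison_test[OF ws2])
    fix x show "wt r0 \<rho>1 \<delta> x \<le> 2 * wt r0 \<rho>0 a x" by (rule wle)
    show "0 \<le> wt r0 \<rho>1 \<delta> x" using \<rho>1 by (auto simp: wt_def split: prod.splits)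
  qed
  have and_: "analytic_fts r0 \<rho>1 \<delta>" using wsd r00 \<rho>1 by (simp add: analytic_wt)
  have Kd: "Kw r0 \<rho>1 \<delta> \<le> 2 * Kw r0 \<rho>0 a"
  proof -
    have "Kw r0 \<rho>1 \<delta> \<le> infsum (\<lambda>x. 2 * wt r0 \<rho>0 a x) UNIV"
      unfolding Kw_def by (rule infsum_mono[OF wsd ws2 wle])
    also have "\<dots> = 2 * Kw r0 \<rho>0 a" unfolding Kw_def by (rule infsum_cmult_right') 
    finally show ?thesis .
  qed
  have ordd: "has_order m \<delta>" unfolding has_order_def \<delta>_def using IHa by fastforce
  have Y1: "\<forall>j. cmod (Y j) \<le> \<rho>1" using Y s by (auto simp: \<rho>1_def intro: order_trans)
  have Y0: "\<forall>j. cmod (Y j) \<le> \<rho>0" using Y1 \<rho>1 by (auto intro: order_trans)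
  note hsd = analytic_has_sum[OF and_ X Y1]
  have Yf: "\<forall>j. cmod (flowY \<Lambda> t Y j) \<le> \<rho>0"
  proof
    fix j
    have "cmod (flowY \<Lambda> t Y j) \<le> exp L * s" using flowY_norm[OF t L, of Y j s] Y s by auto
    also have "\<dots> \<le> \<rho>0" using s by (simp add: field_simps)
    finally show "cmod (flowY \<Lambda> t Y j) \<le> \<rho>0" .
  qed
  have Xf: "\<forall>l. \<bar>Im (flowX \<omega> t X l)\<bar> \<le> r0" using X by (simp add: flow_Im)
  note h1 = has_sum_flow[OF analytic_has_sum[OF an Xf Yf]]
  note h2 = analytic_has_sum[OF an X Y0]
  have h3: "((\<lambda>x. (\<lambda>(P, Q). (a P Q * exp (of_real t * small_div \<omega> \<Lambda> P Q)) * mono_term P Q X Y) x - (\<lambda>(P, Q). a P Q * mono_term P Q X Y) x)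
      has_sum (eval_fts a (flowX \<omega> t X) (flowY \<Lambda> t Y) - eval_fts a X Y)) UNIV"
    by (rule has_sum_diff'[OF h1 h2])
  have "eval_fts \<delta> X Y = eval_fts a (flowX \<omega> t X) (flowY \<Lambda> t Y) - eval_fts a X Y"
  proof -
    have "(\<lambda>(P, Q). \<delta> P Q * mono_term P Q X Y) = (\<lambda>x. (\<lambda>(P, Q). (a P Q * exp (of_real t * small_div \<omega> \<Lambda> P Q)) * mono_term P Q X Y) x - (\<lambda>(P, Q). a P Q * mono_term P Q X Y) x)"
      by (auto simp: \<delta>_def fun_eq_iff algebra_simps)
    then show ?thesis using has_sum_unique[OF hsd] h3 by simp
  qed
  moreover have "cmod (eval_fts \<delta> X Y) \<le> Kw r0 \<rho>1 \<delta> * (s / \<rho>1) ^ m"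
    by (rule analytic_order_bound[OF and_ ordd X Y s(1)]) (use s in \<open>simp add: \<rho>1_def\<close>)
  moreover have "Kw r0 \<rho>1 \<delta> * (s / \<rho>1) ^ m \<le> 2 * Kw r0 \<rho>0 a * (s * exp L / \<rho>0) ^ m"
  proof -
    have eq: "s / \<rho>1 = s * exp L / \<rho>0" by (simp add: \<rho>1_def)
    show ?thesis unfolding eq by (rule mult_right_mono[OF Kd]) (use s r00 in auto)
  qed
  ultimately show ?thesis by (metis order_trans)
qed


lemma resonant_twist:
  assumes an: "analytic_fts r \<rho> A" and res: "\<And>P Q. A P Q \<noteq> 0 \<Longrightarrow> small_div \<omega> \<Lambda> P Q = lam"
    and X: "\<forall>l. \<bar>Im (X l)\<bar> \<le> r" and Y: "\<forall>j. cmod (Y j) \<le> \<rho>" and Yf: "\<forall>j. cmod (flowY \<Lambda> t Y j) \<le> \<rho>"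
  shows "eval_fts A (flowX \<omega> t X) (flowY \<Lambda> t Y) = exp (of_real t * lam) * eval_fts A X Y"
proof -
  have Xf: "\<forall>l. \<bar>Im (flowX \<omega> t X l)\<bar> \<le> r" using X by (simp add: flow_Im)
  note h1 = has_sum_flow[OF analytic_has_sum[OF an Xf Yf]]
  have "(\<lambda>(P, Q). (A P Q * exp (of_real t * small_div \<omega> \<Lambda> P Q)) * mono_term P Q X Y)
      = (\<lambda>x. exp (of_real t * lam) * (\<lambda>(P, Q). A P Q * mono_term P Q X Y) x)"
    using res by (fastforce simp: fun_eq_iff)
  with h1 have h1': "((\<lambda>x. exp (of_real t * lam) * (\<lambda>(P, Q). A P Q * mono_term P Q X Y) x) has_sum eval_fts A (flowX \<omega> t X) (flowY \<Lambda> t Y)) UNIV"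
    by simp
  have h2: "((\<lambda>x. exp (of_real t * lam) * (\<lambda>(P, Q). A P Q * mono_term P Q X Y) x) has_sum exp (of_real t * lam) * eval_fts A X Y) UNIV"
    by (rule has_sum_cmult_right[OF analytic_has_sum[OF an X Y]])
  show ?thesis using has_sum_unique[OF h1' h2] .
qed

lemma mono_periodic:
  assumes "\<forall>l. \<exists>k::int. X' l = X l + 2 * of_real pi * of_int k"
  shows "mono_term P Q X' Y = mono_term P Q X Y"
proof -
  obtain k where k: "\<And>l. X' l = X l + 2 * of_real pi * of_int (k l)" using assms by metis
  have "exp (\<i> * (\<Sum>l\<in>UNIV. of_int (P l) * X' l)) = exp (\<i> * (\<Sum>l\<in>UNIV. of_int (P l) * X l)) * exp (\<i> * (of_int (\<Sum>l\<in>UNIV. P l * k l) * (of_real pi * 2)))"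
    by (simp add: k distrib_left sum.distrib exp_add[symmetric] sum_distrib_left algebra_simps)
  also have "exp (\<i> * (of_int (\<Sum>l\<in>UNIV. P l * k l) * (of_real pi * 2))) = 1" by (rule exp_2pi_1_int)
  finally show ?thesis by (simp add: mono_term_def)
qed

lemma eval_periodic:
  assumes "\<forall>l. \<exists>k::int. X' l = X l + 2 * of_real pi * of_int k"
  shows "eval_fts a X' Y = eval_fts a X Y"
proof -
  have "(\<lambda>(P, Q). a P Q * mono_term P Q X' Y) = (\<lambda>(P, Q). a P Q * mono_term P Q X Y)"
    by (auto simp: fun_eq_iff intro: mono_periodic[OF assms])
  then show ?thesis unfolding eval_fts_def by simp
qed

lemma analytic_lipX:
  assumes an: "analytic_fts r \<rho> a" and rr: "r' < r"
    and X1: "\<forall>l. \<bar>Im (X1 l)\<bar> \<le> r'" and X2: "\<forall>l. \<bar>Im (X2 l)\<bar> \<le> r'" and Y: "\<forall>j. cmod (Y j) \<le> \<rho>"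
    and eX: "\<forall>l. cmod (X1 l - X2 l) \<le> eX"
  shows "cmod (eval_fts a X1 Y - eval_fts a X2 Y) \<le> Kw r \<rho> a / (r - r') * eX"
proof -
  have rho0: "0 < \<rho>" using an by (simp add: analytic_fts_def)
  have eX0: "0 \<le> eX" using eX[rule_format, of undefined] norm_ge_zero order_trans by blast
  have X1r: "\<forall>l. \<bar>Im (X1 l)\<bar> \<le> r" and X2r: "\<forall>l. \<bar>Im (X2 l)\<bar> \<le> r" using X1 X2 rr by (meson less_imp_le order_trans)+
  note h1 = analytic_has_sum[OF an X1r Y]
  note h2 = analytic_has_sum[OF an X2r Y]
  note hd = has_sum_diff'[OF h1 h2]
  have ws: "(wt r \<rho> a has_sum Kw r \<rho> a) UNIV" using an by (simp add: analytic_wt Kw_def)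
  have ws': "((\<lambda>x. wt r \<rho> a x * (eX / (r - r'))) has_sum Kw r \<rho> a * (eX / (r - r'))) UNIV" by (rule has_sum_cmult_left[OF ws])
  have "cmod (eval_fts a X1 Y - eval_fts a X2 Y) \<le> Kw r \<rho> a * (eX / (r - r'))"
  proof (rule norm_infsum_le[OF hd ws'])
    fix x :: "('a \<Rightarrow> int) \<times> ('b \<Rightarrow> nat)"
    obtain P Q where x: "x = (P, Q)" by (cases x)
    note md = mono_term_diff_bound[OF X1 X2 rho0 Y Y eX, of 0 P Q]
    have e: "exp (r' * absP P) * absP P \<le> exp (r * absP P) / (r - r')"
      using x_exp_le[of "r - r'" "absP P" r'] rr absP_nonneg[of P] by (simp add: mult.commute)
    have "cmod (a P Q * mono_term P Q X1 Y - a P Q * mono_term P Q X2 Y) = cmod (a P Q) * cmod (mono_term P Q X1 Y - mono_term P Q X2 Y)"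
      by (simp add: right_diff_distrib[symmetric] norm_mult)
    also have "\<dots> \<le> cmod (a P Q) * ((exp (r' * absP P) * absP P) * eX * \<rho> ^ degQ Q)"
      using md by (intro mult_left_mono) (auto simp: mult_ac)
    also have "\<dots> \<le> cmod (a P Q) * ((exp (r * absP P) / (r - r')) * eX * \<rho> ^ degQ Q)"
      using e eX0 rho0 by (intro mult_left_mono mult_right_mono) auto
    also have "\<dots> = wt r \<rho> a (P, Q) * (eX / (r - r'))" by (simp add: wt_def)
    finally show "norm ((\<lambda>(P, Q). a P Q * mono_term P Q X1 Y) x - (\<lambda>(P, Q). a P Q * mono_term P Q X2 Y) x) \<le> wt r \<rho> a x * (eX / (r - r'))"
      by (simp add: x)
  qed
  then show ?thesis by simp
qed

lemma analytic_Ydiff: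
  assumes an: "analytic_fts r \<rho> a" and X: "\<forall>l. \<bar>Im (X l)\<bar> \<le> r"
    and Y: "\<forall>j. cmod (Y j) \<le> s" and s: "0 \<le> s" "s \<le> \<rho>"
  shows "cmod (eval_fts a X Y - eval_fts a X (\<lambda>_. 0)) \<le> Kw r \<rho> a * (s / \<rho>)"
proof -
  have rho0: "0 < \<rho>" using an by (simp add: analytic_fts_def)
  have Y': "\<forall>j. cmod (Y j) \<le> \<rho>" using Y s by (meson order_trans)
  have Z: "\<forall>j. cmod ((\<lambda>_. 0::complex) j) \<le> \<rho>" using rho0 by simp
  note hd = has_sum_diff'[OF analytic_has_sum[OF an X Y'] analytic_has_sum[OF an X Z]]
  have ws: "(wt r \<rho> a has_sum Kw r \<rho> a) UNIV" using an by (simp add: analytic_wt Kw_def)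
  have ws': "((\<lambda>x. wt r \<rho> a x * (s / \<rho>)) has_sum Kw r \<rho> a * (s / \<rho>)) UNIV" by (rule has_sum_cmult_left[OF ws])
  show ?thesis
  proof (rule norm_infsum_le[OF hd ws'])
    fix x :: "('a \<Rightarrow> int) \<times> ('b \<Rightarrow> nat)"
    obtain P Q where x: "x = (P, Q)" by (cases x)
    show "norm ((\<lambda>(P, Q). a P Q * mono_term P Q X Y) x - (\<lambda>(P, Q). a P Q * mono_term P Q X (\<lambda>_. 0)) x) \<le> wt r \<rho> a x * (s / \<rho>)"
    proof (cases "degQ Q = 0")
      case True
      then have "Q = (\<lambda>_. 0)" by (auto simp: degQ_def fun_eq_iff)
      then show ?thesis using rho0 s by (simp add: x mono_term_def wt_def)
    next
      case False
      have z: "mono_term P Q X (\<lambda>_. 0) = 0"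
      proof -
        obtain j where "Q j \<noteq> 0" using False by (auto simp: degQ_def)
        then show ?thesis by (auto simp: mono_term_def prod_zero_iff)
      qed
      have sq: "s ^ degQ Q \<le> \<rho> ^ degQ Q * (s / \<rho>)"
      proof -
        have "s ^ degQ Q = \<rho> ^ degQ Q * (s / \<rho>) ^ degQ Q" using rho0 by (simp add: power_divide)
        also have "\<dots> \<le> \<rho> ^ degQ Q * (s / \<rho>) ^ 1"
          using False rho0 s by (intro mult_left_mono power_decreasing) auto
        finally show ?thesis by simp
      qed
      have "cmod (a P Q * mono_term P Q X Y) \<le> cmod (a P Q) * (exp (r * absP P) * s ^ degQ Q)"
        unfolding norm_mult by (intro mult_left_mono mono_term_bound X Y) auto
      also have "\<dots> \<le> cmod (a P Q) * (exp (r * absP P) * (\<rho> ^ degQ Q * (s / \<rho>)))"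
        by (intro mult_left_mono sq) auto
      finally show ?thesis by (simp add: x z wt_def mult_ac)
    qed
  qed
qed


lemma margin_one:
  assumes an: "analytic_fts r0 \<rho>0 a"
    and inside: "\<forall>x::'d::finite \<Rightarrow> real. \<bar>Im (eval_fts a (\<lambda>m. of_real (x m)) ((\<lambda>_. 0) :: 'n::finite \<Rightarrow> complex))\<bar> < rV"
  shows "\<exists>R. R < rV \<and> (\<forall>x::'d \<Rightarrow> real. \<bar>Im (eval_fts a (\<lambda>m. of_real (x m)) ((\<lambda>_. 0) :: 'n \<Rightarrow> complex))\<bar> \<le> R)"
proof -
  have r00: "0 < r0" "0 < \<rho>0" using an by (auto simp: analytic_fts_def)
  define F :: "real^'d \<Rightarrow> real" where "F v = \<bar>Im (eval_fts a (\<lambda>m. of_real (v $ m)) ((\<lambda>_. 0) :: 'n \<Rightarrow> complex))\<bar>" for v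
  define K where "K = Kw r0 \<rho>0 a / (r0 - 0)"
  have K0: "0 \<le> K" using Kw_nonneg[OF an] r00 by (simp add: K_def)
  have lip: "K-lipschitz_on UNIV F"
  proof (rule lipschitz_onI)
    fix v w :: "real^'d"
    have "dist (F v) (F w) \<le> cmod (eval_fts a (\<lambda>m. of_real (v $ m)) ((\<lambda>_. 0) :: 'n \<Rightarrow> complex) - eval_fts a (\<lambda>m. of_real (w $ m)) (\<lambda>_. 0))"
    proof -
      have "\<bar>\<bar>Im (eval_fts a (\<lambda>m. of_real (v $ m)) ((\<lambda>_. 0) :: 'n \<Rightarrow> complex))\<bar> - \<bar>Im (eval_fts a (\<lambda>m. of_real (w $ m)) ((\<lambda>_. 0) :: 'n \<Rightarrow> complex))\<bar>\<bar>
        \<le> \<bar>Im (eval_fts a (\<lambda>m. of_real (v $ m)) ((\<lambda>_. 0) :: 'n \<Rightarrow> complex) - eval_fts a (\<lambda>m. of_real (w $ m)) (\<lambda>_. 0))\<bar>"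
        by simp
      also have "\<dots> \<le> cmod (eval_fts a (\<lambda>m. of_real (v $ m)) ((\<lambda>_. 0) :: 'n \<Rightarrow> complex) - eval_fts a (\<lambda>m. of_real (w $ m)) (\<lambda>_. 0))"
        by (rule abs_Im_le_cmod)
      finally show ?thesis by (simp add: F_def dist_real_def)
    qed
    also have "\<dots> \<le> K * dist v w"
      unfolding K_def
    proof (rule analytic_lipX[OF an])
      show "\<forall>m. cmod (complex_of_real (v $ m) - complex_of_real (w $ m)) \<le> dist v w"
        using component_le_norm_cart[of "v - w"] by (simp add: dist_norm flip: of_real_diff)
    qed (use r00 in auto)
    finally show "dist (F v) (F w) \<le> K * dist v w" .
  qed (rule K0)
  have cont: "continuous_on UNIV F" by (rule lipschitz_on_continuous_on[OF lip])
  define S :: "(real^'d) set" where "S = cbox 0 (\<chi> m. 2 * pi)"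
  have cS: "compact S" by (simp add: S_def)
  have "0 \<in> S" by (simp add: S_def mem_box_cart)
  then have neS: "S \<noteq> {}" by blast
  obtain v0 where v0: "v0 \<in> S" "\<And>v. v \<in> S \<Longrightarrow> F v \<le> F v0"
    using continuous_attains_sup[OF cS neS continuous_on_subset[OF cont]] by blast
  have Fv0: "F v0 < rV" using inside[rule_format, of "\<lambda>m. v0 $ m"] by (simp add: F_def)
  have "\<bar>Im (eval_fts a (\<lambda>m. of_real (x m)) ((\<lambda>_. 0) :: 'n \<Rightarrow> complex))\<bar> \<le> F v0" for x :: "'d \<Rightarrow> real"
  proof -
    define v :: "real^'d" where "v = (\<chi> m. x m - 2 * pi * of_int \<lfloor>x m / (2 * pi)\<rfloor>)"
    have vS: "v \<in> S"
    proof -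
      have "0 \<le> x m - 2 * pi * of_int \<lfloor>x m / (2 * pi)\<rfloor> \<and> x m - 2 * pi * of_int \<lfloor>x m / (2 * pi)\<rfloor> \<le> 2 * pi" for m
      proof -
        have a: "of_int \<lfloor>x m / (2 * pi)\<rfloor> \<le> x m / (2 * pi)" by (rule of_int_floor_le)
        have b: "x m / (2 * pi) < of_int \<lfloor>x m / (2 * pi)\<rfloor> + 1" by (rule real_of_int_floor_add_one_gt)
        have p: "0 < 2 * pi" by simp
        from mult_left_mono[OF a, of "2 * pi"] p have "2 * pi * of_int \<lfloor>x m / (2 * pi)\<rfloor> \<le> x m" by simp
        moreover from b p have "x m < 2 * pi * (of_int \<lfloor>x m / (2 * pi)\<rfloor> + 1)" by (simp add: field_simps)
        ultimately show ?thesis by (simp add: algebra_simps)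
      qed
      then show ?thesis by (simp add: S_def mem_box_cart v_def)
    qed
    have "eval_fts a (\<lambda>m. of_real (x m)) ((\<lambda>_. 0) :: 'n \<Rightarrow> complex) = eval_fts a (\<lambda>m. of_real (v $ m)) (\<lambda>_. 0)"
    proof (rule eval_periodic, rule allI)
      fix m
      show "\<exists>k::int. complex_of_real (x m) = complex_of_real (v $ m) + 2 * complex_of_real pi * of_int k"
        by (rule exI[of _ "\<lfloor>x m / (2 * pi)\<rfloor>"]) (simp add: v_def)
    qed
    then have "\<bar>Im (eval_fts a (\<lambda>m. of_real (x m)) ((\<lambda>_. 0) :: 'n \<Rightarrow> complex))\<bar> = F v" by (simp add: F_def)
    also have "\<dots> \<le> F v0" using v0(2)[OF vS] .
    finally show ?thesis .
  qed
  then show ?thesis using Fv0 by blast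
qed

lemma margin:
  fixes \<Phi> :: "('d::finite, 'n::finite) fvf"
  assumes an: "\<forall>a. analytic_fts r0 \<rho>0 (\<Phi> a)"
    and inside: "\<forall>x::'d \<Rightarrow> real. \<forall>l. \<bar>Im (eval_fts (\<Phi> (Inl l)) (\<lambda>m. of_real (x m)) ((\<lambda>_. 0) :: 'n \<Rightarrow> complex))\<bar> < rV"
  shows "\<exists>r1 \<delta>. r1 < rV \<and> 0 < \<delta> \<and> (\<forall>X Y. (\<forall>l. Im (X l) = 0) \<longrightarrow> (\<forall>j. cmod (Y j) \<le> \<delta>) \<longrightarrow> (\<forall>l. \<bar>Im (eval_fts (\<Phi> (Inl l)) X Y)\<bar> \<le> r1))"
proof -
  have r00: "0 < r0" "0 < \<rho>0" using an by (auto simp: analytic_fts_def)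
  have "\<forall>l. \<exists>R. R < rV \<and> (\<forall>x::'d \<Rightarrow> real. \<bar>Im (eval_fts (\<Phi> (Inl l)) (\<lambda>m. of_real (x m)) ((\<lambda>_. 0) :: 'n \<Rightarrow> complex))\<bar> \<le> R)"
    using margin_one an inside by blast
  then obtain Rf where Rf: "\<And>l. Rf l < rV" "\<And>l x. \<bar>Im (eval_fts (\<Phi> (Inl l)) (\<lambda>m. of_real (x m)) ((\<lambda>_. 0) :: 'n \<Rightarrow> complex))\<bar> \<le> Rf l"
    by metis
  define R where "R = Max (range Rf)"
  have RR: "Rf l \<le> R" for l by (simp add: R_def)
  have RV: "R < rV" using Max_in[of "range Rf"] Rf(1) by (auto simp: R_def)
  define K where "K = (\<Sum>l\<in>UNIV. Kw r0 \<rho>0 (\<Phi> (Inl l))) + 1"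
  have Kn: "0 \<le> Kw r0 \<rho>0 (\<Phi> (Inl l))" for l using Kw_nonneg an by blast
  have Kl0: "Kw r0 \<rho>0 (\<Phi> (Inl l)) \<le> (\<Sum>l\<in>UNIV. Kw r0 \<rho>0 (\<Phi> (Inl l)))" for l
    by (rule member_le_sum) (auto intro: Kn)
  have Kl: "Kw r0 \<rho>0 (\<Phi> (Inl l)) \<le> K - 1" for l using Kl0[of l] by (simp add: K_def)
  have "0 \<le> (\<Sum>l\<in>UNIV. Kw r0 \<rho>0 (\<Phi> (Inl l)))" by (rule sum_nonneg) (rule Kn)
  then have K1: "1 \<le> K" by (simp add: K_def)
  define \<delta> where "\<delta> = min \<rho>0 (\<rho>0 * (rV - R) / (2 * K))"
  have \<delta>0: "0 < \<delta>" using r00 RV K1 by (simp add: \<delta>_def)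
  have bound: "\<bar>Im (eval_fts (\<Phi> (Inl l)) X Y)\<bar> \<le> (R + rV) / 2"
    if X: "\<forall>l. Im (X l) = 0" and Y: "\<forall>j. cmod (Y j) \<le> \<delta>" for X Y l
  proof -
    define x where "x = (\<lambda>m. Re (X m))"
    have Xx: "X = (\<lambda>m. of_real (x m))" using X by (auto simp: x_def fun_eq_iff complex_eq_iff)
    have X': "\<forall>m. \<bar>Im (X m)\<bar> \<le> r0" using X r00 by simp
    have d: "cmod (eval_fts (\<Phi> (Inl l)) X Y - eval_fts (\<Phi> (Inl l)) X (\<lambda>_. 0)) \<le> Kw r0 \<rho>0 (\<Phi> (Inl l)) * (\<delta> / \<rho>0)"
      by (rule analytic_Ydiff[OF an[rule_format] X' Y]) (use \<delta>0 in \<open>auto simp: \<delta>_def\<close>)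
    have "Kw r0 \<rho>0 (\<Phi> (Inl l)) * (\<delta> / \<rho>0) \<le> K * (\<delta> / \<rho>0)"
      using Kl[of l] \<delta>0 r00 by (intro mult_right_mono) auto
    also have "\<dots> \<le> K * ((\<rho>0 * (rV - R) / (2 * K)) / \<rho>0)"
      using K1 r00 by (intro mult_left_mono divide_right_mono) (auto simp: \<delta>_def)
    also have "\<dots> = (rV - R) / 2" using K1 r00 by (simp add: field_simps)
    finally have d2: "cmod (eval_fts (\<Phi> (Inl l)) X Y - eval_fts (\<Phi> (Inl l)) X (\<lambda>_. 0)) \<le> (rV - R) / 2"
      using d by linarith
    have "\<bar>Im (eval_fts (\<Phi> (Inl l)) X Y)\<bar> \<le> \<bar>Im (eval_fts (\<Phi> (Inl l)) X (\<lambda>_. 0))\<bar> + \<bar>Im (eval_fts (\<Phi> (Inl l)) X Y - eval_fts (\<Phi> (Inl l)) X (\<lambda>_. 0))\<bar>"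
      by simp
    also have "\<dots> \<le> R + (rV - R) / 2"
      using Rf(2)[of l x] RR[of l] abs_Im_le_cmod[of "eval_fts (\<Phi> (Inl l)) X Y - eval_fts (\<Phi> (Inl l)) X (\<lambda>_. 0)"] d2
      unfolding Xx by linarith
    finally show ?thesis by (simp add: field_simps)
  qed
  show ?thesis
    by (rule exI[of _ "(R + rV) / 2"], rule exI[of _ \<delta>]) (use RV \<delta>0 bound in auto)
qed


lemma exp_small_ne1:
  fixes \<mu> :: complex
  assumes "\<mu> \<noteq> 0"
  defines "t \<equiv> min 1 (pi / cmod \<mu>)"
  shows "0 < t" "t \<le> 1" "exp (of_real t * \<mu>) \<noteq> 1"
proof -
  show t0: "0 < t" using assms by (simp add: t_def)
  show "t \<le> 1" by (simp add: t_def)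
  have tm: "t * cmod \<mu> \<le> pi"
  proof -
    have "t \<le> pi / cmod \<mu>" by (simp add: t_def)
    then have "t * cmod \<mu> \<le> (pi / cmod \<mu>) * cmod \<mu>" by (rule mult_right_mono) simp
    then show ?thesis using assms by simp
  qed
  show "exp (of_real t * \<mu>) \<noteq> 1"
  proof
    assume "exp (of_real t * \<mu>) = 1"
    then obtain n where re: "Re (of_real t * \<mu>) = 0" and im: "Im (of_real t * \<mu>) = real_of_int (2 * n) * pi"
      unfolding exp_eq_1 by blast
    have "\<bar>Im (of_real t * \<mu>)\<bar> \<le> cmod (of_real t * \<mu>)" by (rule abs_Im_le_cmod)
    also have "\<dots> = t * cmod \<mu>" using t0 by (simp add: norm_mult)
    also have "\<dots> \<le> pi" by (rule tm)
    finally have h: "\<bar>Im (of_real t * \<mu>)\<bar> \<le> pi" .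
    have "\<bar>real_of_int (2 * n)\<bar> * pi = \<bar>Im (of_real t * \<mu>)\<bar>" unfolding im by (simp add: abs_mult)
    with h have "\<bar>real_of_int (2 * n)\<bar> * pi \<le> 1 * pi" by simp
    then have "\<bar>real_of_int (2 * n)\<bar> \<le> 1" using pi_gt_zero mult_le_cancel_right_pos by blast
    then have "n = 0" by linarith
    then have "of_real t * \<mu> = 0" using re im by (simp add: complex_eq_iff)
    then show False using t0 assms by simp
  qed
qed

lemma core:
  fixes \<Phi> :: "('d::finite, 'n::finite) fvf" and A B cW :: "('d, 'n) fts"
    and \<omega> :: "'d \<Rightarrow> real" and \<Lambda> :: "'n \<Rightarrow> complex"
  assumes an\<Phi>: "\<forall>a. analytic_fts r0 \<rho>0 (\<Phi> a)"
    and anA: "analytic_fts rV \<rho>V A" and anB: "analytic_fts rV \<rho>V B"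
    and resA: "\<And>P Q. A P Q \<noteq> 0 \<Longrightarrow> small_div \<omega> \<Lambda> P Q = lam"
    and ordA: "has_order ko A" and ko: "1 \<le> ko" and ordB: "has_order M B"
    and mar: "r1 < rV" "0 < \<delta>1"
      "\<And>X Y l. (\<forall>l. Im (X l) = 0) \<Longrightarrow> (\<forall>j. cmod (Y j) \<le> \<delta>1) \<Longrightarrow> \<bar>Im (eval_fts (\<Phi> (Inl l)) X Y)\<bar> \<le> r1"
    and rho: "0 < \<rho>"
    and rep: "\<And>X Y. (\<forall>l. Im (X l) = 0) \<Longrightarrow> (\<forall>j. cmod (Y j) < \<rho>) \<Longrightarrow>
       ((\<lambda>(P, Q). cW P Q * mono_term P Q X Y) has_sum
         (eval_fts A (map_X \<Phi> X Y) (map_Y \<Phi> X Y) + eval_fts B (map_X \<Phi> X Y) (map_Y \<Phi> X Y))) UNIV"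
    and IH: "\<And>a P Q. degQ Q < m \<Longrightarrow> \<Phi> a P Q \<noteq> 0 \<Longrightarrow> small_div \<omega> \<Lambda> P Q = 0"
    and deg: "degQ Q < M" "degQ Q < m + ko"
    and sdn: "small_div \<omega> \<Lambda> P Q \<noteq> lam"
  shows "cW P Q = 0"
proof -
  define G where "G X Y = eval_fts A (map_X \<Phi> X Y) (map_Y \<Phi> X Y) + eval_fts B (map_X \<Phi> X Y) (map_Y \<Phi> X Y)" for X Y
  define \<mu> where "\<mu> = small_div \<omega> \<Lambda> P Q - lam"
  have \<mu>0: "\<mu> \<noteq> 0" using sdn by (simp add: \<mu>_def)
  define t where "t = min 1 (pi / cmod \<mu>)"
  have t0: "0 < t" and t1: "t \<le> 1" and tne: "exp (of_real t * \<mu>) \<noteq> 1"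
    using exp_small_ne1[OF \<mu>0] by (simp_all add: t_def)
  define L where "L = (\<Sum>j\<in>UNIV. cmod (\<Lambda> j))"
  have L: "\<forall>j. cmod (\<Lambda> j) \<le> L" unfolding L_def by (auto intro: member_le_sum)
  have L0: "0 \<le> L" by (simp add: L_def sum_nonneg)
  define EL where "EL = exp L"
  have EL1: "1 \<le> EL" using L0 by (simp add: EL_def)
  define K\<Phi> where "K\<Phi> = (\<Sum>a\<in>UNIV. Kw r0 \<rho>0 (\<Phi> a))"
  have Kn: "0 \<le> Kw r0 \<rho>0 (\<Phi> a)" for a using Kw_nonneg an\<Phi> by blast
  have KK: "Kw r0 \<rho>0 (\<Phi> a) \<le> K\<Phi>" for a unfolding K\<Phi>_def by (rule member_le_sum) (auto intro: Kn)
  have K\<Phi>0: "0 \<le> K\<Phi>" using KK[of undefined] Kn[of undefined] by linarith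
  have r00: "0 < r0" "0 < \<rho>0" using an\<Phi> by (auto simp: analytic_fts_def)
  have rV0: "0 < rV" "0 < \<rho>V" using anA by (auto simp: analytic_fts_def)
  define c3 where "c3 = EL * (K\<Phi> + 1)"
  have c30: "0 < c3" using EL1 K\<Phi>0 by (simp add: c3_def)
  define C\<phi> where "C\<phi> = 2 * K\<Phi> * (EL / \<rho>0) ^ m"
  have C\<phi>0: "0 \<le> C\<phi>" using K\<Phi>0 EL1 r00 by (simp add: C\<phi>_def)
  define \<epsilon>0 where "\<epsilon>0 = min (min 1 (\<rho>0 / EL)) (min (\<delta>1 / EL) (min (\<rho> / (2 * EL)) (\<rho>V / (2 * c3))))"
  have \<epsilon>00: "0 < \<epsilon>0" using r00 EL1 mar rho rV0 c30 by (simp add: \<epsilon>0_def)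
  define \<rho>' where "\<rho>' = \<rho>V / 2"
  have \<rho>': "0 < \<rho>'" "\<rho>' < \<rho>V" using rV0 by (auto simp: \<rho>'_def)
  define El where "El = cmod (exp (of_real t * lam))"
  define KA where "KA = Kw rV \<rho>V A"
  define KB where "KB = Kw rV \<rho>V B"
  have KA0: "0 \<le> KA" using Kw_nonneg[OF anA] by (simp add: KA_def)
  have KB0: "0 \<le> KB" using Kw_nonneg[OF anB] by (simp add: KB_def)
  define c1 where "c1 = 1 / ((rV - r1) * \<rho>' ^ ko)"
  define c2 where "c2 = 1 / ((1 - \<rho>' / \<rho>V) * \<rho>' ^ ko)"
  have c10: "0 \<le> c1" using mar \<rho>' by (simp add: c1_def)
  have c20: "0 \<le> c2" using \<rho>' by (simp add: c2_def \<rho>'_def)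
  define M' where "M' = min M (m + ko)"
  define C where "C = El * KA * (c1 * c3 ^ ko * C\<phi> + c2 * c3 ^ (ko - 1) * C\<phi>) + KB * (1 + El) * (c3 / \<rho>V) ^ M"
  have bound: "cmod (G (flowX \<omega> t X) (flowY \<Lambda> t Y) - exp (of_real t * lam) * G X Y) \<le> C * \<epsilon> ^ M'"
    if e: "0 < \<epsilon>" "\<epsilon> \<le> \<epsilon>0" and X: "\<forall>l. Im (X l) = 0" and Y: "\<forall>j. cmod (Y j) = \<epsilon>" for \<epsilon> X Y
  proof -
    have e1: "\<epsilon> \<le> 1" and e2: "\<epsilon> * EL \<le> \<rho>0" and e3: "\<epsilon> * EL \<le> \<delta>1" and e4: "\<epsilon> * EL \<le> \<rho> / 2"
      and e5: "c3 * \<epsilon> \<le> \<rho>'"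
      using e EL1 c30 by (auto simp: \<epsilon>0_def \<rho>'_def field_simps)
    define Xt where "Xt = flowX \<omega> t X"
    define Yt where "Yt = flowY \<Lambda> t Y"
    have Xt: "\<forall>l. Im (Xt l) = 0" using X by (simp add: Xt_def flow_Im)
    have Yle: "\<forall>j. cmod (Y j) \<le> \<epsilon>" using Y by simp
    have Ytle: "\<forall>j. cmod (Yt j) \<le> \<epsilon> * EL"
      using flowY_norm[OF less_imp_le[OF t0] t1 L] Y e by (auto simp: Yt_def EL_def mult.commute)
    have Yle0: "\<forall>j. cmod (Y j) \<le> \<rho>0" and Ytle0: "\<forall>j. cmod (Yt j) \<le> \<rho>0"
    proof -
      have "\<epsilon> \<le> \<epsilon> * EL" using EL1 e by simp
      then show "\<forall>j. cmod (Y j) \<le> \<rho>0" "\<forall>j. cmod (Yt j) \<le> \<rho>0"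
        using Yle Ytle e2 by (meson order_trans)+
    qed
    have X0: "\<forall>l. \<bar>Im (X l)\<bar> \<le> r0" and Xt0: "\<forall>l. \<bar>Im (Xt l)\<bar> \<le> r0" using X Xt r00 by auto
    define ph where "ph a = eval_fts (\<Phi> a) X Y" for a
    define pht where "pht a = eval_fts (\<Phi> a) Xt Yt" for a
    have phb: "cmod (ph a) \<le> K\<Phi>" "cmod (pht a) \<le> K\<Phi>" for a
    proof -
      have o0: "has_order 0 (\<Phi> a)" by (simp add: has_order_def)
      have r0': "0 \<le> \<rho>0" using r00 by simp
      show "cmod (ph a) \<le> K\<Phi>" using analytic_order_bound[OF an\<Phi>[rule_format, of a] o0 X0 Yle0 r0' order_refl] KK[of a]
        by (simp add: ph_def)
      show "cmod (pht a) \<le> K\<Phi>" using analytic_order_bound[OF an\<Phi>[rule_format, of a] o0 Xt0 Ytle0 r0' order_refl] KK[of a]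
        by (simp add: pht_def)
    qed
    have phd: "cmod (pht a - ph a) \<le> C\<phi> * \<epsilon> ^ m" for a
    proof -
      have "cmod (pht a - ph a) \<le> 2 * Kw r0 \<rho>0 (\<Phi> a) * (\<epsilon> * exp L / \<rho>0) ^ m"
        unfolding pht_def ph_def Xt_def Yt_def
        by (rule twist_diff_bound[OF an\<Phi>[rule_format] IH less_imp_le[OF t0] t1 L X0 Yle])
           (use e e2 in \<open>auto simp: EL_def field_simps\<close>)
      also have "\<dots> \<le> 2 * K\<Phi> * (\<epsilon> * exp L / \<rho>0) ^ m"
        using KK[of a] e r00 by (intro mult_right_mono) auto
      also have "\<dots> = C\<phi> * \<epsilon> ^ m" by (simp add: C\<phi>_def EL_def power_mult_distrib power_divide field_simps)
      finally show ?thesis .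
    qed
    define U2X where "U2X = map_X \<Phi> X Y"
    define U2Y where "U2Y = map_Y \<Phi> X Y"
    define UtX where "UtX = map_X \<Phi> Xt Yt"
    define UtY where "UtY = map_Y \<Phi> Xt Yt"
    define U1X where "U1X = (\<lambda>l. X l + pht (Inl l))"
    define U1Y where "U1Y = (\<lambda>j. Y j * pht (Inr j))"
    have fl1: "flowX \<omega> t U1X = UtX" by (auto simp: flowX_def U1X_def UtX_def map_X_def Xt_def pht_def fun_eq_iff)
    have fl2: "flowY \<Lambda> t U1Y = UtY" by (auto simp: flowY_def U1Y_def UtY_def map_Y_def Yt_def pht_def fun_eq_iff)
    have s0: "0 < c3 * \<epsilon>" using c30 e by simp
    have Ys: "cmod (Y j * pht (Inr j)) \<le> c3 * \<epsilon>" "cmod (Y j * ph (Inr j)) \<le> c3 * \<epsilon>" "cmod (Yt j * pht (Inr j)) \<le> c3 * \<epsilon>" for j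
    proof -
      have c3e: "c3 * \<epsilon> = (\<epsilon> * EL) * (K\<Phi> + 1)" by (simp add: c3_def mult_ac)
      have a: "\<epsilon> * K\<Phi> \<le> c3 * \<epsilon>"
      proof -
        have "\<epsilon> \<le> \<epsilon> * EL" using EL1 e by simp
        then have "\<epsilon> * K\<Phi> \<le> (\<epsilon> * EL) * K\<Phi>" using K\<Phi>0 by (rule mult_right_mono)
        also have "\<dots> \<le> (\<epsilon> * EL) * (K\<Phi> + 1)" using e EL1 by (intro mult_left_mono) auto
        finally show ?thesis unfolding c3e .
      qed
      have b: "(\<epsilon> * EL) * K\<Phi> \<le> c3 * \<epsilon>" unfolding c3e using e EL1 by (intro mult_left_mono) auto
      have "cmod (Y j * pht (Inr j)) \<le> \<epsilon> * K\<Phi>" unfolding norm_mult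
        using Yle[rule_format, of j] phb(2)[of "Inr j"] e by (intro mult_mono) auto
      then show "cmod (Y j * pht (Inr j)) \<le> c3 * \<epsilon>" using a by linarith
      have "cmod (Y j * ph (Inr j)) \<le> \<epsilon> * K\<Phi>" unfolding norm_mult
        using Yle[rule_format, of j] phb(1)[of "Inr j"] e by (intro mult_mono) auto
      then show "cmod (Y j * ph (Inr j)) \<le> c3 * \<epsilon>" using a by linarith
      have "cmod (Yt j * pht (Inr j)) \<le> (\<epsilon> * EL) * K\<Phi>" unfolding norm_mult
        using Ytle[rule_format, of j] phb(2)[of "Inr j"] e EL1 by (intro mult_mono) auto
      then show "cmod (Yt j * pht (Inr j)) \<le> c3 * \<epsilon>" using b by linarith
    qed
    have U1Ys: "\<forall>j. cmod (U1Y j) \<le> c3 * \<epsilon>" using Ys by (simp add: U1Y_def)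
    have U2Ys: "\<forall>j. cmod (U2Y j) \<le> c3 * \<epsilon>" using Ys by (simp add: U2Y_def map_Y_def ph_def)
    have UtYs: "\<forall>j. cmod (UtY j) \<le> c3 * \<epsilon>" using Ys by (simp add: UtY_def map_Y_def pht_def)
    have U2X: "\<forall>l. \<bar>Im (U2X l)\<bar> \<le> r1"
    proof -
      have "\<epsilon> \<le> \<epsilon> * EL" using EL1 e by simp
      then have "\<forall>j. cmod (Y j) \<le> \<delta>1" using Yle e3 by (meson order_trans)
      then show ?thesis using mar(3)[OF X] by (simp add: U2X_def map_X_def X ph_def)
    qed
    have U1X: "\<forall>l. \<bar>Im (U1X l)\<bar> \<le> r1"
    proof -
      have "\<forall>j. cmod (Yt j) \<le> \<delta>1" using Ytle e3 by (meson order_trans)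
      then show ?thesis using mar(3)[OF Xt] by (simp add: U1X_def X pht_def)
    qed
    have UtX: "\<forall>l. \<bar>Im (UtX l)\<bar> \<le> r1"
      using U1X fl1 by (metis flow_Im)
    have sV: "c3 * \<epsilon> \<le> \<rho>V" using e5 \<rho>' by linarith
    have U2XV: "\<forall>l. \<bar>Im (U2X l)\<bar> \<le> rV" and U1XV: "\<forall>l. \<bar>Im (U1X l)\<bar> \<le> rV" and UtXV: "\<forall>l. \<bar>Im (UtX l)\<bar> \<le> rV"
      using U2X U1X UtX mar(1) by (auto intro: order_trans less_imp_le)
    have U2YV: "\<forall>j. cmod (U2Y j) \<le> \<rho>V" and U1YV: "\<forall>j. cmod (U1Y j) \<le> \<rho>V" and UtYV: "\<forall>j. cmod (UtY j) \<le> \<rho>V"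
      using U2Ys U1Ys UtYs sV by (auto intro: order_trans)
    have GX: "G X Y = eval_fts A U2X U2Y + eval_fts B U2X U2Y" by (simp add: G_def U2X_def U2Y_def)
    have GXt: "G Xt Yt = exp (of_real t * lam) * eval_fts A U1X U1Y + eval_fts B UtX UtY"
    proof -
      have "eval_fts A UtX UtY = exp (of_real t * lam) * eval_fts A U1X U1Y"
        using resonant_twist[OF anA resA U1XV U1YV, of t] fl1 fl2 UtYV by simp
      then show ?thesis by (simp add: G_def UtX_def UtY_def)
    qed
    have Adiff: "cmod (eval_fts A U1X U1Y - eval_fts A U2X U2Y) \<le> KA * ((c3 * \<epsilon>) ^ ko * (C\<phi> * \<epsilon> ^ m) / ((rV - r1) * \<rho>' ^ ko)
        + (c3 * \<epsilon>) ^ (ko - 1) * (\<epsilon> * (C\<phi> * \<epsilon> ^ m)) / ((1 - \<rho>' / \<rho>V) * \<rho>' ^ ko))"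
      unfolding KA_def
    proof (rule analytic_lipschitz[OF anA ordA ko mar(1) \<rho>'(2) s0 e5 U1X U2X U1Ys U2Ys])
      show "\<forall>l. cmod (U1X l - U2X l) \<le> C\<phi> * \<epsilon> ^ m"
        using phd by (simp add: U1X_def U2X_def map_X_def ph_def)
      show "\<forall>j. cmod (U1Y j - U2Y j) \<le> \<epsilon> * (C\<phi> * \<epsilon> ^ m)"
      proof
        fix j
        have "cmod (U1Y j - U2Y j) = cmod (Y j) * cmod (pht (Inr j) - ph (Inr j))"
          by (simp add: U1Y_def U2Y_def map_Y_def ph_def right_diff_distrib[symmetric] norm_mult)
        also have "\<dots> \<le> \<epsilon> * (C\<phi> * \<epsilon> ^ m)" using Yle phd e by (intro mult_mono) auto
        finally show "cmod (U1Y j - U2Y j) \<le> \<epsilon> * (C\<phi> * \<epsilon> ^ m)" .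
      qed
    qed
    have Bb: "cmod (eval_fts B U X') \<le> KB * (c3 * \<epsilon> / \<rho>V) ^ M"
      if "\<forall>l. \<bar>Im (U l)\<bar> \<le> rV" "\<forall>j. cmod (X' j) \<le> c3 * \<epsilon>" for U X'
      unfolding KB_def by (rule analytic_order_bound[OF anB ordB that]) (use s0 sV in auto)
    have D: "G Xt Yt - exp (of_real t * lam) * G X Y
       = exp (of_real t * lam) * (eval_fts A U1X U1Y - eval_fts A U2X U2Y) + eval_fts B UtX UtY - exp (of_real t * lam) * eval_fts B U2X U2Y"
      by (simp add: GX GXt algebra_simps)
    have "cmod (G Xt Yt - exp (of_real t * lam) * G X Y)
      \<le> El * cmod (eval_fts A U1X U1Y - eval_fts A U2X U2Y) + cmod (eval_fts B UtX UtY) + El * cmod (eval_fts B U2X U2Y)"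
    proof -
      have tri: "cmod (x + y - z) \<le> cmod x + cmod y + cmod z" for x y z :: complex
        using norm_triangle_ineq4[of "x + y" z] norm_triangle_ineq[of x y] by linarith
      show ?thesis unfolding D El_def
        using tri[of "exp (of_real t * lam) * (eval_fts A U1X U1Y - eval_fts A U2X U2Y)" "eval_fts B UtX UtY" "exp (of_real t * lam) * eval_fts B U2X U2Y"]
        by (simp add: norm_mult)
    qed
    also have "\<dots> \<le> El * (KA * ((c3 * \<epsilon>) ^ ko * (C\<phi> * \<epsilon> ^ m) / ((rV - r1) * \<rho>' ^ ko)
        + (c3 * \<epsilon>) ^ (ko - 1) * (\<epsilon> * (C\<phi> * \<epsilon> ^ m)) / ((1 - \<rho>' / \<rho>V) * \<rho>' ^ ko)))
        + KB * (c3 * \<epsilon> / \<rho>V) ^ M + El * (KB * (c3 * \<epsilon> / \<rho>V) ^ M)"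
      using Adiff Bb[OF UtXV UtYs] Bb[OF U2XV U2Ys] by (intro add_mono mult_left_mono) (auto simp: El_def)
    also have "\<dots> = El * KA * (c1 * c3 ^ ko * C\<phi> + c2 * c3 ^ (ko - 1) * C\<phi>) * \<epsilon> ^ (m + ko) + KB * (1 + El) * (c3 / \<rho>V) ^ M * \<epsilon> ^ M"
    proof -
      have eq1: "(c3 * \<epsilon>) ^ (ko - 1) * (\<epsilon> * \<epsilon> ^ m) = c3 ^ (ko - 1) * \<epsilon> ^ (m + ko)"
      proof -
        obtain k where k: "ko = Suc k" using ko by (cases ko) auto
        show ?thesis by (simp add: k power_mult_distrib power_add mult_ac)
      qed
      have eq2: "(c3 * \<epsilon>) ^ ko * \<epsilon> ^ m = c3 ^ ko * \<epsilon> ^ (m + ko)"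
        by (simp add: power_mult_distrib power_add mult_ac)
      have T1: "(c3 * \<epsilon>) ^ ko * (C\<phi> * \<epsilon> ^ m) / ((rV - r1) * \<rho>' ^ ko) = c1 * c3 ^ ko * C\<phi> * \<epsilon> ^ (m + ko)"
        unfolding c1_def by (simp add: divide_inverse eq2[symmetric] mult_ac)
      have T2: "(c3 * \<epsilon>) ^ (ko - 1) * (\<epsilon> * (C\<phi> * \<epsilon> ^ m)) / ((1 - \<rho>' / \<rho>V) * \<rho>' ^ ko) = c2 * c3 ^ (ko - 1) * C\<phi> * \<epsilon> ^ (m + ko)"
        using ko unfolding c2_def by (cases ko) (simp_all add: divide_inverse power_mult_distrib power_add mult_ac)
      have T3: "(c3 * \<epsilon> / \<rho>V) ^ M = (c3 / \<rho>V) ^ M * \<epsilon> ^ M"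
        by (simp add: power_mult_distrib power_divide)
      show ?thesis unfolding T1 T2 T3 by (simp add: algebra_simps)
    qed
    also have "\<dots> \<le> El * KA * (c1 * c3 ^ ko * C\<phi> + c2 * c3 ^ (ko - 1) * C\<phi>) * \<epsilon> ^ M' + KB * (1 + El) * (c3 / \<rho>V) ^ M * \<epsilon> ^ M'"
    proof (intro add_mono mult_left_mono)
      show "\<epsilon> ^ (m + ko) \<le> \<epsilon> ^ M'" using e e1 by (intro power_decreasing) (auto simp: M'_def)
      show "\<epsilon> ^ M \<le> \<epsilon> ^ M'" using e e1 by (intro power_decreasing) (auto simp: M'_def)
      show "0 \<le> El * KA * (c1 * c3 ^ ko * C\<phi> + c2 * c3 ^ (ko - 1) * C\<phi>)"
        using KA0 c10 c20 c30 C\<phi>0 by (simp add: El_def)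
      show "0 \<le> KB * (1 + El) * (c3 / \<rho>V) ^ M" using KB0 c30 rV0 by (simp add: El_def)
    qed
    also have "\<dots> = C * \<epsilon> ^ M'" by (simp add: C_def algebra_simps)
    finally show ?thesis by (simp add: Xt_def Yt_def)
  qed
  define d where "d P Q = cW P Q * (exp (of_real t * small_div \<omega> \<Lambda> P Q) - exp (of_real t * lam))" for P Q
  have drep: "((\<lambda>(P, Q). d P Q * mono_term P Q X Y) has_sum (G (flowX \<omega> t X) (flowY \<Lambda> t Y) - exp (of_real t * lam) * G X Y)) UNIV"
    if e: "0 < \<epsilon>" "\<epsilon> \<le> \<epsilon>0" and X: "\<forall>l. Im (X l) = 0" and Y: "\<forall>j. cmod (Y j) = \<epsilon>" for \<epsilon> X Y
  proof -
    have e4: "\<epsilon> * EL \<le> \<rho> / 2" using e EL1 by (auto simp: \<epsilon>0_def field_simps)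
    have Xt: "\<forall>l. Im (flowX \<omega> t X l) = 0" using X by (simp add: flow_Im)
    have Yt: "\<forall>j. cmod (flowY \<Lambda> t Y j) < \<rho>"
    proof
      fix j
      have "cmod (flowY \<Lambda> t Y j) \<le> exp L * \<epsilon>" using flowY_norm[OF less_imp_le[OF t0] t1 L] Y e by auto
      also have "\<dots> \<le> \<rho> / 2" using e4 by (simp add: EL_def mult.commute)
      finally show "cmod (flowY \<Lambda> t Y j) < \<rho>" using rho by linarith
    qed
    have Yr: "\<forall>j. cmod (Y j) < \<rho>"
    proof
      fix j
      have "\<epsilon> \<le> \<epsilon> * EL" using EL1 e by simp
      then show "cmod (Y j) < \<rho>" using Y e4 rho by simp
    qed
    note h1 = has_sum_flow[OF rep[OF Xt Yt]]
    note h2 = has_sum_cmult_right[OF rep[OF X Yr], of "exp (of_real t * lam)"]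
    note h3 = has_sum_diff'[OF h1 h2]
    have "(\<lambda>(P, Q). d P Q * mono_term P Q X Y) = (\<lambda>x. (\<lambda>(P, Q). (cW P Q * exp (of_real t * small_div \<omega> \<Lambda> P Q)) * mono_term P Q X Y) x
        - exp (of_real t * lam) * (\<lambda>(P, Q). cW P Q * mono_term P Q X Y) x)"
      by (auto simp: d_def fun_eq_iff algebra_simps)
    then show ?thesis using h3 by (simp add: G_def)
  qed
  have "d P Q = 0"
  proof (rule coeff_extract[where h = "\<lambda>X Y. G (flowX \<omega> t X) (flowY \<Lambda> t Y) - exp (of_real t * lam) * G X Y"])
    show "0 < \<epsilon>0" by (rule \<epsilon>00)
    show "degQ Q < M'" using deg by (simp add: M'_def)
  qed (use drep bound in auto)
  moreover have "exp (of_real t * small_div \<omega> \<Lambda> P Q) - exp (of_real t * lam) \<noteq> 0"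
  proof
    assume "exp (of_real t * small_div \<omega> \<Lambda> P Q) - exp (of_real t * lam) = 0"
    then have "exp (of_real t * small_div \<omega> \<Lambda> P Q) = exp (of_real t * lam)" by simp
    then have "exp (of_real t * small_div \<omega> \<Lambda> P Q) * exp (- (of_real t * lam)) = 1"
      by (simp add: exp_minus)
    then have "exp (of_real t * \<mu>) = 1" by (simp add: \<mu>_def exp_add[symmetric] algebra_simps)
    then show False using tne by simp
  qed
  ultimately show ?thesis by (simp add: d_def)
qed


lemma has_sum_one_fts:
  "((\<lambda>(P, Q). (c * one_fts P Q) * mono_term P Q X Y) has_sum c) UNIV"
proof -
  have "(\<lambda>(P, Q). (c * one_fts P Q) * mono_term P Q X Y) = (\<lambda>x. if x = ((\<lambda>_. 0), (\<lambda>_. 0)) then c else 0)"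
    by (auto simp: fun_eq_iff one_fts_def mono_term_def)
  then show ?thesis using has_sum_single_pt by simp
qed

lemma mono_unit: "mono_term (\<lambda>_. 0) (unitQ i) X Y = Y i"
proof -
  have "(\<Prod>j\<in>UNIV. Y j ^ unitQ i j) = Y i"
    by (subst prod.remove[of _ i]) (auto simp: unitQ_def)
  then show ?thesis by (simp add: mono_term_def)
qed

lemma has_sum_S_unit:
  "((\<lambda>(P, Q). (if P = (\<lambda>_. 0) \<and> Q = unitQ i then c else 0) * mono_term P Q X Y) has_sum (c * Y i)) UNIV"
proof -
  have "(\<lambda>(P, Q). (if P = (\<lambda>_. 0) \<and> Q = unitQ i then c else 0) * mono_term P Q X Y) = (\<lambda>x. if x = ((\<lambda>_. 0), unitQ i) then c * Y i else 0)"
    by (rule ext) (clarsimp simp: mono_unit split: if_splits)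
  then show ?thesis using has_sum_single_pt by simp
qed

lemma mono_plus_unit: "mono_term P (\<lambda>j. Q j + unitQ i j) X Y = Y i * mono_term P Q X Y"
proof -
  have "(\<Prod>j\<in>UNIV. Y j ^ (Q j + unitQ i j)) = (\<Prod>j\<in>UNIV. Y j ^ unitQ i j) * (\<Prod>j\<in>UNIV. Y j ^ Q j)"
    by (simp add: power_add prod.distrib mult.commute)
  also have "(\<Prod>j\<in>UNIV. Y j ^ unitQ i j) = Y i"
    by (subst prod.remove[of _ i]) (auto simp: unitQ_def)
  finally show ?thesis by (simp add: mono_term_def mult_ac)
qed

lemma has_sum_mulY:
  assumes "((\<lambda>(P, Q). f P Q * mono_term P Q X Y) has_sum v) UNIV"
  shows "((\<lambda>(P, Q). mulY i f P Q * mono_term P Q X Y) has_sum (Y i * v)) UNIV"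
proof -
  define h where "h = (\<lambda>(P :: 'a \<Rightarrow> int, Q :: 'b \<Rightarrow> nat). (P, \<lambda>j. Q j + unitQ i j))"
  have inj: "inj_on h UNIV" by (auto simp: h_def inj_on_def fun_eq_iff)
  have h1: "((\<lambda>(P, Q). Y i * (f P Q * mono_term P Q X Y)) has_sum (Y i * v)) UNIV"
    using has_sum_cmult_right[OF assms, of "Y i"] by (simp add: case_prod_unfold)
  have "((\<lambda>(P, Q). mulY i f P Q * mono_term P Q X Y) \<circ> h) = (\<lambda>(P, Q). Y i * (f P Q * mono_term P Q X Y))"
  proof (rule ext)
    fix x :: "('a \<Rightarrow> int) \<times> ('b \<Rightarrow> nat)"
    obtain P Q where x: "x = (P, Q)" by (cases x)
    have u: "unitQ i i = 1" by (simp add: unitQ_def)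
    show "((\<lambda>(P, Q). mulY i f P Q * mono_term P Q X Y) \<circ> h) x = (\<lambda>(P, Q). Y i * (f P Q * mono_term P Q X Y)) x"
      by (simp add: x h_def mulY_def u mono_plus_unit)
  qed
  with h1 have "(((\<lambda>(P, Q). mulY i f P Q * mono_term P Q X Y) \<circ> h) has_sum (Y i * v)) UNIV" by simp
  then have h2: "((\<lambda>(P, Q). mulY i f P Q * mono_term P Q X Y) has_sum (Y i * v)) (h ` UNIV)"
    using has_sum_reindex[OF inj] by blast
  show ?thesis
  proof (rule has_sum_cong_neutral[THEN iffD1, OF _ _ _ h2])
    fix x assume "x \<in> UNIV - h ` UNIV"
    then obtain P Q where x: "x = (P, Q)" and nx: "x \<notin> h ` UNIV" by (cases x) auto
    have "\<not> 1 \<le> Q i"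
    proof
      assume "1 \<le> Q i"
      then have "x = h (P, \<lambda>j. Q j - unitQ i j)" by (simp add: x h_def unit_add_sub)
      then show False using nx by auto
    qed
    then show "(\<lambda>(P, Q). mulY i f P Q * mono_term P Q X Y) x = 0" by (simp add: x mulY_def)
  qed auto
qed

lemma analytic_sub:
  assumes "analytic_fts r \<rho> V" "\<And>P Q. cmod (A P Q) \<le> cmod (V P Q)"
  shows "analytic_fts r \<rho> A"
proof -
  have pos: "0 < r" "0 < \<rho>" using assms by (auto simp: analytic_fts_def)
  have "wt r \<rho> V summable_on UNIV" using assms by (simp add: analytic_wt)
  then have "wt r \<rho> A summable_on UNIV"
    by (rule summable_on_comparison_test) (use assms(2) pos in \<open>auto simp: wt_def intro!: mult_right_mono split: prod.splits\<close>)
  then show ?thesis using pos by (simp add: analytic_wt)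
qed


lemma rep_split:
  assumes anV: "analytic_fts rV \<rho>V Va"
    and split: "\<And>P Q. Va P Q = s P Q + A P Q + B P Q"
    and anA: "analytic_fts rV \<rho>V A" and anB: "analytic_fts rV \<rho>V B"
    and hs: "((\<lambda>(P, Q). s P Q * mono_term P Q X Y) has_sum sv) UNIV"
    and X: "\<forall>l. \<bar>Im (X l)\<bar> \<le> rV" and Y: "\<forall>j. cmod (Y j) \<le> \<rho>V"
  shows "eval_fts Va X Y = sv + eval_fts A X Y + eval_fts B X Y"
proof -
  note hA = analytic_has_sum[OF anA X Y]
  note hB = analytic_has_sum[OF anB X Y]
  note hV = analytic_has_sum[OF anV X Y]
  have h: "((\<lambda>x. ((\<lambda>(P, Q). s P Q * mono_term P Q X Y) x + (\<lambda>(P, Q). A P Q * mono_term P Q X Y) x) + (\<lambda>(P, Q). B P Q * mono_term P Q X Y) x)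
     has_sum (sv + eval_fts A X Y + eval_fts B X Y)) UNIV"
    by (intro has_sum_add hs hA hB)
  have "(\<lambda>(P, Q). Va P Q * mono_term P Q X Y) = (\<lambda>x. ((\<lambda>(P, Q). s P Q * mono_term P Q X Y) x + (\<lambda>(P, Q). A P Q * mono_term P Q X Y) x) + (\<lambda>(P, Q). B P Q * mono_term P Q X Y) x)"
    by (auto simp: fun_eq_iff split distrib_right)
  with h have "((\<lambda>(P, Q). Va P Q * mono_term P Q X Y) has_sum (sv + eval_fts A X Y + eval_fts B X Y)) UNIV" by simp
  from has_sum_unique[OF hV this] show ?thesis .
qed

lemma trunc_eq_at:
  assumes "trunc k f = trunc k g" "degQ Q \<le> k"
  shows "f P Q = g P Q"
  using fun_cong[OF fun_cong[OF assms(1), of P], of Q] assms(2) by (simp add: trunc_def)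


theorem proposition5p3:
  fixes \<omega> :: "'d::finite \<Rightarrow> real" and \<Lambda> :: "'n::finite \<Rightarrow> complex"
    and \<Phi>t :: "nat \<Rightarrow> ('d, 'n) fvf"
    and N R Rn :: "('d, 'n) fvf" and k :: nat and rV \<rho>V :: real
  assumes "formal_diffeo \<Phi>t"
    and "formal_vf N" "resonant_vf \<omega> \<Lambda> N" "quasi_order 1 N"
    and "formal_vf R" "quasi_order (k + 1) R"
    and "\<forall>a. analytic_fts rV \<rho>V (add_vf (S_vf \<omega> \<Lambda>) (add_vf N R) a)"
    and "formal_vf Rn" "quasi_order 1 Rn" "resonant_vf \<omega> \<Lambda> (add_vf (S_vf \<omega> \<Lambda>) Rn)"
    and "\<forall>j. conj_eq rV \<rho>V (add_vf (S_vf \<omega> \<Lambda>) (add_vf N R)) (add_vf (S_vf \<omega> \<Lambda>) Rn) (\<Phi>t j) j"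
  shows "\<forall>a. resonant \<omega> \<Lambda> (\<Phi>t k a)"
proof -
  note fd = assms(1) and resN = assms(3) and qN = assms(4) and qR = assms(6) and anV0 = assms(7)
    and qRn = assms(9) and resRn = assms(10) and conj = assms(11)
  define S where "S = S_vf \<omega> \<Lambda>"
  define V where "V = add_vf S (add_vf N R)"
  define NF where "NF = add_vf S Rn"
  define \<Phi> where "\<Phi> = \<Phi>t k"
  have anV: "\<And>a. analytic_fts rV \<rho>V (V a)" using anV0 by (simp add: V_def S_def)
  obtain rr \<rho>\<rho> where fdd: "\<And>k. analytic_diffeo (rr k) (\<rho>\<rho> k) (\<Phi>t k)" "\<And>k a. trunc k (\<Phi>t k a) = \<Phi>t k a"
    using fd unfolding formal_diffeo_def by blast
  define r0 where "r0 = rr k"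
  define \<rho>0 where "\<rho>0 = \<rho>\<rho> k"
  have an\<Phi>: "\<forall>a. analytic_fts r0 \<rho>0 (\<Phi> a)" using fdd(1)[of k] by (simp add: analytic_diffeo_def \<Phi>_def r0_def \<rho>0_def)
  have r00: "0 < r0" "0 < \<rho>0" using an\<Phi> by (auto simp: analytic_fts_def)
  have deg\<Phi>: "\<Phi> a P Q = 0" if "k < degQ Q" for a P Q
    using fun_cong[OF fun_cong[OF fdd(2)[of k a], of P], of Q] that by (simp add: trunc_def \<Phi>_def)
  obtain r \<rho> c where cj: "0 < r" "0 < \<rho>"
      "\<forall>(X, Y)\<in>dom_strip r \<rho>. (map_X \<Phi> X Y, map_Y \<Phi> X Y) \<in> dom_strip rV \<rho>V"
      "\<forall>a. represents (c a) (\<lambda>X Y. eval_fts (V a) (map_X \<Phi> X Y) (map_Y \<Phi> X Y)) (dom_strip r \<rho>)"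
      "trunc_vf k (jac_apply \<Phi> NF) = trunc_vf k c"
    using conj[rule_format, of k] unfolding conj_eq_def by (auto simp: \<Phi>_def V_def NF_def S_def)
  have RnX: "small_div \<omega> \<Lambda> P Q = 0 \<and> 1 \<le> degQ Q" if "Rn (Inl m') P Q \<noteq> 0" for m' P Q
  proof -
    have d: "1 \<le> degQ Q"
    proof (rule ccontr)
      assume "\<not> 1 \<le> degQ Q"
      then have "degQ Q < 1" by simp
      then show False using qRn that by (auto simp: quasi_order_def has_order_def)
    qed
    then have "S (Inl m') P Q = 0" by (auto simp: S_def S_vf_def degQ_def)
    then have "add_vf S Rn (Inl m') P Q \<noteq> 0" using that by (simp add: add_vf_def)
    then show ?thesis using resRn d by (auto simp: resonant_vf_def resonant_def S_def)
  qed
  have RnY: "small_div \<omega> \<Lambda> P Q = \<Lambda> j \<and> 2 \<le> degQ Q" if "Rn (Inr j) P Q \<noteq> 0" for j P Q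
  proof -
    have d: "2 \<le> degQ Q"
    proof (rule ccontr)
      assume "\<not> 2 \<le> degQ Q"
      then have "degQ Q < 1 + 1" by simp
      then show False using qRn that by (auto simp: quasi_order_def has_order_def)
    qed
    then have "S (Inr j) P Q = 0" by (auto simp: S_def S_vf_def degQ_unit)
    then have "add_vf S Rn (Inr j) P Q \<noteq> 0" using that by (simp add: add_vf_def)
    then show ?thesis using resRn d by (auto simp: resonant_vf_def S_def)
  qed
  have inside: "\<forall>x::'d \<Rightarrow> real. \<forall>l. \<bar>Im (eval_fts (\<Phi> (Inl l)) (\<lambda>m. of_real (x m)) ((\<lambda>_. 0) :: 'n \<Rightarrow> complex))\<bar> < rV"
  proof (intro allI)
    fix x :: "'d \<Rightarrow> real" and l
    have "((\<lambda>m. of_real (x m)), ((\<lambda>_. 0) :: 'n \<Rightarrow> complex)) \<in> dom_strip r \<rho>" using cj by (simp add: dom_strip_def)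
    then have "(map_X \<Phi> (\<lambda>m. of_real (x m)) (\<lambda>_. 0), map_Y \<Phi> (\<lambda>m. of_real (x m)) ((\<lambda>_. 0) :: 'n \<Rightarrow> complex)) \<in> dom_strip rV \<rho>V"
      using cj(3) by blast
    then show "\<bar>Im (eval_fts (\<Phi> (Inl l)) (\<lambda>m. of_real (x m)) ((\<lambda>_. 0) :: 'n \<Rightarrow> complex))\<bar> < rV"
      by (simp add: dom_strip_def map_X_def)
  qed
  obtain r1 \<delta>1 where mar: "r1 < rV" "0 < \<delta>1"
    "\<And>X Y l. (\<forall>l. Im (X l) = 0) \<Longrightarrow> (\<forall>j. cmod (Y j) \<le> \<delta>1) \<Longrightarrow> \<bar>Im (eval_fts (\<Phi> (Inl l)) X Y)\<bar> \<le> r1"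
    using margin[OF an\<Phi> inside] by blast
  define \<rho>2 where "\<rho>2 = min \<rho> \<rho>0"
  have \<rho>2: "0 < \<rho>2" using cj r00 by (simp add: \<rho>2_def)
  have repV: "((\<lambda>(P, Q). c a P Q * mono_term P Q X Y) has_sum eval_fts (V a) (map_X \<Phi> X Y) (map_Y \<Phi> X Y)) UNIV"
    and inV: "\<forall>l. \<bar>Im (map_X \<Phi> X Y l)\<bar> \<le> rV" "\<forall>j. cmod (map_Y \<Phi> X Y j) \<le> \<rho>V"
    if X: "\<forall>l. Im (X l) = 0" and Y: "\<forall>j. cmod (Y j) < \<rho>2" for a X Y
  proof -
    have "(X, Y) \<in> dom_strip r \<rho>" using X Y cj by (auto simp: dom_strip_def \<rho>2_def)
    then show "((\<lambda>(P, Q). c a P Q * mono_term P Q X Y) has_sum eval_fts (V a) (map_X \<Phi> X Y) (map_Y \<Phi> X Y)) UNIV"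
      using cj(4) by (auto simp: represents_def)
    from \<open>(X, Y) \<in> dom_strip r \<rho>\<close> have "(map_X \<Phi> X Y, map_Y \<Phi> X Y) \<in> dom_strip rV \<rho>V" using cj(3) by blast
    then show "\<forall>l. \<bar>Im (map_X \<Phi> X Y l)\<bar> \<le> rV" "\<forall>j. cmod (map_Y \<Phi> X Y j) \<le> \<rho>V"
      by (auto simp: dom_strip_def less_imp_le)
  qed
  have main: "\<forall>a P Q. degQ Q < m \<longrightarrow> \<Phi> a P Q \<noteq> 0 \<longrightarrow> small_div \<omega> \<Lambda> P Q = 0" for m
  proof (induction m)
    case 0 then show ?case by simp
  next
    case (Suc m)
    have IH: "\<And>a P Q. degQ Q < m \<Longrightarrow> \<Phi> a P Q \<noteq> 0 \<Longrightarrow> small_div \<omega> \<Lambda> P Q = 0" using Suc.IH by blast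
    show ?case
    proof (intro allI impI)
      fix a P Q assume dq: "degQ Q < Suc m" and nz: "\<Phi> a P Q \<noteq> 0"
      show "small_div \<omega> \<Lambda> P Q = 0"
      proof (cases "degQ Q < m")
        case True then show ?thesis using IH nz by blast
      next
        case False
        then have dQ: "degQ Q = m" using dq by simp
        have mk: "m \<le> k" using deg\<Phi>[of Q a P] nz dQ by linarith
        show ?thesis
        proof (rule ccontr)
          assume sdn: "small_div \<omega> \<Lambda> P Q \<noteq> 0"
          show False
          proof (cases a)
            case (Inl l)
            have Pa: "\<Phi> (Inl l) P Q \<noteq> 0" using nz Inl by simp
            have LXe: "jac_apply \<Phi> NF (Inl l) P Q = small_div \<omega> \<Lambda> P Q * \<Phi> (Inl l) P Q"
              unfolding NF_def S_def by (rule LX[OF RnX RnY IH dQ sdn])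
            have eq: "jac_apply \<Phi> NF (Inl l) P Q = c (Inl l) P Q"
            proof (rule trunc_eq_at)
              show "trunc k (jac_apply \<Phi> NF (Inl l)) = trunc k (c (Inl l))"
                using fun_cong[OF cj(5), of "Inl l"] by (simp add: trunc_vf_def)
            qed (use dQ mk in simp)
            define W where "W = (\<lambda>P Q. N (Inl l) P Q + R (Inl l) P Q)"
            define A where "A = (\<lambda>P Q. if degQ Q \<le> k then W P Q else 0)"
            define B where "B = (\<lambda>P Q. if degQ Q \<le> k then 0 else W P Q)"
            have Rz: "R (Inl l) P Q = 0" if "degQ Q < k + 1" for P Q
              using qR that by (simp add: quasi_order_def has_order_def)
            have Nz: "N (Inl l) P Q = 0" if "degQ Q < 1" for P Q
              using qN that by (simp add: quasi_order_def has_order_def)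
            have Wz: "1 \<le> degQ Q" if "W P Q \<noteq> 0" for P Q
              using that Rz[of Q P] Nz[of Q P] by (fastforce simp: W_def)
            have SW: "V (Inl l) P Q = of_real (\<omega> l) * one_fts P Q + A P Q + B P Q" for P Q
              by (simp add: V_def add_vf_def S_def S_vf_def one_fts_def A_def B_def W_def)
            have WV: "cmod (W P Q) \<le> cmod (V (Inl l) P Q)" for P Q
            proof (cases "W P Q = 0")
              case False
              then have "1 \<le> degQ Q" by (rule Wz)
              then have "one_fts P Q = 0" by (auto simp: one_fts_def degQ_def)
              then show ?thesis using SW[of P Q] by (simp add: A_def B_def)
            qed simp
            have anA: "analytic_fts rV \<rho>V A"
              by (rule analytic_sub[OF anV[of "Inl l"]]) (use WV in \<open>auto simp: A_def\<close>)
            have anB: "analytic_fts rV \<rho>V B"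
              by (rule analytic_sub[OF anV[of "Inl l"]]) (use WV in \<open>auto simp: B_def\<close>)
            have resA: "small_div \<omega> \<Lambda> P Q = 0" if "A P Q \<noteq> 0" for P Q
            proof -
              have "degQ Q \<le> k" "W P Q \<noteq> 0" using that by (auto simp: A_def split: if_splits)
              then have "N (Inl l) P Q \<noteq> 0" using Rz[of Q P] by (simp add: W_def)
              then show ?thesis using resN by (simp add: resonant_vf_def resonant_def)
            qed
            have ordA: "has_order 1 A" using Wz by (force simp: has_order_def A_def)
            have ordB: "has_order (k + 1) B" by (simp add: has_order_def B_def)
            define cW where "cW = (\<lambda>P Q. c (Inl l) P Q - of_real (\<omega> l) * one_fts P Q)"
            have rep: "((\<lambda>(P, Q). cW P Q * mono_term P Q X Y) has_sum
                 (eval_fts A (map_X \<Phi> X Y) (map_Y \<Phi> X Y) + eval_fts B (map_X \<Phi> X Y) (map_Y \<Phi> X Y))) UNIV"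
              if X: "\<forall>l. Im (X l) = 0" and Y: "\<forall>j. cmod (Y j) < \<rho>2" for X Y
            proof -
              have ev: "eval_fts (V (Inl l)) (map_X \<Phi> X Y) (map_Y \<Phi> X Y)
                  = of_real (\<omega> l) + eval_fts A (map_X \<Phi> X Y) (map_Y \<Phi> X Y) + eval_fts B (map_X \<Phi> X Y) (map_Y \<Phi> X Y)"
                by (rule rep_split[OF anV SW anA anB has_sum_one_fts inV[OF X Y]])
              note h = has_sum_diff'[OF repV[OF X Y, of "Inl l"] has_sum_one_fts[of "of_real (\<omega> l)" X Y]]
              have "(\<lambda>(P, Q). cW P Q * mono_term P Q X Y) = (\<lambda>x. (\<lambda>(P, Q). c (Inl l) P Q * mono_term P Q X Y) x - (\<lambda>(P, Q). (of_real (\<omega> l) * one_fts P Q) * mono_term P Q X Y) x)"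
                by (auto simp: cW_def fun_eq_iff algebra_simps)
              then show ?thesis using h ev by simp
            qed
            have "cW P Q = 0"
              by (rule core[OF an\<Phi> anA anB resA ordA _ ordB mar \<rho>2 rep IH]) (use dQ mk sdn in auto)
            moreover have "one_fts P Q = 0" using sdn by (auto simp: one_fts_def sd_zero)
            ultimately have "c (Inl l) P Q = 0" by (simp add: cW_def)
            then have "small_div \<omega> \<Lambda> P Q * \<Phi> (Inl l) P Q = 0" using LXe eq by simp
            then show False using sdn Pa by simp
          next
            case (Inr i)
            have Pa: "\<Phi> (Inr i) P Q \<noteq> 0" using nz Inr by simp
            define Qp where "Qp = (\<lambda>j. Q j + unitQ i j)"
            have dQp: "degQ Qp = m + 1" by (simp add: Qp_def degQ_plus_unit dQ)
            have sdQp: "small_div \<omega> \<Lambda> P Qp = small_div \<omega> \<Lambda> P Q + \<Lambda> i" by (simp add: Qp_def sd_plus_unit)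
            have LYe: "jac_apply \<Phi> NF (Inr i) P Qp = (small_div \<omega> \<Lambda> P Q + \<Lambda> i) * \<Phi> (Inr i) P Q"
              unfolding NF_def S_def Qp_def by (rule LY[OF RnX RnY IH dQ sdn])
            have eq: "jac_apply \<Phi> NF (Inr i) P Qp = c (Inr i) P Qp"
            proof (rule trunc_eq_at)
              show "trunc (k + 1) (jac_apply \<Phi> NF (Inr i)) = trunc (k + 1) (c (Inr i))"
                using fun_cong[OF cj(5), of "Inr i"] by (simp add: trunc_vf_def)
            qed (use dQp mk in simp)
            define W where "W = (\<lambda>P Q. N (Inr i) P Q + R (Inr i) P Q)"
            define A where "A = (\<lambda>P Q. if degQ Q \<le> k + 1 then W P Q else 0)"
            define B where "B = (\<lambda>P Q. if degQ Q \<le> k + 1 then 0 else W P Q)"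
            have Rz: "R (Inr i) P Q = 0" if "degQ Q < k + 1 + 1" for P Q
              using qR that by (simp add: quasi_order_def has_order_def)
            have Nz: "N (Inr i) P Q = 0" if "degQ Q < 1 + 1" for P Q
              using qN that by (simp add: quasi_order_def has_order_def)
            have Wz: "2 \<le> degQ Q" if "W P Q \<noteq> 0" for P Q
              using that Rz[of Q P] Nz[of Q P] by (fastforce simp: W_def)
            define sY :: "('d, 'n) fts" where "sY = (\<lambda>P Q. if P = (\<lambda>_. 0) \<and> Q = unitQ i then \<Lambda> i else 0)"
            have SW: "V (Inr i) P Q = sY P Q + A P Q + B P Q" for P Q
              by (simp add: V_def add_vf_def S_def S_vf_def sY_def A_def B_def W_def)
            have WV: "cmod (W P Q) \<le> cmod (V (Inr i) P Q)" for P Q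
            proof (cases "W P Q = 0")
              case False
              then have "2 \<le> degQ Q" by (rule Wz)
              then have "sY P Q = 0" by (auto simp: sY_def degQ_unit)
              then show ?thesis using SW[of P Q] by (simp add: A_def B_def)
            qed simp
            have anA: "analytic_fts rV \<rho>V A"
              by (rule analytic_sub[OF anV[of "Inr i"]]) (use WV in \<open>auto simp: A_def\<close>)
            have anB: "analytic_fts rV \<rho>V B"
              by (rule analytic_sub[OF anV[of "Inr i"]]) (use WV in \<open>auto simp: B_def\<close>)
            have resA: "small_div \<omega> \<Lambda> P Q = \<Lambda> i" if "A P Q \<noteq> 0" for P Q
            proof -
              have "degQ Q \<le> k + 1" "W P Q \<noteq> 0" using that by (auto simp: A_def split: if_splits)
              then have "N (Inr i) P Q \<noteq> 0" using Rz[of Q P] by (simp add: W_def)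
              then show ?thesis using resN by (simp add: resonant_vf_def)
            qed
            have ordA: "has_order 2 A" using Wz by (force simp: has_order_def A_def)
            have ordB: "has_order (k + 2) B" by (simp add: has_order_def B_def)
            define cW where "cW = (\<lambda>P Q. c (Inr i) P Q - \<Lambda> i * mulY i (\<Phi> (Inr i)) P Q)"
            have rep: "((\<lambda>(P, Q). cW P Q * mono_term P Q X Y) has_sum
                 (eval_fts A (map_X \<Phi> X Y) (map_Y \<Phi> X Y) + eval_fts B (map_X \<Phi> X Y) (map_Y \<Phi> X Y))) UNIV"
              if X: "\<forall>l. Im (X l) = 0" and Y: "\<forall>j. cmod (Y j) < \<rho>2" for X Y
            proof -
              have ev: "eval_fts (V (Inr i)) (map_X \<Phi> X Y) (map_Y \<Phi> X Y)
                  = \<Lambda> i * map_Y \<Phi> X Y i + eval_fts A (map_X \<Phi> X Y) (map_Y \<Phi> X Y) + eval_fts B (map_X \<Phi> X Y) (map_Y \<Phi> X Y)"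
                by (rule rep_split[OF anV SW anA anB _ inV[OF X Y]]) (unfold sY_def, rule has_sum_S_unit)
              have X0: "\<forall>l. \<bar>Im (X l)\<bar> \<le> r0" using X r00 by simp
              have Y0: "\<forall>j. cmod (Y j) \<le> \<rho>0" using Y by (auto simp: \<rho>2_def intro: less_imp_le)
              note hp = has_sum_cmult_right[OF has_sum_mulY[OF analytic_has_sum[OF an\<Phi>[rule_format, of "Inr i"] X0 Y0], of i], of "\<Lambda> i"]
              note h = has_sum_diff'[OF repV[OF X Y, of "Inr i"] hp]
              have "(\<lambda>(P, Q). cW P Q * mono_term P Q X Y) = (\<lambda>x. (\<lambda>(P, Q). c (Inr i) P Q * mono_term P Q X Y) x - \<Lambda> i * (\<lambda>(P, Q). mulY i (\<Phi> (Inr i)) P Q * mono_term P Q X Y) x)"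
                by (auto simp: cW_def fun_eq_iff algebra_simps)
              then show ?thesis using h ev by (simp add: map_Y_def algebra_simps)
            qed
            have "cW P Qp = 0"
              by (rule core[OF an\<Phi> anA anB resA ordA _ ordB mar \<rho>2 rep IH]) (use dQp mk sdn sdQp in auto)
            moreover have "mulY i (\<Phi> (Inr i)) P Qp = \<Phi> (Inr i) P Q"
              by (simp add: mulY_def Qp_def unitQ_def)
            ultimately have "c (Inr i) P Qp = \<Lambda> i * \<Phi> (Inr i) P Q" by (simp add: cW_def)
            then have "(small_div \<omega> \<Lambda> P Q + \<Lambda> i) * \<Phi> (Inr i) P Q = \<Lambda> i * \<Phi> (Inr i) P Q" using LYe eq by simp
            then have "small_div \<omega> \<Lambda> P Q * \<Phi> (Inr i) P Q = 0" by (simp add: algebra_simps)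
            then show False using sdn Pa by simp
          qed
        qed
      qed
    qed
  qed
  show ?thesis
    unfolding resonant_def \<Phi>_def[symmetric] using main by blast
qed


end
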